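(* Let $K=10_{164}$, with Alexander polynomial $\Delta_K(t)=3-11t+17t^2-11t^3+3t^4$. There exists an epimorphism $\alpha\colon\pi_K\to D_3$ such that \[\Delta_K^{\varrho\circ\alpha}(t)\doteq\frac{(3-11t+17t^2-11t^3+3t^4)(3-13t^2+13t^4-3t^6)}{t-1},\] and consequently there is no polynomial $f(t)$ with integer coefficients such that $\Delta_K^{\varrho\circ\alpha}(t)\doteq\frac{\Delta_K(t)}{1-t}f(t)f(-t)$. (Explicitly, $\alpha$ may be taken to send the Wirtinger generators $a,\dots,k$ of the closure of the braid $\sigma_1\sigma_2^{-1}\sigma_3^2\sigma_2^{-1}\sigma_1\sigma_2^{-1}\sigma_3^{-1}\sigma_2^{-1}\sigma_1\sigma_2^{-1}$ — with relators $b^{-1}a^{-1}ea$, $a^{-1}cfc^{-1}$, $d^{-1}f^{-1}gf$, $f^{-1}g^{-1}hg$, $c^{-1}hih^{-1}$, $h^{-1}e^{-1}je$, $e^{-1}iki^{-1}$, $k^{-1}gdg^{-1}$, $i^{-1}gbg^{-1}$, $g^{-1}j^{-1}aj$ — to $a,c,f,k\mapsto xy^2$; $b,g,i\mapsto x$; $d,e,h,j\mapsto xy$.)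
   Context: $D_3=\langle x,y\mid x^2=y^3=1,\ xyx=y^{-1}\rangle$, acting on $\mathbb Z/3$ by $y\cdot n=n-1$, $x\cdot n=-n$; $\varrho\colon D_3\to\mathrm{GL}(3,\mathbb Z)$ is the associated permutation representation. $\pi_K=\pi_1(S^3\setminus\nu K)$. Twisted Alexander polynomial (Wada's invariant): let $\phi\colon\pi_K\to\mathbb Z$ send the oriented meridian to $1$; for $\alpha\colon\pi_K\to\mathrm{Aut}(V)$, $V$ a finitely generated free module over a UFD $R$ with quotient field $Q$, let $\alpha\otimes\phi$ act on $V\otimes_R R[t^{\pm1}]$ by $g\mapsto(v\otimes f\mapsto\alpha(g)v\otimes t^{\phi(g)}f)$. For a deficiency-one presentation $\langle g_1,\dots,g_{k+1}\mid r_1,\dots,r_k\rangle$ of $\pi_K$ with Fox matrix $M=(\partial r_i/\partial g_j)$ and $M_i$ obtained by deleting column $i$ with $\phi(g_i)\ne0$, set $\Delta_K^\alpha(t)=\det((\alpha\otimes\phi)(M_i))\det((\alpha\otimes\phi)(1-g_i))^{-1}\in Q(t)$; it is well defined up to multiplication by $\pm t^k$ here, and $\doteq$ denotes equality up to this indeterminacy. *)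

theory Defs
  imports "Jordan_Normal_Form.Determinant"
          "HOL-Computational_Algebra.Polynomial"
          "HOL-Computational_Algebra.Fraction_Field"
          "HOL-Library.Numeral_Type"
begin

text \<open>Elements of D_3 are represented by their (faithful) action on Z/3 = the type 3:
  y acts by n -> n - 1, x acts by n -> -n.\<close>

definition D3_x :: "3 \<Rightarrow> 3" where "D3_x = (\<lambda>n. - n)"
definition D3_y :: "3 \<Rightarrow> 3" where "D3_y = (\<lambda>n. n - 1)"

inductive_set D3 :: "(3 \<Rightarrow> 3) set" where
  D3_id: "id \<in> D3"
| D3_mx: "g \<in> D3 \<Longrightarrow> D3_x \<circ> g \<in> D3"
| D3_my: "g \<in> D3 \<Longrightarrow> D3_y \<circ> g \<in> D3"

type_synonym Qt = "int poly fract"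

definition rho :: "(3 \<Rightarrow> 3) \<Rightarrow> Qt mat" where
  "rho g = mat 3 3 (\<lambda>(i, j). if g (of_nat j) = of_nat i then 1 else 0)"

text \<open>A letter is a pair (generator index, sign); True = generator, False = its inverse.\<close>
type_synonym letter = "nat \<times> bool"

fun eval_word :: "(nat \<Rightarrow> (3 \<Rightarrow> 3)) \<Rightarrow> letter list \<Rightarrow> (3 \<Rightarrow> 3)" where
  "eval_word a [] = id"
| "eval_word a ((h, True) # w) = a h \<circ> eval_word a w"
| "eval_word a ((h, False) # w) = inv_into UNIV (a h) \<circ> eval_word a w"

definition tvar :: Qt where "tvar = Fract [:0, 1:] 1"

definition polyQt :: "int poly \<Rightarrow> Qt" where "polyQt p = Fract p 1"

text \<open>(alpha (x) phi) on letters: phi sends every Wirtinger generator (an oriented meridian)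
  to 1, so g |-> t * rho(alpha g) and g^-1 |-> t^-1 * rho(alpha g ^-1).\<close>
definition twist_letter :: "(nat \<Rightarrow> (3 \<Rightarrow> 3)) \<Rightarrow> letter \<Rightarrow> Qt mat" where
  "twist_letter a l = (if snd l then tvar \<cdot>\<^sub>m rho (a (fst l))
                       else inverse tvar \<cdot>\<^sub>m rho (inv_into UNIV (a (fst l))))"

text \<open>Image under (alpha (x) phi) of the Fox derivative d w / d g_j, using
  d(uv) = du + u dv, d g_j/d g_j = 1, d g_j^-1 / d g_j = - g_j^-1.\<close>
fun fox_twisted :: "(nat \<Rightarrow> (3 \<Rightarrow> 3)) \<Rightarrow> letter list \<Rightarrow> nat \<Rightarrow> Qt mat" where
  "fox_twisted a [] j = 0\<^sub>m 3 3"
| "fox_twisted a (l # w) j =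
     (if fst l = j then (if snd l then 1\<^sub>m 3 else - twist_letter a l) else 0\<^sub>m 3 3)
     + twist_letter a l * fox_twisted a w j"

text \<open>Generators a,b,c,d,e,f,g,h,i,j,k are numbered 0..10; the presentation comes from the
  closure of the braid s1 s2^-1 s3^2 s2^-1 s1 s2^-1 s3^-1 s2^-1 s1 s2^-1.\<close>

definition K_ngens :: nat where "K_ngens = 11"

definition K_relators :: "letter list list" where
  "K_relators =
    [ [(1,False),(0,False),(4,True),(0,True)],
      [(0,False),(2,True),(5,True),(2,False)],
      [(3,False),(5,False),(6,True),(5,True)],
      [(5,False),(6,False),(7,True),(6,True)],
      [(2,False),(7,True),(8,True),(7,False)],
      [(7,False),(4,False),(9,True),(4,True)],
      [(4,False),(8,True),(10,True),(8,False)],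
      [(10,False),(6,True),(3,True),(6,False)],
      [(8,False),(6,True),(1,True),(6,False)],
      [(6,False),(9,False),(0,True),(9,True)] ]"

text \<open>A map on generators defines a homomorphism pi_K -> D_3 iff it lands in D_3 and kills
  every relator; it is an epimorphism iff moreover every element of D_3 is the image of a word.\<close>
definition is_epi_D3 :: "(nat \<Rightarrow> (3 \<Rightarrow> 3)) \<Rightarrow> bool" where
  "is_epi_D3 a \<longleftrightarrow>
     (\<forall>g < K_ngens. a g \<in> D3)
   \<and> (\<forall>r \<in> set K_relators. eval_word a r = id)
   \<and> (\<forall>d \<in> D3. \<exists>w. (\<forall>l \<in> set w. fst l < K_ngens) \<and> eval_word a w = d)"

text \<open>The (3*10) x (3*10) matrix obtained from the Fox matrix (rows = relators, columns =
  generators) by deleting column i and applying alpha (x) phi blockwise.\<close>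
definition fox_block_matrix :: "(nat \<Rightarrow> (3 \<Rightarrow> 3)) \<Rightarrow> nat \<Rightarrow> Qt mat" where
  "fox_block_matrix a i =
     mat (3 * length K_relators) (3 * (K_ngens - 1))
       (\<lambda>(r, c). let col = (if c div 3 < i then c div 3 else c div 3 + 1) in
                 fox_twisted a (K_relators ! (r div 3)) col $$ (r mod 3, c mod 3))"

definition twisted_alexander :: "(nat \<Rightarrow> (3 \<Rightarrow> 3)) \<Rightarrow> nat \<Rightarrow> Qt" where
  "twisted_alexander a i =
     det (fox_block_matrix a i) / det (1\<^sub>m 3 - twist_letter a (i, True))"

definition doteq :: "Qt \<Rightarrow> Qt \<Rightarrow> bool" (infix \<open>\<doteq>\<close> 50) where
  "x \<doteq> y \<longleftrightarrow> (\<exists>k :: int. \<exists>s \<in> {1, -1 :: Qt}. x = s * tvar powi k * y)"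

definition Alex_10_164 :: "int poly" where
  "Alex_10_164 = [:3, -11, 17, -11, 3:]"

end

theory Submission
  imports Defs "Jordan_Normal_Form.Column_Operations"
begin

lemma schur00:
  fixes A :: "'a::comm_ring_1 mat"
  assumes A: "A \<in> carrier_mat (Suc m) (Suc m)"
  shows "A$$(0,0)^m * det A = A$$(0,0) * det (mat m m (\<lambda>(r,c).
            A$$(0,0)*A$$(Suc r, Suc c) - A$$(Suc r,0)*A$$(0,Suc c)))"
proof -
  define p where "p = A$$(0,0)"
  define F :: "'a mat" where "F = mat (Suc m) (Suc m) (\<lambda>(r,c). if r = c then (if r = 0 then 1 else p)
      else if c = 0 then - A$$(r,0) else 0)"
  have F: "F \<in> carrier_mat (Suc m) (Suc m)" unfolding F_def by auto
  have "det F = prod_list (diag_mat F)"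
    by (rule det_lower_triangular[OF _ F]) (auto simp: F_def)
  also have "\<dots> = p ^ m"
  proof -
    have "diag_mat F = 1 # replicate m p"
      by (rule nth_equalityI) (auto simp: diag_mat_def F_def nth_Cons simp del: upt_Suc split: nat.split)
    thus ?thesis by simp
  qed
  finally have dF: "det F = p ^ m" .
  have FA: "F * A = mat (Suc m) (Suc m) (\<lambda>(r,c). if r = 0 then A$$(0,c) else p * A$$(r,c) - A$$(r,0)*A$$(0,c))"
  proof (rule eq_matI)
    fix r c assume r: "r < dim_row (mat (Suc m) (Suc m) (\<lambda>(r,c). if r = 0 then A$$(0,c) else p * A$$(r,c) - A$$(r,0)*A$$(0,c)))"
      and c: "c < dim_col (mat (Suc m) (Suc m) (\<lambda>(r,c). if r = 0 then A$$(0,c) else p * A$$(r,c) - A$$(r,0)*A$$(0,c)))"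
    have r': "r < Suc m" and c': "c < Suc m" using r c by auto
    have "(F * A) $$ (r,c) = (\<Sum>k<Suc m. F$$(r,k) * A$$(k,c))"
      using r' c' F A by (simp add: scalar_prod_def atLeast0LessThan)
    also have "\<dots> = (if r = 0 then A$$(0,c) else p * A$$(r,c) - A$$(r,0)*A$$(0,c))"
    proof (cases "r = 0")
      case True
      have "(\<Sum>k<Suc m. F$$(r,k) * A$$(k,c)) = (\<Sum>k<Suc m. if k = 0 then A$$(0,c) else 0)"
        by (rule sum.cong) (use True r' in \<open>auto simp: F_def\<close>)
      thus ?thesis using True by simp
    next
      case False
      have "(\<Sum>k<Suc m. F$$(r,k) * A$$(k,c)) = (\<Sum>k<Suc m. (if k = 0 then - A$$(r,0) * A$$(0,c) else 0)
          + (if k = r then p * A$$(r,c) else 0))"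
        by (rule sum.cong) (use False r' in \<open>auto simp: F_def\<close>)
      also have "\<dots> = - A$$(r,0) * A$$(0,c) + p * A$$(r,c)"
        using r' by (simp add: sum.distrib)
      finally show ?thesis using False by simp
    qed
    finally show "(F * A) $$ (r,c) = mat (Suc m) (Suc m) (\<lambda>(r,c). if r = 0 then A$$(0,c) else p * A$$(r,c) - A$$(r,0)*A$$(0,c)) $$ (r,c)"
      using r' c' by simp
  qed (use F A in auto)
  have "det (F * A) = det F * det A" by (rule det_mult[OF F A])
  hence "p^m * det A = det (F*A)" using dF by simp
  also have "\<dots> = (\<Sum>i<Suc m. (F*A) $$ (i,0) * cofactor (F*A) i 0)"
    by (rule laplace_expansion_column) (use F A in auto)
  also have "\<dots> = (\<Sum>i<Suc m. if i = 0 then p * cofactor (F*A) 0 0 else 0)"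
    by (rule sum.cong) (auto simp: FA p_def)
  also have "\<dots> = p * cofactor (F*A) 0 0" by simp
  also have "cofactor (F*A) 0 0 = det (mat m m (\<lambda>(r,c).
            A$$(0,0)*A$$(Suc r, Suc c) - A$$(Suc r,0)*A$$(0,Suc c)))"
  proof -
    have "mat_delete (F*A) 0 0 = mat m m (\<lambda>(r,c).
            A$$(0,0)*A$$(Suc r, Suc c) - A$$(Suc r,0)*A$$(0,Suc c))"
      by (rule eq_matI) (auto simp: mat_delete_def FA p_def)
    thus ?thesis unfolding cofactor_def by simp
  qed
  finally show ?thesis unfolding p_def .
qed

lemma schur_gen:
  fixes A :: "'a::comm_ring_1 mat"
  assumes A: "A \<in> carrier_mat (Suc m) (Suc m)" and i: "i < Suc m" and j: "j < Suc m"
  shows "A$$(i,j)^m * det A = (-1)^(i+j) * A$$(i,j) * det (mat m m (\<lambda>(r,c).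
      A$$(i,j)*A$$(insert_index i r, insert_index j c) - A$$(insert_index i r, j)*A$$(i, insert_index j c)))"
proof -
  define A' where "A' = swap_col_to_front (swap_row_to_front A i) j"
  have A1: "swap_row_to_front A i = mat (Suc m) (Suc m) (\<lambda> (r,c). if r = 0 then A $$ (i,c)
    else if r \<le> i then A $$ (r - 1, c) else A $$ (r,c))"
    by (rule swap_row_to_front_result[OF A i])
  have A1c: "swap_row_to_front A i \<in> carrier_mat (Suc m) (Suc m)" unfolding A1 by auto
  have A'eq: "A' = mat (Suc m) (Suc m) (\<lambda> (r,c). if c = 0 then swap_row_to_front A i $$ (r,j)
    else if c \<le> j then swap_row_to_front A i $$ (r, c-1) else swap_row_to_front A i $$ (r,c))"
    unfolding A'_def by (rule swap_col_to_front_result[OF A1c j])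
  have A'c: "A' \<in> carrier_mat (Suc m) (Suc m)" unfolding A'eq by auto
  have dA': "det A' = (-1)^j * ((-1)^i * det A)"
    unfolding A'_def using swap_col_to_front_det[OF A1c j] swap_row_to_front_det[OF A i] by simp
  have e00: "A'$$(0,0) = A$$(i,j)" unfolding A'eq A1 using i j by simp
  have eC: "mat m m (\<lambda>(r,c). A'$$(0,0)*A'$$(Suc r, Suc c) - A'$$(Suc r,0)*A'$$(0,Suc c))
     = mat m m (\<lambda>(r,c). A$$(i,j)*A$$(insert_index i r, insert_index j c) - A$$(insert_index i r, j)*A$$(i, insert_index j c))"
    by (rule eq_matI) (use i j in \<open>auto simp: A'eq A1 insert_index_def\<close>)
  note X = schur00[OF A'c, unfolded eC, unfolded e00 dA']
  from X have "A$$(i,j)^m * ((-1)^j * ((-1)^i * det A)) = A$$(i,j) * det (mat m m (\<lambda>(r,c).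
      A$$(i,j)*A$$(insert_index i r, insert_index j c) - A$$(insert_index i r, j)*A$$(i, insert_index j c)))"
    .
  hence "(-1)^(i+j) * (A$$(i,j)^m * ((-1)^j * ((-1)^i * det A))) = (-1)^(i+j) * A$$(i,j) * det (mat m m (\<lambda>(r,c).
      A$$(i,j)*A$$(insert_index i r, insert_index j c) - A$$(insert_index i r, j)*A$$(i, insert_index j c)))"
    by simp
  moreover have "(-1)^(i+j) * (A$$(i,j)^m * ((-1)^j * ((-1)^i * det A))) = A$$(i,j)^m * det A"
    by (simp add: power_add algebra_simps flip: power_mult_distrib)
  ultimately show ?thesis by simp
qed


fun pl_add :: "int list \<Rightarrow> int list \<Rightarrow> int list" where
  "pl_add [] ys = ys"
| "pl_add xs [] = xs"
| "pl_add (x#xs) (y#ys) = (x+y) # pl_add xs ys"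

fun pl_mult :: "int list \<Rightarrow> int list \<Rightarrow> int list" where
  "pl_mult [] ys = []"
| "pl_mult (x#xs) ys = pl_add (map ((*) x) ys) (0 # pl_mult xs ys)"

definition pl_sub :: "int list \<Rightarrow> int list \<Rightarrow> int list" where
  "pl_sub xs ys = pl_add xs (map uminus ys)"

definition pl_is0 :: "int list \<Rightarrow> bool" where
  "pl_is0 xs = list_all (\<lambda>x. x = 0) xs"

lemma Poly_pl_add[simp]: "Poly (pl_add xs ys) = Poly xs + Poly ys"
  by (induction xs ys rule: pl_add.induct) auto

lemma Poly_map_times: "Poly (map ((*) x) ys) = smult x (Poly ys)"
  by (induction ys) auto

lemma Poly_map_uminus: "Poly (map uminus ys) = - Poly ys"
  by (induction ys) auto

lemma Poly_pl_mult[simp]: "Poly (pl_mult xs ys) = Poly xs * Poly ys"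
  by (induction xs) (auto simp: Poly_map_times mult_pCons_left)

lemma Poly_pl_sub[simp]: "Poly (pl_sub xs ys) = Poly xs - Poly ys"
  by (simp add: pl_sub_def Poly_map_uminus)

lemma Poly_pl_is0: "pl_is0 xs \<longleftrightarrow> Poly xs = 0"
  unfolding pl_is0_def by (induction xs) (auto simp: list_all_iff)

definition matL :: "int list list list \<Rightarrow> int poly mat" where
  "matL A = mat (length A) (length A) (\<lambda>(r,c). Poly (A!r!c))"

definition sqL :: "int list list list \<Rightarrow> bool" where
  "sqL A = list_all (\<lambda>R. length R = length A) A"

definition del_nth :: "nat \<Rightarrow> 'a list \<Rightarrow> 'a list" where
  "del_nth i xs = take i xs @ drop (Suc i) xs"

lemma del_nth_length[simp]: "i < length xs \<Longrightarrow> length (del_nth i xs) = length xs - 1"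
  by (simp add: del_nth_def)

lemma del_nth_nth: "i < length xs \<Longrightarrow> r < length xs - 1 \<Longrightarrow> del_nth i xs ! r = xs ! insert_index i r"
  by (auto simp: del_nth_def insert_index_def nth_append min_def)

definition schurL :: "int list list list \<Rightarrow> nat \<Rightarrow> nat \<Rightarrow> int list list list" where
  "schurL A i j = map (\<lambda>R. map2 (\<lambda>a b. pl_sub (pl_mult (A!i!j) a) (pl_mult (R!j) b)) (del_nth j R) (del_nth j (A!i))) (del_nth i A)"

definition step_ok :: "int list \<Rightarrow> int list list list \<Rightarrow> nat \<Rightarrow> nat \<Rightarrow> int list list list \<Rightarrow> bool" where
  "step_ok q A i j B \<longleftrightarrow> sqL A \<and> 2 \<le> length A \<and> i < length A \<and> j < length A \<and> \<not> pl_is0 (A!i!j)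
     \<and> length B = length A - 1 \<and> sqL B
     \<and> list_all2 (list_all2 (\<lambda>b c. pl_is0 (pl_sub (pl_mult q b) c))) B (schurL A i j)"

lemma step_correct:
  assumes ok: "step_ok q A i j B"
  shows "Poly (A!i!j) ^ (length A - 2) * det (matL A) = (-1)^(i+j) * Poly q ^ (length A - 1) * det (matL B)"
proof -
  define n where "n = length A"
  define m where "m = n - 1"
  define p where "p = Poly (A!i!j)"
  from ok have sq: "sqL A" and n2: "2 \<le> n" and i: "i < n" and j: "j < n" and p0: "p \<noteq> 0"
    and lB: "length B = m" and sqB: "sqL B"
    and chk: "list_all2 (list_all2 (\<lambda>b c. pl_is0 (pl_sub (pl_mult q b) c))) B (schurL A i j)"
    unfolding step_ok_def n_def m_def p_def by (auto simp: Poly_pl_is0)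
  have nm: "n = Suc m" using n2 unfolding m_def by auto
  have rowlen: "\<And>r. r < n \<Longrightarrow> length (A!r) = n" using sq unfolding sqL_def n_def by (auto simp: list_all_length)
  have Ac: "matL A \<in> carrier_mat (Suc m) (Suc m)" unfolding matL_def n_def[symmetric] nm by auto
  have im: "i < Suc m" "j < Suc m" using i j nm by auto
  have ent: "\<And>r c. r < n \<Longrightarrow> c < n \<Longrightarrow> matL A $$ (r,c) = Poly (A!r!c)"
    unfolding matL_def n_def by auto
  have ins: "\<And>r. r < m \<Longrightarrow> insert_index i r < n" "\<And>c. c < m \<Longrightarrow> insert_index j c < n"
    using nm by (auto simp: insert_index_def)
  note S = schur_gen[OF Ac im]
  have lS: "length (schurL A i j) = m" unfolding schurL_def using i by (simp add: n_def m_def)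
  have Sent: "\<And>r c. r < m \<Longrightarrow> c < m \<Longrightarrow> Poly (schurL A i j ! r ! c) =
      p * Poly (A ! insert_index i r ! insert_index j c) - Poly (A ! insert_index i r ! j) * Poly (A ! i ! insert_index j c)"
  proof -
    fix r c assume r: "r < m" and c: "c < m"
    have r1: "r < length A - 1" using r unfolding m_def n_def .
    have lr: "length (A ! insert_index i r) = n" using rowlen ins(1)[OF r] .
    have li: "length (A ! i) = n" using rowlen i .
    have c1: "c < length (A ! insert_index i r) - 1" "c < length (A!i) - 1" using c lr li unfolding m_def by auto
    have jr: "j < length (A ! insert_index i r)" "j < length (A!i)" using j lr li by auto
    show "?thesis r c"
      unfolding schurL_def using r1 c1 jr i unfolding n_def
      by (simp add: del_nth_nth p_def)
  qed
  have Bent: "\<And>r c. r < m \<Longrightarrow> c < m \<Longrightarrow> Poly q * Poly (B!r!c) = Poly (schurL A i j ! r ! c)"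
  proof -
    fix r c assume r: "r < m" and c: "c < m"
    have lBr: "length (B!r) = m" using sqB r lB unfolding sqL_def by (auto simp: list_all_length)
    from chk have "list_all2 (\<lambda>b c. pl_is0 (pl_sub (pl_mult q b) c)) (B!r) (schurL A i j ! r)"
      using r lB by (auto simp: list_all2_conv_all_nth)
    hence "pl_is0 (pl_sub (pl_mult q (B!r!c)) (schurL A i j ! r ! c))"
      using c lBr by (auto simp: list_all2_conv_all_nth)
    thus "?thesis r c" by (simp add: Poly_pl_is0)
  qed
  have Ceq: "mat m m (\<lambda>(r,c). matL A$$(i,j)*matL A$$(insert_index i r, insert_index j c)
        - matL A$$(insert_index i r, j)*matL A$$(i, insert_index j c)) = Poly q \<cdot>\<^sub>m matL B"
  proof (rule eq_matI)
    fix r c assume "r < dim_row (Poly q \<cdot>\<^sub>m matL B)" "c < dim_col (Poly q \<cdot>\<^sub>m matL B)"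
    hence r: "r < m" and c: "c < m" by (auto simp: matL_def lB)
    show "mat m m (\<lambda>(r,c). matL A$$(i,j)*matL A$$(insert_index i r, insert_index j c)
        - matL A$$(insert_index i r, j)*matL A$$(i, insert_index j c)) $$ (r,c) = (Poly q \<cdot>\<^sub>m matL B) $$ (r,c)"
      using r c ent[OF ins(1)[OF r] ins(2)[OF c]] ent[OF i j] ent[OF ins(1)[OF r] j] ent[OF i ins(2)[OF c]]
        Sent[OF r c] Bent[OF r c]
      by (simp add: matL_def lB p_def)
  qed (auto simp: matL_def lB)
  have dB: "det (Poly q \<cdot>\<^sub>m matL B) = Poly q ^ m * det (matL B)"
    by (simp add: matL_def lB)
  from S[unfolded Ceq dB] have "p ^ m * det (matL A) = (-1)^(i+j) * p * (Poly q ^ m * det (matL B))"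
    unfolding ent[OF i j] p_def .
  hence "p * (p ^ (m-1) * det (matL A)) = p * ((-1)^(i+j) * Poly q ^ m * det (matL B))"
    using n2 nm by (cases m) (auto simp: algebra_simps)
  hence "p ^ (m-1) * det (matL A) = (-1)^(i+j) * Poly q ^ m * det (matL B)"
    using p0 by simp
  thus ?thesis unfolding p_def m_def n_def by (simp add: numeral_2_eq_2)
qed

fun bchain :: "int list \<Rightarrow> int list list list \<Rightarrow> ((nat \<times> nat) \<times> int list list list) list \<Rightarrow> (int \<times> int list) option" where
  "bchain q A [] = (if length A = 1 \<and> length (A!0) = 1 then Some (1, A!0!0) else None)"
| "bchain q A (((i,j),B) # cs) = (if step_ok q A i j B then
      (case bchain (A!i!j) B cs of None \<Rightarrow> None | Some (s,f) \<Rightarrow> Some ((-1)^(i+j)*s, f)) else None)"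

lemma bchain_correct:
  assumes "bchain q A cs = Some (s,f)" and "Poly q \<noteq> 0"
    and "Poly q ^ (length A - 1) * D = det (matL A)"
  shows "D = [:of_int s:] * Poly f"
  using assms
proof (induction cs arbitrary: q A D s f)
  case Nil
  hence l: "length A = 1" and s: "s = 1" and f: "f = A!0!0" by (auto split: if_splits)
  have "det (matL A) = matL A $$ (0,0)" by (rule det_single) (auto simp: matL_def l)
  also have "\<dots> = Poly f" by (simp add: matL_def l f)
  finally show ?case using Nil.prems(3) l s by simp
next
  case (Cons c cs)
  obtain i j B where c: "c = ((i,j),B)" by (metis prod.collapse)
  from Cons.prems(1) c have ok: "step_ok q A i j B"
    and rec: "\<exists>s'. bchain (A!i!j) B cs = Some (s',f) \<and> s = (-1)^(i+j)*s'"
    by (auto split: if_splits option.splits)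
  from rec obtain s' where rec': "bchain (A!i!j) B cs = Some (s',f)" and s: "s = (-1)^(i+j)*s'" by auto
  define p where "p = Poly (A!i!j)"
  define \<sigma> :: "int poly" where "\<sigma> = (-1)^(i+j)"
  have sig2: "\<sigma> * \<sigma> = 1" unfolding \<sigma>_def by (simp flip: power_add add: power_mult_distrib[symmetric] )
  from ok have p0: "p \<noteq> 0" and lB: "length B = length A - 1" and n2: "2 \<le> length A"
    unfolding step_ok_def p_def by (auto simp: Poly_pl_is0)
  note st = step_correct[OF ok, folded p_def]
  have "Poly q ^ (length A - 1) * (p ^ (length A - 2) * D) = p ^ (length A - 2) * det (matL A)"
    by (subst Cons.prems(3)[symmetric]) (simp only: ac_simps)
  also have "\<dots> = Poly q ^ (length A - 1) * (\<sigma> * det (matL B))"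
    using st unfolding \<sigma>_def by (simp only: ac_simps)
  finally have "Poly q ^ (length A - 1) * (p ^ (length A - 2) * D) = Poly q ^ (length A - 1) * (\<sigma> * det (matL B))" .
  moreover have "Poly q ^ (length A - 1) \<noteq> 0" using Cons.prems(2) by simp
  ultimately have "p ^ (length A - 2) * D = \<sigma> * det (matL B)" by (metis mult_left_cancel)
  hence "p ^ (length B - 1) * (\<sigma> * D) = det (matL B)"
    using sig2 lB n2 by (metis (no_types, lifting) diff_diff_left mult.assoc mult.left_commute mult_1 numeral_2_eq_2 one_add_one)
  from Cons.IH[OF rec' p0[unfolded p_def] this[unfolded p_def]] have "\<sigma> * D = [:of_int s':] * Poly f" .
  hence "\<sigma> * (\<sigma> * D) = \<sigma> * ([:of_int s':] * Poly f)" by simp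
  hence "D = \<sigma> * [:of_int s':] * Poly f" using sig2 by (simp add: mult.assoc[symmetric])
  moreover have "\<sigma> * [:of_int s':] = [:of_int s:]"
  proof -
    have "(-1::int poly)^k = [:(-1)^k:]" for k by (induction k) auto
    thus ?thesis unfolding \<sigma>_def s by simp
  qed
  ultimately show ?case by (metis mult.assoc)
qed



definition xyy :: "3 \<Rightarrow> 3" where "xyy = D3_x \<circ> D3_y \<circ> D3_y"
definition xy :: "3 \<Rightarrow> 3" where "xy = D3_x \<circ> D3_y"
definition aa :: "nat \<Rightarrow> 3 \<Rightarrow> 3" where
  "aa g = (if g \<in> {0,2,5,10} then xyy else if g \<in> {1,6,8} then D3_x else xy)"

lemma xyy_eq: "xyy = (\<lambda>n. 2 - n)" unfolding xyy_def D3_x_def D3_y_def by (auto simp: algebra_simps)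
lemma xy_eq: "xy = (\<lambda>n. 1 - n)" unfolding xy_def D3_x_def D3_y_def by (auto simp: algebra_simps)
lemma x_eq: "D3_x = (\<lambda>n. 0 - n)" unfolding D3_x_def by auto

lemma refl_inv: "inv_into UNIV (\<lambda>n::3. c - n) = (\<lambda>n. c - n)"
  by (rule inv_unique_comp) (auto simp: algebra_simps)

lemma refl_inv0: "inv_into UNIV (uminus :: 3 \<Rightarrow> 3) = uminus"
  using refl_inv[of 0] by simp

lemma tvar_nz: "tvar \<noteq> 0" unfolding tvar_def by (simp add: eq_fract Zero_fract_def)

interpretation pq: comm_ring_hom polyQt
  by unfold_locales (simp_all add: polyQt_def One_fract_def Zero_fract_def[symmetric])

lemma polyQt_pCons: "polyQt (pCons a p) = of_int a + tvar * polyQt p"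
proof -
  have 1: "of_int a = Fract [:a:] 1" using pq.hom_of_int[of a] by (simp add: polyQt_def of_int_poly)
  show ?thesis unfolding polyQt_def tvar_def 1 by (simp add: mult_pCons_left)
qed
lemma polyQt_0: "polyQt 0 = 0" by simp

lemma aa_vals: "aa 0 = (\<lambda>n. 2 - n)" "aa 1 = (\<lambda>n. 0 - n)" "aa 2 = (\<lambda>n. 2 - n)" "aa 3 = (\<lambda>n. 1 - n)"
   "aa 4 = (\<lambda>n. 1 - n)" "aa 5 = (\<lambda>n. 2 - n)" "aa 6 = (\<lambda>n. 0 - n)" "aa 7 = (\<lambda>n. 1 - n)"
   "aa 8 = (\<lambda>n. 0 - n)" "aa 9 = (\<lambda>n. 1 - n)" "aa 10 = (\<lambda>n. 2 - n)" "aa (Suc 0) = (\<lambda>n. 0 - n)"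
  by (simp_all add: aa_def xyy_eq xy_eq x_eq)

definition M3 :: "'a list list \<Rightarrow> 'a mat" where "M3 L = mat 3 3 (\<lambda>(i,j). L!i!j)"

lemma less3: "(i::nat) < 3 \<longleftrightarrow> i = 0 \<or> i = 1 \<or> i = 2" by auto
lemma less3E: "(i::nat) < 3 \<Longrightarrow> (i = 0 \<Longrightarrow> P) \<Longrightarrow> (i = 1 \<Longrightarrow> P) \<Longrightarrow> (i = 2 \<Longrightarrow> P) \<Longrightarrow> P" by linarith

lemma M3_eq: "M3 [[a1,a2,a3],[a4,a5,a6],[a7,a8,a9]] = M3 [[b1,b2,b3],[b4,b5,b6],[b7,b8,b9]] \<longleftrightarrow>
  a1 = b1 \<and> a2 = b2 \<and> a3 = b3 \<and> a4 = b4 \<and> a5 = b5 \<and> a6 = b6 \<and> a7 = b7 \<and> a8 = b8 \<and> a9 = b9"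
  unfolding M3_def by (auto simp: mat_eq_iff less3)

lemma M3_add: "M3 [[a1,a2,a3],[a4,a5,a6],[a7,a8,a9]] + M3 [[b1,b2,b3],[b4,b5,b6],[b7,b8,b9]]
   = M3 [[a1+b1,a2+b2,a3+b3],[a4+b4,a5+b5,a6+b6],[a7+b7,a8+b8,a9+b9]]"
  unfolding M3_def by (rule eq_matI) (auto simp: less3)

lemma M3_uminus: "- M3 [[a1,a2,a3],[a4,a5,a6],[a7,a8,a9]] = M3 [[-a1,-a2,-a3],[-a4,-a5,-a6],[-a7,-a8,-a9]]"
  for a1 :: "'a::ring"
  unfolding M3_def by (rule eq_matI) (auto simp: less3)

lemma M3_smult: "c \<cdot>\<^sub>m M3 [[a1,a2,a3],[a4,a5,a6],[a7,a8,a9]] = M3 [[c*a1,c*a2,c*a3],[c*a4,c*a5,c*a6],[c*a7,c*a8,c*a9]]"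
  unfolding M3_def by (rule eq_matI) (auto simp: less3)

lemma sum3: "(\<Sum>k\<in>{0..<3::nat}. f k) = f 0 + f 1 + f 2"
  by (simp add: eval_nat_numeral atLeast0_lessThan_Suc ac_simps)

lemma M3_mult: "M3 [[a1,a2,a3],[a4,a5,a6],[a7,a8,a9]] * M3 [[b1,b2,b3],[b4,b5,b6],[b7,b8,b9]]
   = M3 [[a1*b1+a2*b4+a3*b7, a1*b2+a2*b5+a3*b8, a1*b3+a2*b6+a3*b9],
         [a4*b1+a5*b4+a6*b7, a4*b2+a5*b5+a6*b8, a4*b3+a5*b6+a6*b9],
         [a7*b1+a8*b4+a9*b7, a7*b2+a8*b5+a9*b8, a7*b3+a8*b6+a9*b9]]"
  for a1 :: "'a::comm_ring"
  unfolding M3_def by (rule eq_matI) (auto simp: less3 scalar_prod_def sum3)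

lemma M3_one: "1\<^sub>m 3 = M3 [[1,0,0],[0,1,0],[0,0,1]]"
  unfolding M3_def by (rule eq_matI) (auto simp: less3)

lemma M3_zero: "0\<^sub>m 3 3 = M3 [[0,0,0],[0,0,0],[0,0,0]]"
  unfolding M3_def by (rule eq_matI) (auto simp: less3)

lemma rho_M3: "rho f = M3 [[if f 0 = 0 then 1 else 0, if f 1 = 0 then 1 else 0, if f 2 = 0 then 1 else 0],
                          [if f 0 = 1 then 1 else 0, if f 1 = 1 then 1 else 0, if f 2 = 1 then 1 else 0],
                          [if f 0 = 2 then 1 else 0, if f 1 = 2 then 1 else 0, if f 2 = 2 then 1 else 0]]"
  unfolding M3_def rho_def
proof (rule eq_matI)
  fix i j assume "i < dim_row (mat 3 3 (\<lambda>(i, j). [[if f 0 = 0 then 1 else 0, if f 1 = 0 then 1 else 0, if f 2 = 0 then 1 else 0],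
                          [if f 0 = 1 then 1 else 0, if f 1 = 1 then 1 else 0, if f 2 = 1 then 1 else 0],
                          [if f 0 = 2 then 1 else 0, if f 1 = 2 then 1 else 0, if f 2 = 2 then 1 else 0]] ! i ! j))"
    "j < dim_col (mat 3 3 (\<lambda>(i, j). [[if f 0 = 0 then 1 else 0, if f 1 = 0 then 1 else 0, if f 2 = 0 then 1 else 0],
                          [if f 0 = 1 then 1 else 0, if f 1 = 1 then 1 else 0, if f 2 = 1 then 1 else 0],
                          [if f 0 = 2 then 1 else 0, if f 1 = 2 then 1 else 0, if f 2 = 2 then 1 else 0]] ! i ! j))"
  hence i: "i < 3" and j: "j < 3" by auto
  show "mat 3 3 (\<lambda>(i, j). if f (of_nat j) = of_nat i then 1 else 0) $$ (i, j) = mat 3 3 (\<lambda>(i, j). [[if f 0 = 0 then 1 else 0, if f 1 = 0 then 1 else 0, if f 2 = 0 then 1 else 0],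
                          [if f 0 = 1 then 1 else 0, if f 1 = 1 then 1 else 0, if f 2 = 1 then 1 else 0],
                          [if f 0 = 2 then 1 else 0, if f 1 = 2 then 1 else 0, if f 2 = 2 then 1 else 0]] ! i ! j) $$ (i, j)"
    using i j by (cases rule: less3E[OF i]; cases rule: less3E[OF j]; simp split del: if_split)
qed auto


lemma mat3_M3: "mat 3 3 f = M3 [[f(0,0),f(0,1),f(0,2)],[f(1,0),f(1,1),f(1,2)],[f(2,0),f(2,1),f(2,2)]]"
  unfolding M3_def by (rule eq_matI) (auto simp: less3)

lemma M3_minus: "M3 [[a1,a2,a3],[a4,a5,a6],[a7,a8,a9]] - M3 [[b1,b2,b3],[b4,b5,b6],[b7,b8,b9]]
   = M3 [[a1-b1,a2-b2,a3-b3],[a4-b4,a5-b5,a6-b6],[a7-b7,a8-b8,a9-b9]]"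
  for a1 :: "'a::ring"
  unfolding M3_def by (rule eq_matI) (auto simp: less3)

lemma map_mat_M3: "map_mat f (M3 [[a1,a2,a3],[a4,a5,a6],[a7,a8,a9]]) = M3 [[f a1,f a2,f a3],[f a4,f a5,f a6],[f a7,f a8,f a9]]"
  unfolding M3_def by (rule eq_matI) (auto simp: less3)

lemma nat_less10_cases:
  assumes "(k::nat) < 10" "P 0" "P 1" "P 2" "P 3" "P 4" "P 5" "P 6" "P 7" "P 8" "P 9"
  shows "P k"
proof -
  have "k = 0 \<or> k = 1 \<or> k = 2 \<or> k = 3 \<or> k = 4 \<or> k = 5 \<or> k = 6 \<or> k = 7 \<or> k = 8 \<or> k = 9"
    using assms(1) by arith
  thus ?thesis using assms(2-) by (elim disjE) simp_all
qed

lemma polyQt_inj: "polyQt p = polyQt q \<longleftrightarrow> p = q"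
  unfolding polyQt_def by (simp add: eq_fract)

lemma polyQt_nz: "p \<noteq> 0 \<Longrightarrow> polyQt p \<noteq> 0"
  using polyQt_inj[of p 0] by simp

lemma polyQt_t: "polyQt [:0,1:] = tvar" unfolding polyQt_def tvar_def ..

lemma det_rowscale:
  fixes x :: "nat \<Rightarrow> nat \<Rightarrow> 'a::comm_ring_1"
  shows "det (mat n n (\<lambda>(r,c). d r * x r c)) = (\<Prod>r<n. d r) * det (mat n n (\<lambda>(r,c). x r c))"
proof -
  define D :: "'a mat" where "D = mat n n (\<lambda>(i,j). if i = j then d i else 0)"
  define X where "X = mat n n (\<lambda>(r,c). x r c)"
  have Dc: "D \<in> carrier_mat n n" and Xc: "X \<in> carrier_mat n n" unfolding D_def X_def by auto
  have "det D = prod_list (diag_mat D)"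
    by (rule det_upper_triangular[OF _ Dc]) (auto simp: D_def upper_triangular_def)
  also have "\<dots> = (\<Prod>r<n. d r)" unfolding prod_list_diag_prod using Dc
    by (simp add: D_def atLeast0LessThan)
  finally have dD: "det D = (\<Prod>r<n. d r)" .
  have DX: "D * X = mat n n (\<lambda>(r,c). d r * x r c)"
  proof (rule eq_matI)
    fix r c assume "r < dim_row (mat n n (\<lambda>(r,c). d r * x r c))" "c < dim_col (mat n n (\<lambda>(r,c). d r * x r c))"
    hence r: "r < n" and c: "c < n" by auto
    have "(D * X) $$ (r,c) = (\<Sum>k<n. D$$(r,k) * X$$(k,c))"
      using r c Dc Xc by (simp add: scalar_prod_def atLeast0LessThan)
    also have "\<dots> = (\<Sum>k<n. if k = r then d r * x r c else 0)"
      by (rule sum.cong) (use r c in \<open>auto simp: D_def X_def\<close>)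
    also have "\<dots> = d r * x r c" using r by simp
    finally show "(D * X) $$ (r,c) = mat n n (\<lambda>(r,c). d r * x r c) $$ (r,c)" using r c by simp
  qed (use Dc Xc in auto)
  have "det (mat n n (\<lambda>(r,c). d r * x r c)) = det (D * X)" unfolding DX ..
  also have "\<dots> = det D * det X" by (rule det_mult[OF Dc Xc])
  finally show ?thesis unfolding dD X_def .
qed

lemma pl_eqI: "pl_is0 (pl_sub xs ys) \<Longrightarrow> Poly xs = Poly ys"
  by (simp add: Poly_pl_is0)

lemma no_sq3: "(z::int) * z \<noteq> 3 \<and> z * z \<noteq> -3"
proof (cases "\<bar>z\<bar> \<le> 1")
  case True
  hence "z = -1 \<or> z = 0 \<or> z = 1" by auto
  thus ?thesis by auto
next
  case False
  hence "2 \<le> \<bar>z\<bar>" by auto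
  hence "4 \<le> \<bar>z\<bar> * \<bar>z\<bar>" using mult_mono[of 2 "\<bar>z\<bar>" 2 "\<bar>z\<bar>"] by auto
  thus ?thesis by (simp add: abs_mult_self_eq)
qed

definition N0 :: "int list list list" where "N0 = [[[0,-1],[],[],[],[],[],[],[],[],[],[],[1],[],[],[],[],[],[],[],[],[],[],[],[],[],[],[],[],[],[]],
 [[],[],[0,-1],[],[],[],[],[],[],[1],[],[],[],[],[],[],[],[],[],[],[],[],[],[],[],[],[],[],[],[]],
 [[],[0,-1],[],[],[],[],[],[],[],[],[1],[],[],[],[],[],[],[],[],[],[],[],[],[],[],[],[],[],[],[]],
 [[],[],[],[0,-1],[],[1],[],[],[],[],[],[],[0,1],[],[],[],[],[],[],[],[],[],[],[],[],[],[],[],[],[]],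
 [[],[],[],[],[1,-1],[],[],[],[],[],[],[],[],[0,1],[],[],[],[],[],[],[],[],[],[],[],[],[],[],[],[]],
 [[],[],[],[1],[],[0,-1],[],[],[],[],[],[],[],[],[0,1],[],[],[],[],[],[],[],[],[],[],[],[],[],[],[]],
 [[],[],[],[],[],[],[],[0,-1],[],[],[],[],[],[-1],[0,1],[],[1],[],[],[],[],[],[],[],[],[],[],[],[],[]],
 [[],[],[],[],[],[],[0,-1],[],[],[],[],[],[],[0,1],[-1],[],[],[1],[],[],[],[],[],[],[],[],[],[],[],[]],
 [[],[],[],[],[],[],[],[],[0,-1],[],[],[],[-1,1],[],[],[1],[],[],[],[],[],[],[],[],[],[],[],[],[],[]],
 [[],[],[],[],[],[],[],[],[],[],[],[],[],[],[0,-1],[0,1],[-1],[],[],[1],[],[],[],[],[],[],[],[],[],[]],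
 [[],[],[],[],[],[],[],[],[],[],[],[],[],[0,-1],[],[],[],[-1,1],[],[],[1],[],[],[],[],[],[],[],[],[]],
 [[],[],[],[],[],[],[],[],[],[],[],[],[0,-1],[],[],[-1],[0,1],[],[1],[],[],[],[],[],[],[],[],[],[],[]],
 [[],[],[],[],[],[-1],[],[],[],[],[],[],[],[],[],[],[],[],[0,-1],[],[1],[],[],[0,1],[],[],[],[],[],[]],
 [[],[],[],[],[-1],[],[],[],[],[],[],[],[],[],[],[],[],[],[],[1,-1],[],[0,1],[],[],[],[],[],[],[],[]],
 [[],[],[],[-1],[],[],[],[],[],[],[],[],[],[],[],[],[],[],[1],[],[0,-1],[],[0,1],[],[],[],[],[],[],[]],
 [[],[],[],[],[],[],[],[],[],[-1],[0,1],[],[],[],[],[],[],[],[],[0,-1],[],[],[],[],[1],[],[],[],[],[]],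
 [[],[],[],[],[],[],[],[],[],[0,1],[-1],[],[],[],[],[],[],[],[0,-1],[],[],[],[],[],[],[1],[],[],[],[]],
 [[],[],[],[],[],[],[],[],[],[],[],[-1,1],[],[],[],[],[],[],[],[],[0,-1],[],[],[],[],[],[1],[],[],[]],
 [[],[],[],[],[],[],[],[],[],[],[-1],[],[],[],[],[],[],[],[],[],[],[0,-1],[1],[],[],[],[],[],[],[0,1]],
 [[],[],[],[],[],[],[],[],[],[-1],[],[],[],[],[],[],[],[],[],[],[],[1],[0,-1],[],[],[],[],[0,1],[],[]],
 [[],[],[],[],[],[],[],[],[],[],[],[-1],[],[],[],[],[],[],[],[],[],[],[],[1,-1],[],[],[],[],[0,1],[]],
 [[],[],[],[],[],[],[],[0,1],[],[],[],[],[],[],[],[0,-1],[],[1],[],[],[],[],[],[],[],[],[],[],[],[-1]],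
 [[],[],[],[],[],[],[],[],[0,1],[],[],[],[],[],[],[],[1,-1],[],[],[],[],[],[],[],[],[],[],[],[-1],[]],
 [[],[],[],[],[],[],[0,1],[],[],[],[],[],[],[],[],[1],[],[0,-1],[],[],[],[],[],[],[],[],[],[-1],[],[]],
 [[0,1],[],[],[],[],[],[],[],[],[],[],[],[],[],[],[1,-1],[],[],[],[],[],[-1],[],[],[],[],[],[],[],[]],
 [[],[0,1],[],[],[],[],[],[],[],[],[],[],[],[],[],[],[0,-1],[1],[],[],[],[],[],[-1],[],[],[],[],[],[]],
 [[],[],[0,1],[],[],[],[],[],[],[],[],[],[],[],[],[],[1],[0,-1],[],[],[],[],[-1],[],[],[],[],[],[],[]],
 [[],[],[],[],[],[],[],[],[],[],[],[],[],[],[],[0,-1],[],[],[],[],[],[],[],[],[],[-1,1],[],[],[],[]],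
 [[],[],[],[],[],[],[],[],[],[],[],[],[],[],[],[],[],[0,-1],[],[],[],[],[],[],[0,1],[],[-1],[],[],[]],
 [[],[],[],[],[],[],[],[],[],[],[],[],[],[],[],[],[0,-1],[],[],[],[],[],[],[],[-1],[],[0,1],[],[],[]]]"

lemma N0_rows:
  "N0 ! 0 = [[0,-1],[],[],[],[],[],[],[],[],[],[],[1],[],[],[],[],[],[],[],[],[],[],[],[],[],[],[],[],[],[]]"
  "N0 ! 1 = [[],[],[0,-1],[],[],[],[],[],[],[1],[],[],[],[],[],[],[],[],[],[],[],[],[],[],[],[],[],[],[],[]]"
  "N0 ! 2 = [[],[0,-1],[],[],[],[],[],[],[],[],[1],[],[],[],[],[],[],[],[],[],[],[],[],[],[],[],[],[],[],[]]"
  "N0 ! 3 = [[],[],[],[0,-1],[],[1],[],[],[],[],[],[],[0,1],[],[],[],[],[],[],[],[],[],[],[],[],[],[],[],[],[]]"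
  "N0 ! 4 = [[],[],[],[],[1,-1],[],[],[],[],[],[],[],[],[0,1],[],[],[],[],[],[],[],[],[],[],[],[],[],[],[],[]]"
  "N0 ! 5 = [[],[],[],[1],[],[0,-1],[],[],[],[],[],[],[],[],[0,1],[],[],[],[],[],[],[],[],[],[],[],[],[],[],[]]"
  "N0 ! 6 = [[],[],[],[],[],[],[],[0,-1],[],[],[],[],[],[-1],[0,1],[],[1],[],[],[],[],[],[],[],[],[],[],[],[],[]]"
  "N0 ! 7 = [[],[],[],[],[],[],[0,-1],[],[],[],[],[],[],[0,1],[-1],[],[],[1],[],[],[],[],[],[],[],[],[],[],[],[]]"
  "N0 ! 8 = [[],[],[],[],[],[],[],[],[0,-1],[],[],[],[-1,1],[],[],[1],[],[],[],[],[],[],[],[],[],[],[],[],[],[]]"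
  "N0 ! 9 = [[],[],[],[],[],[],[],[],[],[],[],[],[],[],[0,-1],[0,1],[-1],[],[],[1],[],[],[],[],[],[],[],[],[],[]]"
  "N0 ! 10 = [[],[],[],[],[],[],[],[],[],[],[],[],[],[0,-1],[],[],[],[-1,1],[],[],[1],[],[],[],[],[],[],[],[],[]]"
  "N0 ! 11 = [[],[],[],[],[],[],[],[],[],[],[],[],[0,-1],[],[],[-1],[0,1],[],[1],[],[],[],[],[],[],[],[],[],[],[]]"
  "N0 ! 12 = [[],[],[],[],[],[-1],[],[],[],[],[],[],[],[],[],[],[],[],[0,-1],[],[1],[],[],[0,1],[],[],[],[],[],[]]"
  "N0 ! 13 = [[],[],[],[],[-1],[],[],[],[],[],[],[],[],[],[],[],[],[],[],[1,-1],[],[0,1],[],[],[],[],[],[],[],[]]"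
  "N0 ! 14 = [[],[],[],[-1],[],[],[],[],[],[],[],[],[],[],[],[],[],[],[1],[],[0,-1],[],[0,1],[],[],[],[],[],[],[]]"
  "N0 ! 15 = [[],[],[],[],[],[],[],[],[],[-1],[0,1],[],[],[],[],[],[],[],[],[0,-1],[],[],[],[],[1],[],[],[],[],[]]"
  "N0 ! 16 = [[],[],[],[],[],[],[],[],[],[0,1],[-1],[],[],[],[],[],[],[],[0,-1],[],[],[],[],[],[],[1],[],[],[],[]]"
  "N0 ! 17 = [[],[],[],[],[],[],[],[],[],[],[],[-1,1],[],[],[],[],[],[],[],[],[0,-1],[],[],[],[],[],[1],[],[],[]]"
  "N0 ! 18 = [[],[],[],[],[],[],[],[],[],[],[-1],[],[],[],[],[],[],[],[],[],[],[0,-1],[1],[],[],[],[],[],[],[0,1]]"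
  "N0 ! 19 = [[],[],[],[],[],[],[],[],[],[-1],[],[],[],[],[],[],[],[],[],[],[],[1],[0,-1],[],[],[],[],[0,1],[],[]]"
  "N0 ! 20 = [[],[],[],[],[],[],[],[],[],[],[],[-1],[],[],[],[],[],[],[],[],[],[],[],[1,-1],[],[],[],[],[0,1],[]]"
  "N0 ! 21 = [[],[],[],[],[],[],[],[0,1],[],[],[],[],[],[],[],[0,-1],[],[1],[],[],[],[],[],[],[],[],[],[],[],[-1]]"
  "N0 ! 22 = [[],[],[],[],[],[],[],[],[0,1],[],[],[],[],[],[],[],[1,-1],[],[],[],[],[],[],[],[],[],[],[],[-1],[]]"
  "N0 ! 23 = [[],[],[],[],[],[],[0,1],[],[],[],[],[],[],[],[],[1],[],[0,-1],[],[],[],[],[],[],[],[],[],[-1],[],[]]"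
  "N0 ! 24 = [[0,1],[],[],[],[],[],[],[],[],[],[],[],[],[],[],[1,-1],[],[],[],[],[],[-1],[],[],[],[],[],[],[],[]]"
  "N0 ! 25 = [[],[0,1],[],[],[],[],[],[],[],[],[],[],[],[],[],[],[0,-1],[1],[],[],[],[],[],[-1],[],[],[],[],[],[]]"
  "N0 ! 26 = [[],[],[0,1],[],[],[],[],[],[],[],[],[],[],[],[],[],[1],[0,-1],[],[],[],[],[-1],[],[],[],[],[],[],[]]"
  "N0 ! 27 = [[],[],[],[],[],[],[],[],[],[],[],[],[],[],[],[0,-1],[],[],[],[],[],[],[],[],[],[-1,1],[],[],[],[]]"
  "N0 ! 28 = [[],[],[],[],[],[],[],[],[],[],[],[],[],[],[],[],[],[0,-1],[],[],[],[],[],[],[0,1],[],[-1],[],[],[]]"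
  "N0 ! 29 = [[],[],[],[],[],[],[],[],[],[],[],[],[],[],[],[],[0,-1],[],[],[],[],[],[],[],[-1],[],[0,1],[],[],[]]"
  "N0 ! Suc 0 = [[],[],[0,-1],[],[],[],[],[],[],[1],[],[],[],[],[],[],[],[],[],[],[],[],[],[],[],[],[],[],[],[]]"
  by (simp_all add: N0_def)

definition cert0 :: "((nat \<times> nat) \<times> int list list list) list" where "cert0 = [((0,11),[[[],[],[0,-1],[],[],[],[],[],[],[1],[],[],[],[],[],[],[],[],[],[],[],[],[],[],[],[],[],[],[]],
 [[],[0,-1],[],[],[],[],[],[],[],[],[1],[],[],[],[],[],[],[],[],[],[],[],[],[],[],[],[],[],[]],
 [[],[],[],[0,-1],[],[1],[],[],[],[],[],[0,1],[],[],[],[],[],[],[],[],[],[],[],[],[],[],[],[],[]],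
 [[],[],[],[],[1,-1],[],[],[],[],[],[],[],[0,1],[],[],[],[],[],[],[],[],[],[],[],[],[],[],[],[]],
 [[],[],[],[1],[],[0,-1],[],[],[],[],[],[],[],[0,1],[],[],[],[],[],[],[],[],[],[],[],[],[],[],[]],
 [[],[],[],[],[],[],[],[0,-1],[],[],[],[],[-1],[0,1],[],[1],[],[],[],[],[],[],[],[],[],[],[],[],[]],
 [[],[],[],[],[],[],[0,-1],[],[],[],[],[],[0,1],[-1],[],[],[1],[],[],[],[],[],[],[],[],[],[],[],[]],
 [[],[],[],[],[],[],[],[],[0,-1],[],[],[-1,1],[],[],[1],[],[],[],[],[],[],[],[],[],[],[],[],[],[]],
 [[],[],[],[],[],[],[],[],[],[],[],[],[],[0,-1],[0,1],[-1],[],[],[1],[],[],[],[],[],[],[],[],[],[]],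
 [[],[],[],[],[],[],[],[],[],[],[],[],[0,-1],[],[],[],[-1,1],[],[],[1],[],[],[],[],[],[],[],[],[]],
 [[],[],[],[],[],[],[],[],[],[],[],[0,-1],[],[],[-1],[0,1],[],[1],[],[],[],[],[],[],[],[],[],[],[]],
 [[],[],[],[],[],[-1],[],[],[],[],[],[],[],[],[],[],[],[0,-1],[],[1],[],[],[0,1],[],[],[],[],[],[]],
 [[],[],[],[],[-1],[],[],[],[],[],[],[],[],[],[],[],[],[],[1,-1],[],[0,1],[],[],[],[],[],[],[],[]],
 [[],[],[],[-1],[],[],[],[],[],[],[],[],[],[],[],[],[],[1],[],[0,-1],[],[0,1],[],[],[],[],[],[],[]],
 [[],[],[],[],[],[],[],[],[],[-1],[0,1],[],[],[],[],[],[],[],[0,-1],[],[],[],[],[1],[],[],[],[],[]],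
 [[],[],[],[],[],[],[],[],[],[0,1],[-1],[],[],[],[],[],[],[0,-1],[],[],[],[],[],[],[1],[],[],[],[]],
 [[0,-1,1],[],[],[],[],[],[],[],[],[],[],[],[],[],[],[],[],[],[],[0,-1],[],[],[],[],[],[1],[],[],[]],
 [[],[],[],[],[],[],[],[],[],[],[-1],[],[],[],[],[],[],[],[],[],[0,-1],[1],[],[],[],[],[],[],[0,1]],
 [[],[],[],[],[],[],[],[],[],[-1],[],[],[],[],[],[],[],[],[],[],[1],[0,-1],[],[],[],[],[0,1],[],[]],
 [[0,-1],[],[],[],[],[],[],[],[],[],[],[],[],[],[],[],[],[],[],[],[],[],[1,-1],[],[],[],[],[0,1],[]],
 [[],[],[],[],[],[],[],[0,1],[],[],[],[],[],[],[0,-1],[],[1],[],[],[],[],[],[],[],[],[],[],[],[-1]],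
 [[],[],[],[],[],[],[],[],[0,1],[],[],[],[],[],[],[1,-1],[],[],[],[],[],[],[],[],[],[],[],[-1],[]],
 [[],[],[],[],[],[],[0,1],[],[],[],[],[],[],[],[1],[],[0,-1],[],[],[],[],[],[],[],[],[],[-1],[],[]],
 [[0,1],[],[],[],[],[],[],[],[],[],[],[],[],[],[1,-1],[],[],[],[],[],[-1],[],[],[],[],[],[],[],[]],
 [[],[0,1],[],[],[],[],[],[],[],[],[],[],[],[],[],[0,-1],[1],[],[],[],[],[],[-1],[],[],[],[],[],[]],
 [[],[],[0,1],[],[],[],[],[],[],[],[],[],[],[],[],[1],[0,-1],[],[],[],[],[-1],[],[],[],[],[],[],[]],
 [[],[],[],[],[],[],[],[],[],[],[],[],[],[],[0,-1],[],[],[],[],[],[],[],[],[],[-1,1],[],[],[],[]],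
 [[],[],[],[],[],[],[],[],[],[],[],[],[],[],[],[],[0,-1],[],[],[],[],[],[],[0,1],[],[-1],[],[],[]],
 [[],[],[],[],[],[],[],[],[],[],[],[],[],[],[],[0,-1],[],[],[],[],[],[],[],[-1],[],[0,1],[],[],[]]]),
((12,4),[[[],[],[0,1],[],[],[],[],[],[-1],[],[],[],[],[],[],[],[],[],[],[],[],[],[],[],[],[],[],[]],
 [[],[0,1],[],[],[],[],[],[],[],[-1],[],[],[],[],[],[],[],[],[],[],[],[],[],[],[],[],[],[]],
 [[],[],[],[0,1],[-1],[],[],[],[],[],[0,-1],[],[],[],[],[],[],[],[],[],[],[],[],[],[],[],[],[]],
 [[],[],[],[],[],[],[],[],[],[],[],[0,-1],[],[],[],[],[],[-1,2,-1],[],[0,-1,1],[],[],[],[],[],[],[],[]],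
 [[],[],[],[-1],[0,1],[],[],[],[],[],[],[],[0,-1],[],[],[],[],[],[],[],[],[],[],[],[],[],[],[]],
 [[],[],[],[],[],[],[0,1],[],[],[],[],[1],[0,-1],[],[-1],[],[],[],[],[],[],[],[],[],[],[],[],[]],
 [[],[],[],[],[],[0,1],[],[],[],[],[],[0,-1],[1],[],[],[-1],[],[],[],[],[],[],[],[],[],[],[],[]],
 [[],[],[],[],[],[],[],[0,1],[],[],[1,-1],[],[],[-1],[],[],[],[],[],[],[],[],[],[],[],[],[],[]],
 [[],[],[],[],[],[],[],[],[],[],[],[],[0,1],[0,-1],[1],[],[],[-1],[],[],[],[],[],[],[],[],[],[]],
 [[],[],[],[],[],[],[],[],[],[],[],[0,1],[],[],[],[1,-1],[],[],[-1],[],[],[],[],[],[],[],[],[]],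
 [[],[],[],[],[],[],[],[],[],[],[0,1],[],[],[1],[0,-1],[],[-1],[],[],[],[],[],[],[],[],[],[],[]],
 [[],[],[],[],[1],[],[],[],[],[],[],[],[],[],[],[],[0,1],[],[-1],[],[],[0,-1],[],[],[],[],[],[]],
 [[],[],[],[1],[],[],[],[],[],[],[],[],[],[],[],[],[-1],[],[0,1],[],[0,-1],[],[],[],[],[],[],[]],
 [[],[],[],[],[],[],[],[],[1],[0,-1],[],[],[],[],[],[],[],[0,1],[],[],[],[],[-1],[],[],[],[],[]],
 [[],[],[],[],[],[],[],[],[0,-1],[1],[],[],[],[],[],[],[0,1],[],[],[],[],[],[],[-1],[],[],[],[]],
 [[0,1,-1],[],[],[],[],[],[],[],[],[],[],[],[],[],[],[],[],[],[0,1],[],[],[],[],[],[-1],[],[],[]],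
 [[],[],[],[],[],[],[],[],[],[1],[],[],[],[],[],[],[],[],[],[0,1],[-1],[],[],[],[],[],[],[0,-1]],
 [[],[],[],[],[],[],[],[],[1],[],[],[],[],[],[],[],[],[],[],[-1],[0,1],[],[],[],[],[0,-1],[],[]],
 [[0,1],[],[],[],[],[],[],[],[],[],[],[],[],[],[],[],[],[],[],[],[],[-1,1],[],[],[],[],[0,-1],[]],
 [[],[],[],[],[],[],[0,-1],[],[],[],[],[],[],[0,1],[],[-1],[],[],[],[],[],[],[],[],[],[],[],[1]],
 [[],[],[],[],[],[],[],[0,-1],[],[],[],[],[],[],[-1,1],[],[],[],[],[],[],[],[],[],[],[],[1],[]],
 [[],[],[],[],[],[0,-1],[],[],[],[],[],[],[],[-1],[],[0,1],[],[],[],[],[],[],[],[],[],[1],[],[]],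
 [[0,-1],[],[],[],[],[],[],[],[],[],[],[],[],[-1,1],[],[],[],[],[],[1],[],[],[],[],[],[],[],[]],
 [[],[0,-1],[],[],[],[],[],[],[],[],[],[],[],[],[0,1],[-1],[],[],[],[],[],[1],[],[],[],[],[],[]],
 [[],[],[0,-1],[],[],[],[],[],[],[],[],[],[],[],[-1],[0,1],[],[],[],[],[1],[],[],[],[],[],[],[]],
 [[],[],[],[],[],[],[],[],[],[],[],[],[],[0,1],[],[],[],[],[],[],[],[],[],[1,-1],[],[],[],[]],
 [[],[],[],[],[],[],[],[],[],[],[],[],[],[],[],[0,1],[],[],[],[],[],[],[0,-1],[],[1],[],[],[]],
 [[],[],[],[],[],[],[],[],[],[],[],[],[],[],[0,1],[],[],[],[],[],[],[],[1],[],[0,-1],[],[],[]]]),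
((20,26),[[[],[],[0,-1],[],[],[],[],[],[1],[],[],[],[],[],[],[],[],[],[],[],[],[],[],[],[],[],[]],
 [[],[0,-1],[],[],[],[],[],[],[],[1],[],[],[],[],[],[],[],[],[],[],[],[],[],[],[],[],[]],
 [[],[],[],[0,-1],[1],[],[],[],[],[],[0,1],[],[],[],[],[],[],[],[],[],[],[],[],[],[],[],[]],
 [[],[],[],[],[],[],[],[],[],[],[],[0,1],[],[],[],[],[],[1,-2,1],[],[0,1,-1],[],[],[],[],[],[],[]],
 [[],[],[],[1],[0,-1],[],[],[],[],[],[],[],[0,1],[],[],[],[],[],[],[],[],[],[],[],[],[],[]],
 [[],[],[],[],[],[],[0,-1],[],[],[],[],[-1],[0,1],[],[1],[],[],[],[],[],[],[],[],[],[],[],[]],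
 [[],[],[],[],[],[0,-1],[],[],[],[],[],[0,1],[-1],[],[],[1],[],[],[],[],[],[],[],[],[],[],[]],
 [[],[],[],[],[],[],[],[0,-1],[],[],[-1,1],[],[],[1],[],[],[],[],[],[],[],[],[],[],[],[],[]],
 [[],[],[],[],[],[],[],[],[],[],[],[],[0,-1],[0,1],[-1],[],[],[1],[],[],[],[],[],[],[],[],[]],
 [[],[],[],[],[],[],[],[],[],[],[],[0,-1],[],[],[],[-1,1],[],[],[1],[],[],[],[],[],[],[],[]],
 [[],[],[],[],[],[],[],[],[],[],[0,-1],[],[],[-1],[0,1],[],[1],[],[],[],[],[],[],[],[],[],[]],
 [[],[],[],[],[-1],[],[],[],[],[],[],[],[],[],[],[],[0,-1],[],[1],[],[],[0,1],[],[],[],[],[]],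
 [[],[],[],[-1],[],[],[],[],[],[],[],[],[],[],[],[],[1],[],[0,-1],[],[0,1],[],[],[],[],[],[]],
 [[],[],[],[],[],[],[],[],[-1],[0,1],[],[],[],[],[],[],[],[0,-1],[],[],[],[],[1],[],[],[],[]],
 [[],[],[],[],[],[],[],[],[0,1],[-1],[],[],[],[],[],[],[0,-1],[],[],[],[],[],[],[1],[],[],[]],
 [[0,-1,1],[],[],[],[],[],[],[],[],[],[],[],[],[],[],[],[],[],[0,-1],[],[],[],[],[],[1],[],[]],
 [[],[],[],[],[],[],[],[],[],[-1],[],[],[],[],[],[],[],[],[],[0,-1],[1],[],[],[],[],[],[0,1]],
 [[],[],[],[],[],[],[],[],[-1],[],[],[],[],[],[],[],[],[],[],[1],[0,-1],[],[],[],[],[0,1],[]],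
 [[0,-1],[],[],[],[],[],[],[0,0,1],[],[],[],[],[],[],[0,1,-1],[],[],[],[],[],[],[1,-1],[],[],[],[],[]],
 [[],[],[],[],[],[],[0,1],[],[],[],[],[],[],[0,-1],[],[1],[],[],[],[],[],[],[],[],[],[],[-1]],
 [[],[],[],[],[],[0,1],[],[],[],[],[],[],[],[1],[],[0,-1],[],[],[],[],[],[],[],[],[],[-1],[]],
 [[0,1],[],[],[],[],[],[],[],[],[],[],[],[],[1,-1],[],[],[],[],[],[-1],[],[],[],[],[],[],[]],
 [[],[0,1],[],[],[],[],[],[],[],[],[],[],[],[],[0,-1],[1],[],[],[],[],[],[-1],[],[],[],[],[]],
 [[],[],[0,1],[],[],[],[],[],[],[],[],[],[],[],[1],[0,-1],[],[],[],[],[-1],[],[],[],[],[],[]],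
 [[],[],[],[],[],[],[],[],[],[],[],[],[],[0,-1],[],[],[],[],[],[],[],[],[],[-1,1],[],[],[]],
 [[],[],[],[],[],[],[],[],[],[],[],[],[],[],[],[0,-1],[],[],[],[],[],[],[0,1],[],[-1],[],[]],
 [[],[],[],[],[],[],[],[],[],[],[],[],[],[],[0,-1],[],[],[],[],[],[],[],[-1],[],[0,1],[],[]]]),
((0,8),[[[],[0,-1],[],[],[],[],[],[],[1],[],[],[],[],[],[],[],[],[],[],[],[],[],[],[],[],[]],
 [[],[],[],[0,-1],[1],[],[],[],[],[0,1],[],[],[],[],[],[],[],[],[],[],[],[],[],[],[],[]],
 [[],[],[],[],[],[],[],[],[],[],[0,1],[],[],[],[],[],[1,-2,1],[],[0,1,-1],[],[],[],[],[],[],[]],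
 [[],[],[],[1],[0,-1],[],[],[],[],[],[],[0,1],[],[],[],[],[],[],[],[],[],[],[],[],[],[]],
 [[],[],[],[],[],[],[0,-1],[],[],[],[-1],[0,1],[],[1],[],[],[],[],[],[],[],[],[],[],[],[]],
 [[],[],[],[],[],[0,-1],[],[],[],[],[0,1],[-1],[],[],[1],[],[],[],[],[],[],[],[],[],[],[]],
 [[],[],[],[],[],[],[],[0,-1],[],[-1,1],[],[],[1],[],[],[],[],[],[],[],[],[],[],[],[],[]],
 [[],[],[],[],[],[],[],[],[],[],[],[0,-1],[0,1],[-1],[],[],[1],[],[],[],[],[],[],[],[],[]],
 [[],[],[],[],[],[],[],[],[],[],[0,-1],[],[],[],[-1,1],[],[],[1],[],[],[],[],[],[],[],[]],
 [[],[],[],[],[],[],[],[],[],[0,-1],[],[],[-1],[0,1],[],[1],[],[],[],[],[],[],[],[],[],[]],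
 [[],[],[],[],[-1],[],[],[],[],[],[],[],[],[],[],[0,-1],[],[1],[],[],[0,1],[],[],[],[],[]],
 [[],[],[],[-1],[],[],[],[],[],[],[],[],[],[],[],[1],[],[0,-1],[],[0,1],[],[],[],[],[],[]],
 [[],[],[0,-1],[],[],[],[],[],[0,1],[],[],[],[],[],[],[],[0,-1],[],[],[],[],[1],[],[],[],[]],
 [[],[],[0,0,1],[],[],[],[],[],[-1],[],[],[],[],[],[],[0,-1],[],[],[],[],[],[],[1],[],[],[]],
 [[0,-1,1],[],[],[],[],[],[],[],[],[],[],[],[],[],[],[],[],[0,-1],[],[],[],[],[],[1],[],[]],
 [[],[],[],[],[],[],[],[],[-1],[],[],[],[],[],[],[],[],[],[0,-1],[1],[],[],[],[],[],[0,1]],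
 [[],[],[0,-1],[],[],[],[],[],[],[],[],[],[],[],[],[],[],[],[1],[0,-1],[],[],[],[],[0,1],[]],
 [[0,-1],[],[],[],[],[],[],[0,0,1],[],[],[],[],[],[0,1,-1],[],[],[],[],[],[],[1,-1],[],[],[],[],[]],
 [[],[],[],[],[],[],[0,1],[],[],[],[],[],[0,-1],[],[1],[],[],[],[],[],[],[],[],[],[],[-1]],
 [[],[],[],[],[],[0,1],[],[],[],[],[],[],[1],[],[0,-1],[],[],[],[],[],[],[],[],[],[-1],[]],
 [[0,1],[],[],[],[],[],[],[],[],[],[],[],[1,-1],[],[],[],[],[],[-1],[],[],[],[],[],[],[]],
 [[],[0,1],[],[],[],[],[],[],[],[],[],[],[],[0,-1],[1],[],[],[],[],[],[-1],[],[],[],[],[]],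
 [[],[],[0,1],[],[],[],[],[],[],[],[],[],[],[1],[0,-1],[],[],[],[],[-1],[],[],[],[],[],[]],
 [[],[],[],[],[],[],[],[],[],[],[],[],[0,-1],[],[],[],[],[],[],[],[],[],[-1,1],[],[],[]],
 [[],[],[],[],[],[],[],[],[],[],[],[],[],[],[0,-1],[],[],[],[],[],[],[0,1],[],[-1],[],[]],
 [[],[],[],[],[],[],[],[],[],[],[],[],[],[0,-1],[],[],[],[],[],[],[],[-1],[],[0,1],[],[]]]),
((0,8),[[[],[],[],[0,-1],[1],[],[],[],[0,1],[],[],[],[],[],[],[],[],[],[],[],[],[],[],[],[]],
 [[],[],[],[],[],[],[],[],[],[0,1],[],[],[],[],[],[1,-2,1],[],[0,1,-1],[],[],[],[],[],[],[]],
 [[],[],[],[1],[0,-1],[],[],[],[],[],[0,1],[],[],[],[],[],[],[],[],[],[],[],[],[],[]],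
 [[],[],[],[],[],[],[0,-1],[],[],[-1],[0,1],[],[1],[],[],[],[],[],[],[],[],[],[],[],[]],
 [[],[],[],[],[],[0,-1],[],[],[],[0,1],[-1],[],[],[1],[],[],[],[],[],[],[],[],[],[],[]],
 [[],[],[],[],[],[],[],[0,-1],[-1,1],[],[],[1],[],[],[],[],[],[],[],[],[],[],[],[],[]],
 [[],[],[],[],[],[],[],[],[],[],[0,-1],[0,1],[-1],[],[],[1],[],[],[],[],[],[],[],[],[]],
 [[],[],[],[],[],[],[],[],[],[0,-1],[],[],[],[-1,1],[],[],[1],[],[],[],[],[],[],[],[]],
 [[],[],[],[],[],[],[],[],[0,-1],[],[],[-1],[0,1],[],[1],[],[],[],[],[],[],[],[],[],[]],
 [[],[],[],[],[-1],[],[],[],[],[],[],[],[],[],[0,-1],[],[1],[],[],[0,1],[],[],[],[],[]],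
 [[],[],[],[-1],[],[],[],[],[],[],[],[],[],[],[1],[],[0,-1],[],[0,1],[],[],[],[],[],[]],
 [[],[0,0,1],[0,-1],[],[],[],[],[],[],[],[],[],[],[],[],[0,-1],[],[],[],[],[1],[],[],[],[]],
 [[],[0,-1],[0,0,1],[],[],[],[],[],[],[],[],[],[],[],[0,-1],[],[],[],[],[],[],[1],[],[],[]],
 [[0,-1,1],[],[],[],[],[],[],[],[],[],[],[],[],[],[],[],[0,-1],[],[],[],[],[],[1],[],[]],
 [[],[0,-1],[],[],[],[],[],[],[],[],[],[],[],[],[],[],[],[0,-1],[1],[],[],[],[],[],[0,1]],
 [[],[],[0,-1],[],[],[],[],[],[],[],[],[],[],[],[],[],[],[1],[0,-1],[],[],[],[],[0,1],[]],
 [[0,-1],[],[],[],[],[],[],[0,0,1],[],[],[],[],[0,1,-1],[],[],[],[],[],[],[1,-1],[],[],[],[],[]],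
 [[],[],[],[],[],[],[0,1],[],[],[],[],[0,-1],[],[1],[],[],[],[],[],[],[],[],[],[],[-1]],
 [[],[],[],[],[],[0,1],[],[],[],[],[],[1],[],[0,-1],[],[],[],[],[],[],[],[],[],[-1],[]],
 [[0,1],[],[],[],[],[],[],[],[],[],[],[1,-1],[],[],[],[],[],[-1],[],[],[],[],[],[],[]],
 [[],[0,1],[],[],[],[],[],[],[],[],[],[],[0,-1],[1],[],[],[],[],[],[-1],[],[],[],[],[]],
 [[],[],[0,1],[],[],[],[],[],[],[],[],[],[1],[0,-1],[],[],[],[],[-1],[],[],[],[],[],[]],
 [[],[],[],[],[],[],[],[],[],[],[],[0,-1],[],[],[],[],[],[],[],[],[],[-1,1],[],[],[]],
 [[],[],[],[],[],[],[],[],[],[],[],[],[],[0,-1],[],[],[],[],[],[],[0,1],[],[-1],[],[]],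
 [[],[],[],[],[],[],[],[],[],[],[],[],[0,-1],[],[],[],[],[],[],[],[-1],[],[0,1],[],[]]]),
((12,21),[[[],[],[],[0,-1],[1],[],[],[],[0,1],[],[],[],[],[],[],[],[],[],[],[],[],[],[],[]],
 [[],[],[],[],[],[],[],[],[],[0,1],[],[],[],[],[],[1,-2,1],[],[0,1,-1],[],[],[],[],[],[]],
 [[],[],[],[1],[0,-1],[],[],[],[],[],[0,1],[],[],[],[],[],[],[],[],[],[],[],[],[]],
 [[],[],[],[],[],[],[0,-1],[],[],[-1],[0,1],[],[1],[],[],[],[],[],[],[],[],[],[],[]],
 [[],[],[],[],[],[0,-1],[],[],[],[0,1],[-1],[],[],[1],[],[],[],[],[],[],[],[],[],[]],
 [[],[],[],[],[],[],[],[0,-1],[-1,1],[],[],[1],[],[],[],[],[],[],[],[],[],[],[],[]],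
 [[],[],[],[],[],[],[],[],[],[],[0,-1],[0,1],[-1],[],[],[1],[],[],[],[],[],[],[],[]],
 [[],[],[],[],[],[],[],[],[],[0,-1],[],[],[],[-1,1],[],[],[1],[],[],[],[],[],[],[]],
 [[],[],[],[],[],[],[],[],[0,-1],[],[],[-1],[0,1],[],[1],[],[],[],[],[],[],[],[],[]],
 [[],[],[],[],[-1],[],[],[],[],[],[],[],[],[],[0,-1],[],[1],[],[],[0,1],[],[],[],[]],
 [[],[],[],[-1],[],[],[],[],[],[],[],[],[],[],[1],[],[0,-1],[],[0,1],[],[],[],[],[]],
 [[],[0,0,1],[0,-1],[],[],[],[],[],[],[],[],[],[],[],[],[0,-1],[],[],[],[],[1],[],[],[]],
 [[0,-1,1],[],[],[],[],[],[],[],[],[],[],[],[],[],[],[],[0,-1],[],[],[],[],[1],[],[]],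
 [[],[0,-1],[],[],[],[],[],[],[],[],[],[],[],[],[],[],[],[0,-1],[1],[],[],[],[],[0,1]],
 [[],[],[0,-1],[],[],[],[],[],[],[],[],[],[],[],[],[],[],[1],[0,-1],[],[],[],[0,1],[]],
 [[0,-1],[],[],[],[],[],[],[0,0,1],[],[],[],[],[0,1,-1],[],[],[],[],[],[],[1,-1],[],[],[],[]],
 [[],[],[],[],[],[],[0,1],[],[],[],[],[0,-1],[],[1],[],[],[],[],[],[],[],[],[],[-1]],
 [[],[],[],[],[],[0,1],[],[],[],[],[],[1],[],[0,-1],[],[],[],[],[],[],[],[],[-1],[]],
 [[0,1],[],[],[],[],[],[],[],[],[],[],[1,-1],[],[],[],[],[],[-1],[],[],[],[],[],[]],
 [[],[0,1],[],[],[],[],[],[],[],[],[],[],[0,-1],[1],[],[],[],[],[],[-1],[],[],[],[]],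
 [[],[],[0,1],[],[],[],[],[],[],[],[],[],[1],[0,-1],[],[],[],[],[-1],[],[],[],[],[]],
 [[],[0,-1,1],[0,0,1,-1],[],[],[],[],[],[],[],[],[0,-1],[],[],[0,-1,1],[],[],[],[],[],[],[],[],[]],
 [[],[],[],[],[],[],[],[],[],[],[],[],[],[0,-1],[],[],[],[],[],[],[0,1],[-1],[],[]],
 [[],[],[],[],[],[],[],[],[],[],[],[],[0,-1],[],[],[],[],[],[],[],[-1],[0,1],[],[]]]),
((16,23),[[[],[],[],[0,1],[-1],[],[],[],[0,-1],[],[],[],[],[],[],[],[],[],[],[],[],[],[]],
 [[],[],[],[],[],[],[],[],[],[0,-1],[],[],[],[],[],[-1,2,-1],[],[0,-1,1],[],[],[],[],[]],
 [[],[],[],[-1],[0,1],[],[],[],[],[],[0,-1],[],[],[],[],[],[],[],[],[],[],[],[]],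
 [[],[],[],[],[],[],[0,1],[],[],[1],[0,-1],[],[-1],[],[],[],[],[],[],[],[],[],[]],
 [[],[],[],[],[],[0,1],[],[],[],[0,-1],[1],[],[],[-1],[],[],[],[],[],[],[],[],[]],
 [[],[],[],[],[],[],[],[0,1],[1,-1],[],[],[-1],[],[],[],[],[],[],[],[],[],[],[]],
 [[],[],[],[],[],[],[],[],[],[],[0,1],[0,-1],[1],[],[],[-1],[],[],[],[],[],[],[]],
 [[],[],[],[],[],[],[],[],[],[0,1],[],[],[],[1,-1],[],[],[-1],[],[],[],[],[],[]],
 [[],[],[],[],[],[],[],[],[0,1],[],[],[1],[0,-1],[],[-1],[],[],[],[],[],[],[],[]],
 [[],[],[],[],[1],[],[],[],[],[],[],[],[],[],[0,1],[],[-1],[],[],[0,-1],[],[],[]],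
 [[],[],[],[1],[],[],[],[],[],[],[],[],[],[],[-1],[],[0,1],[],[0,-1],[],[],[],[]],
 [[],[0,0,-1],[0,1],[],[],[],[],[],[],[],[],[],[],[],[],[0,1],[],[],[],[],[-1],[],[]],
 [[0,1,-1],[],[],[],[],[],[],[],[],[],[],[],[],[],[],[],[0,1],[],[],[],[],[-1],[]],
 [[],[0,1],[],[],[],[],[0,0,-1],[],[],[],[],[0,0,1],[],[0,-1],[],[],[],[0,1],[-1],[],[],[],[]],
 [[],[],[0,1],[],[],[],[],[],[],[],[],[],[],[],[],[],[],[-1],[0,1],[],[],[],[0,-1]],
 [[0,1],[],[],[],[],[],[],[0,0,-1],[],[],[],[],[0,-1,1],[],[],[],[],[],[],[-1,1],[],[],[]],
 [[],[],[],[],[],[0,-1],[],[],[],[],[],[-1],[],[0,1],[],[],[],[],[],[],[],[],[1]],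
 [[0,-1],[],[],[],[],[],[],[],[],[],[],[-1,1],[],[],[],[],[],[1],[],[],[],[],[]],
 [[],[0,-1],[],[],[],[],[],[],[],[],[],[],[0,1],[-1],[],[],[],[],[],[1],[],[],[]],
 [[],[],[0,-1],[],[],[],[],[],[],[],[],[],[-1],[0,1],[],[],[],[],[1],[],[],[],[]],
 [[],[0,1,-1],[0,0,-1,1],[],[],[],[],[],[],[],[],[0,1],[],[],[0,1,-1],[],[],[],[],[],[],[],[]],
 [[],[],[],[],[],[],[],[],[],[],[],[],[],[0,1],[],[],[],[],[],[],[0,-1],[1],[]],
 [[],[],[],[],[],[],[],[],[],[],[],[],[0,1],[],[],[],[],[],[],[],[1],[0,-1],[]]]),
((16,22),[[[],[],[],[0,-1],[1],[],[],[],[0,1],[],[],[],[],[],[],[],[],[],[],[],[],[]],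
 [[],[],[],[],[],[],[],[],[],[0,1],[],[],[],[],[],[1,-2,1],[],[0,1,-1],[],[],[],[]],
 [[],[],[],[1],[0,-1],[],[],[],[],[],[0,1],[],[],[],[],[],[],[],[],[],[],[]],
 [[],[],[],[],[],[],[0,-1],[],[],[-1],[0,1],[],[1],[],[],[],[],[],[],[],[],[]],
 [[],[],[],[],[],[0,-1],[],[],[],[0,1],[-1],[],[],[1],[],[],[],[],[],[],[],[]],
 [[],[],[],[],[],[],[],[0,-1],[-1,1],[],[],[1],[],[],[],[],[],[],[],[],[],[]],
 [[],[],[],[],[],[],[],[],[],[],[0,-1],[0,1],[-1],[],[],[1],[],[],[],[],[],[]],
 [[],[],[],[],[],[],[],[],[],[0,-1],[],[],[],[-1,1],[],[],[1],[],[],[],[],[]],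
 [[],[],[],[],[],[],[],[],[0,-1],[],[],[-1],[0,1],[],[1],[],[],[],[],[],[],[]],
 [[],[],[],[],[-1],[],[],[],[],[],[],[],[],[],[0,-1],[],[1],[],[],[0,1],[],[]],
 [[],[],[],[-1],[],[],[],[],[],[],[],[],[],[],[1],[],[0,-1],[],[0,1],[],[],[]],
 [[],[0,0,1],[0,-1],[],[],[],[],[],[],[],[],[],[],[],[],[0,-1],[],[],[],[],[1],[]],
 [[0,-1,1],[],[],[],[],[],[],[],[],[],[],[],[],[],[],[],[0,-1],[],[],[],[],[1]],
 [[],[0,-1],[],[],[],[],[0,0,1],[],[],[],[],[0,0,-1],[],[0,1],[],[],[],[0,-1],[1],[],[],[]],
 [[],[],[0,-1],[],[],[0,0,1],[],[],[],[],[],[0,1],[],[0,0,-1],[],[],[],[1],[0,-1],[],[],[]],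
 [[0,-1],[],[],[],[],[],[],[0,0,1],[],[],[],[],[0,1,-1],[],[],[],[],[],[],[1,-1],[],[]],
 [[0,1],[],[],[],[],[],[],[],[],[],[],[1,-1],[],[],[],[],[],[-1],[],[],[],[]],
 [[],[0,1],[],[],[],[],[],[],[],[],[],[],[0,-1],[1],[],[],[],[],[],[-1],[],[]],
 [[],[],[0,1],[],[],[],[],[],[],[],[],[],[1],[0,-1],[],[],[],[],[-1],[],[],[]],
 [[],[0,-1,1],[0,0,1,-1],[],[],[],[],[],[],[],[],[0,-1],[],[],[0,-1,1],[],[],[],[],[],[],[]],
 [[],[],[],[],[],[],[],[],[],[],[],[],[],[0,-1],[],[],[],[],[],[],[0,1],[-1]],
 [[],[],[],[],[],[],[],[],[],[],[],[],[0,-1],[],[],[],[],[],[],[],[-1],[0,1]]]),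
((0,4),[[[],[],[],[],[],[],[],[],[0,1],[],[],[],[],[],[1,-2,1],[],[0,1,-1],[],[],[],[]],
 [[],[],[],[1,0,-1],[],[],[],[0,0,1],[],[0,1],[],[],[],[],[],[],[],[],[],[],[]],
 [[],[],[],[],[],[0,-1],[],[],[-1],[0,1],[],[1],[],[],[],[],[],[],[],[],[]],
 [[],[],[],[],[0,-1],[],[],[],[0,1],[-1],[],[],[1],[],[],[],[],[],[],[],[]],
 [[],[],[],[],[],[],[0,-1],[-1,1],[],[],[1],[],[],[],[],[],[],[],[],[],[]],
 [[],[],[],[],[],[],[],[],[],[0,-1],[0,1],[-1],[],[],[1],[],[],[],[],[],[]],
 [[],[],[],[],[],[],[],[],[0,-1],[],[],[],[-1,1],[],[],[1],[],[],[],[],[]],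
 [[],[],[],[],[],[],[],[0,-1],[],[],[-1],[0,1],[],[1],[],[],[],[],[],[],[]],
 [[],[],[],[0,-1],[],[],[],[0,1],[],[],[],[],[],[0,-1],[],[1],[],[],[0,1],[],[]],
 [[],[],[],[-1],[],[],[],[],[],[],[],[],[],[1],[],[0,-1],[],[0,1],[],[],[]],
 [[],[0,0,1],[0,-1],[],[],[],[],[],[],[],[],[],[],[],[0,-1],[],[],[],[],[1],[]],
 [[0,-1,1],[],[],[],[],[],[],[],[],[],[],[],[],[],[],[0,-1],[],[],[],[],[1]],
 [[],[0,-1],[],[],[],[0,0,1],[],[],[],[],[0,0,-1],[],[0,1],[],[],[],[0,-1],[1],[],[],[]],
 [[],[],[0,-1],[],[0,0,1],[],[],[],[],[],[0,1],[],[0,0,-1],[],[],[],[1],[0,-1],[],[],[]],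
 [[0,-1],[],[],[],[],[],[0,0,1],[],[],[],[],[0,1,-1],[],[],[],[],[],[],[1,-1],[],[]],
 [[0,1],[],[],[],[],[],[],[],[],[],[1,-1],[],[],[],[],[],[-1],[],[],[],[]],
 [[],[0,1],[],[],[],[],[],[],[],[],[],[0,-1],[1],[],[],[],[],[],[-1],[],[]],
 [[],[],[0,1],[],[],[],[],[],[],[],[],[1],[0,-1],[],[],[],[],[-1],[],[],[]],
 [[],[0,-1,1],[0,0,1,-1],[],[],[],[],[],[],[],[0,-1],[],[],[0,-1,1],[],[],[],[],[],[],[]],
 [[],[],[],[],[],[],[],[],[],[],[],[],[0,-1],[],[],[],[],[],[],[0,1],[-1]],
 [[],[],[],[],[],[],[],[],[],[],[],[0,-1],[],[],[],[],[],[],[],[-1],[0,1]]]),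
((11,20),[[[],[],[],[],[],[],[],[],[0,1],[],[],[],[],[],[1,-2,1],[],[0,1,-1],[],[],[]],
 [[],[],[],[1,0,-1],[],[],[],[0,0,1],[],[0,1],[],[],[],[],[],[],[],[],[],[]],
 [[],[],[],[],[],[0,-1],[],[],[-1],[0,1],[],[1],[],[],[],[],[],[],[],[]],
 [[],[],[],[],[0,-1],[],[],[],[0,1],[-1],[],[],[1],[],[],[],[],[],[],[]],
 [[],[],[],[],[],[],[0,-1],[-1,1],[],[],[1],[],[],[],[],[],[],[],[],[]],
 [[],[],[],[],[],[],[],[],[],[0,-1],[0,1],[-1],[],[],[1],[],[],[],[],[]],
 [[],[],[],[],[],[],[],[],[0,-1],[],[],[],[-1,1],[],[],[1],[],[],[],[]],
 [[],[],[],[],[],[],[],[0,-1],[],[],[-1],[0,1],[],[1],[],[],[],[],[],[]],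
 [[],[],[],[0,-1],[],[],[],[0,1],[],[],[],[],[],[0,-1],[],[1],[],[],[0,1],[]],
 [[],[],[],[-1],[],[],[],[],[],[],[],[],[],[1],[],[0,-1],[],[0,1],[],[]],
 [[],[0,0,1],[0,-1],[],[],[],[],[],[],[],[],[],[],[],[0,-1],[],[],[],[],[1]],
 [[],[0,-1],[],[],[],[0,0,1],[],[],[],[],[0,0,-1],[],[0,1],[],[],[],[0,-1],[1],[],[]],
 [[],[],[0,-1],[],[0,0,1],[],[],[],[],[],[0,1],[],[0,0,-1],[],[],[],[1],[0,-1],[],[]],
 [[0,-1],[],[],[],[],[],[0,0,1],[],[],[],[],[0,1,-1],[],[],[],[],[],[],[1,-1],[]],
 [[0,1],[],[],[],[],[],[],[],[],[],[1,-1],[],[],[],[],[],[-1],[],[],[]],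
 [[],[0,1],[],[],[],[],[],[],[],[],[],[0,-1],[1],[],[],[],[],[],[-1],[]],
 [[],[],[0,1],[],[],[],[],[],[],[],[],[1],[0,-1],[],[],[],[],[-1],[],[]],
 [[],[0,-1,1],[0,0,1,-1],[],[],[],[],[],[],[],[0,-1],[],[],[0,-1,1],[],[],[],[],[],[]],
 [[0,-1,1],[],[],[],[],[],[],[],[],[],[],[],[0,-1],[],[],[0,-1],[],[],[],[0,1]],
 [[0,0,1,-1],[],[],[],[],[],[],[],[],[],[],[0,-1],[],[],[],[0,0,1],[],[],[],[-1]]]),
((5,14),[[[],[],[],[],[],[],[],[],[0,1],[0,1,-2,1],[0,-1,2,-1],[1,-2,1],[],[],[],[0,1,-1],[],[],[]],
 [[],[],[],[1,0,-1],[],[],[],[0,0,1],[],[0,1],[],[],[],[],[],[],[],[],[]],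
 [[],[],[],[],[],[0,-1],[],[],[-1],[0,1],[],[1],[],[],[],[],[],[],[]],
 [[],[],[],[],[0,-1],[],[],[],[0,1],[-1],[],[],[1],[],[],[],[],[],[]],
 [[],[],[],[],[],[],[0,-1],[-1,1],[],[],[1],[],[],[],[],[],[],[],[]],
 [[],[],[],[],[],[],[],[],[0,-1],[],[],[],[-1,1],[],[1],[],[],[],[]],
 [[],[],[],[],[],[],[],[0,-1],[],[],[-1],[0,1],[],[1],[],[],[],[],[]],
 [[],[],[],[0,-1],[],[],[],[0,1],[],[],[],[],[],[0,-1],[1],[],[],[0,1],[]],
 [[],[],[],[-1],[],[],[],[],[],[],[],[],[],[1],[0,-1],[],[0,1],[],[]],
 [[],[0,0,1],[0,-1],[],[],[],[],[],[],[0,0,-1],[0,0,1],[0,-1],[],[],[],[],[],[],[1]],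
 [[],[0,-1],[],[],[],[0,0,1],[],[],[],[],[0,0,-1],[],[0,1],[],[],[0,-1],[1],[],[]],
 [[],[],[0,-1],[],[0,0,1],[],[],[],[],[],[0,1],[],[0,0,-1],[],[],[1],[0,-1],[],[]],
 [[0,-1],[],[],[],[],[],[0,0,1],[],[],[],[],[0,1,-1],[],[],[],[],[],[1,-1],[]],
 [[0,1],[],[],[],[],[],[],[],[],[],[1,-1],[],[],[],[],[-1],[],[],[]],
 [[],[0,1],[],[],[],[],[],[],[],[],[],[0,-1],[1],[],[],[],[],[-1],[]],
 [[],[],[0,1],[],[],[],[],[],[],[],[],[1],[0,-1],[],[],[],[-1],[],[]],
 [[],[0,-1,1],[0,0,1,-1],[],[],[],[],[],[],[],[0,-1],[],[],[0,-1,1],[],[],[],[],[]],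
 [[0,-1,1],[],[],[],[],[],[],[],[],[],[],[],[0,-1],[],[0,-1],[],[],[],[0,1]],
 [[0,0,1,-1],[],[],[],[],[],[],[],[],[],[],[0,-1],[],[],[0,0,1],[],[],[],[-1]]]),
((8,3),[[[],[],[],[],[],[],[],[0,-1],[0,-1,2,-1],[0,1,-2,1],[-1,2,-1],[],[],[],[0,-1,1],[],[],[]],
 [[],[],[],[],[],[],[0,0,-1],[],[0,-1],[],[],[],[-1,0,1],[0,1,0,-1],[],[0,-1,0,1],[],[]],
 [[],[],[],[],[0,1],[],[],[1],[0,-1],[],[-1],[],[],[],[],[],[],[]],
 [[],[],[],[0,1],[],[],[],[0,-1],[1],[],[],[-1],[],[],[],[],[],[]],
 [[],[],[],[],[],[0,1],[1,-1],[],[],[-1],[],[],[],[],[],[],[],[]],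
 [[],[],[],[],[],[],[],[0,1],[],[],[],[1,-1],[],[-1],[],[],[],[]],
 [[],[],[],[],[],[],[0,1],[],[],[1],[0,-1],[],[-1],[],[],[],[],[]],
 [[],[],[],[],[],[],[0,-1],[],[],[],[],[],[0,2],[-1,0,-1],[],[0,0,1],[0,-1],[]],
 [[],[0,0,-1],[0,1],[],[],[],[],[],[0,0,1],[0,0,-1],[0,1],[],[],[],[],[],[],[-1]],
 [[],[0,1],[],[],[0,0,-1],[],[],[],[],[0,0,1],[],[0,-1],[],[],[0,1],[-1],[],[]],
 [[],[],[0,1],[0,0,-1],[],[],[],[],[],[0,-1],[],[0,0,1],[],[],[-1],[0,1],[],[]],
 [[0,1],[],[],[],[],[0,0,-1],[],[],[],[],[0,-1,1],[],[],[],[],[],[-1,1],[]],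
 [[0,-1],[],[],[],[],[],[],[],[],[-1,1],[],[],[],[],[1],[],[],[]],
 [[],[0,-1],[],[],[],[],[],[],[],[],[0,1],[-1],[],[],[],[],[1],[]],
 [[],[],[0,-1],[],[],[],[],[],[],[],[-1],[0,1],[],[],[],[1],[],[]],
 [[],[0,1,-1],[0,0,-1,1],[],[],[],[],[],[],[0,1],[],[],[0,1,-1],[],[],[],[],[]],
 [[0,1,-1],[],[],[],[],[],[],[],[],[],[],[0,1],[],[0,1],[],[],[],[0,-1]],
 [[0,0,-1,1],[],[],[],[],[],[],[],[],[],[0,1],[],[],[0,0,-1],[],[],[],[1]]]),
((12,14),[[[0,0,1,-1],[],[],[],[],[],[],[0,1],[0,1,-2,1],[],[1,-2,1],[],[],[],[],[],[]],
 [[],[],[],[],[],[],[0,0,1],[],[0,1],[],[],[],[1,0,-1],[0,-1,0,1],[0,1,0,-1],[],[]],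
 [[],[],[],[],[0,-1],[],[],[-1],[0,1],[],[1],[],[],[],[],[],[]],
 [[],[],[],[0,-1],[],[],[],[0,1],[-1],[],[],[1],[],[],[],[],[]],
 [[],[],[],[],[],[0,-1],[-1,1],[],[],[1],[],[],[],[],[],[],[]],
 [[],[],[],[],[],[],[],[0,-1],[],[],[],[-1,1],[],[1],[],[],[]],
 [[],[],[],[],[],[],[0,-1],[],[],[-1],[0,1],[],[1],[],[],[],[]],
 [[],[],[],[],[],[],[0,1],[],[],[],[],[],[0,-2],[1,0,1],[0,0,-1],[0,1],[]],
 [[],[0,0,1],[0,-1],[],[],[],[],[],[0,0,-1],[0,0,1],[0,-1],[],[],[],[],[],[1]],
 [[0,0,-1],[0,-1],[],[],[0,0,1],[],[],[],[],[0,-1],[],[0,1],[],[],[1],[],[]],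
 [[0,1],[],[0,-1],[0,0,1],[],[],[],[],[],[1],[],[0,0,-1],[],[],[0,-1],[],[]],
 [[0,-1],[],[],[],[],[0,0,1],[],[],[],[],[0,1,-1],[],[],[],[],[1,-1],[]],
 [[],[0,1],[],[],[],[],[],[],[],[],[0,-1],[1],[],[],[],[-1],[]],
 [[],[],[0,1],[],[],[],[],[],[],[],[1],[0,-1],[],[],[-1],[],[]],
 [[],[0,-1,1],[0,0,1,-1],[],[],[],[],[],[],[0,-1],[],[],[0,-1,1],[],[],[],[]],
 [[0,-1,1],[],[],[],[],[],[],[],[],[],[],[0,-1],[],[0,-1],[],[],[0,1]],
 [[0,0,1,-1],[],[],[],[],[],[],[],[],[],[0,-1],[],[],[0,0,1],[],[],[-1]]]),
((12,15),[[[0,0,-1,1],[],[],[],[],[],[],[0,-1],[0,-1,2,-1],[],[-1,2,-1],[],[],[],[],[]],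
 [[],[],[],[],[],[],[0,0,-1],[],[0,-1],[],[],[],[-1,0,1],[0,1,0,-1],[0,-1,0,1],[]],
 [[],[],[],[],[0,1],[],[],[1],[0,-1],[],[-1],[],[],[],[],[]],
 [[],[],[],[0,1],[],[],[],[0,-1],[1],[],[],[-1],[],[],[],[]],
 [[],[],[],[],[],[0,1],[1,-1],[],[],[-1],[],[],[],[],[],[]],
 [[],[],[],[],[],[],[],[0,1],[],[],[],[1,-1],[],[-1],[],[]],
 [[],[],[],[],[],[],[0,1],[],[],[1],[0,-1],[],[-1],[],[],[]],
 [[],[0,0,-1],[],[],[],[],[0,-1],[],[],[],[0,0,1],[0,-1],[0,2],[-1,0,-1],[0,0,1],[]],
 [[],[0,0,-1],[0,1],[],[],[],[],[],[0,0,1],[0,0,-1],[0,1],[],[],[],[],[-1]],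
 [[0,0,1],[0,1],[],[],[0,0,-1],[],[],[],[],[0,1],[],[0,-1],[],[],[-1],[]],
 [[0,-1],[],[0,1],[0,0,-1],[],[],[],[],[],[-1],[],[0,0,1],[],[],[0,1],[]],
 [[0,1],[0,-1,1],[],[],[],[0,0,-1],[],[],[],[],[],[-1,1],[],[],[],[]],
 [[],[],[0,-1],[],[],[],[],[],[],[],[-1],[0,1],[],[],[1],[]],
 [[],[0,1,-1],[0,0,-1,1],[],[],[],[],[],[],[0,1],[],[],[0,1,-1],[],[],[]],
 [[0,1,-1],[],[],[],[],[],[],[],[],[],[],[0,1],[],[0,1],[],[0,-1]],
 [[0,0,-1,1],[],[],[],[],[],[],[],[],[],[0,1],[],[],[0,0,-1],[],[1]]]),
((15,15),[[[0,0,1,-1],[],[],[],[],[],[],[0,1],[0,1,-2,1],[],[1,-2,1],[],[],[],[]],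
 [[],[],[],[],[],[],[0,0,1],[],[0,1],[],[],[],[1,0,-1],[0,-1,0,1],[0,1,0,-1]],
 [[],[],[],[],[0,-1],[],[],[-1],[0,1],[],[1],[],[],[],[]],
 [[],[],[],[0,-1],[],[],[],[0,1],[-1],[],[],[1],[],[],[]],
 [[],[],[],[],[],[0,-1],[-1,1],[],[],[1],[],[],[],[],[]],
 [[],[],[],[],[],[],[],[0,-1],[],[],[],[-1,1],[],[1],[]],
 [[],[],[],[],[],[],[0,-1],[],[],[-1],[0,1],[],[1],[],[]],
 [[],[0,0,1],[],[],[],[],[0,1],[],[],[],[0,0,-1],[0,1],[0,-2],[1,0,1],[0,0,-1]],
 [[0,0,1,-1],[0,0,1],[0,-1],[],[],[],[],[],[0,0,-1],[0,0,1],[0,-2],[],[],[0,0,1],[]],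
 [[0,0,-1],[0,-1],[],[],[0,0,1],[],[],[],[],[0,-1],[],[0,1],[],[],[1]],
 [[0,1],[],[0,-1],[0,0,1],[],[],[],[],[],[1],[],[0,0,-1],[],[],[0,-1]],
 [[0,-1],[0,1,-1],[],[],[],[0,0,1],[],[],[],[],[],[1,-1],[],[],[]],
 [[],[],[0,1],[],[],[],[],[],[],[],[1],[0,-1],[],[],[-1]],
 [[],[0,-1,1],[0,0,1,-1],[],[],[],[],[],[],[0,-1],[],[],[0,-1,1],[],[]],
 [[0,-1,1,1,-1],[],[],[],[],[],[],[],[],[],[0,0,-1],[0,-1],[],[0,-1,0,1],[]]]),
((5,13),[[[0,0,1,-1],[],[],[],[],[],[],[0,1],[0,1,-2,1],[],[1,-2,1],[],[],[]],
 [[],[],[],[],[],[],[0,0,1],[0,0,-1,0,1],[0,1],[],[],[0,-1,1,1,-1],[1,0,-1],[0,1,0,-1]],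
 [[],[],[],[],[0,-1],[],[],[-1],[0,1],[],[1],[],[],[]],
 [[],[],[],[0,-1],[],[],[],[0,1],[-1],[],[],[1],[],[]],
 [[],[],[],[],[],[0,-1],[-1,1],[],[],[1],[],[],[],[]],
 [[],[],[],[],[],[],[0,-1],[],[],[-1],[0,1],[],[1],[]],
 [[],[0,0,1],[],[],[],[],[0,1],[0,1,0,1],[],[],[0,0,-1],[1,0,1,-1],[0,-2],[0,0,-1]],
 [[0,0,1,-1],[0,0,1],[0,-1],[],[],[],[],[0,0,0,1],[0,0,-1],[0,0,1],[0,-2],[0,0,1,-1],[],[]],
 [[0,0,-1],[0,-1],[],[],[0,0,1],[],[],[],[],[0,-1],[],[0,1],[],[1]],
 [[0,1],[],[0,-1],[0,0,1],[],[],[],[],[],[1],[],[0,0,-1],[],[0,-1]],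
 [[0,-1],[0,1,-1],[],[],[],[0,0,1],[],[],[],[],[],[1,-1],[],[]],
 [[],[],[0,1],[],[],[],[],[],[],[],[1],[0,-1],[],[-1]],
 [[],[0,-1,1],[0,0,1,-1],[],[],[],[],[],[],[0,-1],[],[],[0,-1,1],[]],
 [[0,-1,1,1,-1],[],[],[],[],[],[],[0,0,-1,0,1],[],[],[0,0,-1],[0,-2,1,1,-1],[],[]]]),
((5,12),[[[0,0,1,-1],[],[],[],[],[],[],[0,1],[0,1,-2,1],[],[1,-2,1],[],[]],
 [[],[],[],[],[],[],[0,1,1,-1],[0,0,-1,0,1],[0,1],[1,0,-1],[0,-1,0,1],[0,-1,1,1,-1],[0,1,0,-1]],
 [[],[],[],[],[0,-1],[],[],[-1],[0,1],[],[1],[],[]],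
 [[],[],[],[0,-1],[],[],[],[0,1],[-1],[],[],[1],[]],
 [[],[],[],[],[],[0,-1],[-1,1],[],[],[1],[],[],[]],
 [[],[0,0,1],[],[],[],[],[0,1,-2],[0,1,0,1],[],[0,-2],[0,0,1],[1,0,1,-1],[0,0,-1]],
 [[0,0,1,-1],[0,0,1],[0,-1],[],[],[],[],[0,0,0,1],[0,0,-1],[0,0,1],[0,-2],[0,0,1,-1],[]],
 [[0,0,-1],[0,-1],[],[],[0,0,1],[],[],[],[],[0,-1],[],[0,1],[1]],
 [[0,1],[],[0,-1],[0,0,1],[],[],[],[],[],[1],[],[0,0,-1],[0,-1]],
 [[0,-1],[0,1,-1],[],[],[],[0,0,1],[],[],[],[],[],[1,-1],[]],
 [[],[],[0,1],[],[],[],[],[],[],[],[1],[0,-1],[-1]],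
 [[],[0,-1,1],[0,0,1,-1],[],[],[],[0,0,-1,1],[],[],[0,-2,1],[0,0,1,-1],[],[]],
 [[0,-1,1,1,-1],[],[],[],[],[],[],[0,0,-1,0,1],[],[],[0,0,-1],[0,-2,1,1,-1],[]]]),
((3,8),[[[0,0,-1,1],[],[],[0,0,1,-2,1],[],[],[],[0,-1,-1,2,-1],[],[-1,2,-1],[0,-1,2,-1],[]],
 [[],[],[],[0,0,1],[],[],[0,-1,-1,1],[0,0,0,0,-1],[-1,0,1],[0,1,0,-1],[0,0,-1,-1,1],[0,-1,0,1]],
 [[],[],[],[0,0,1],[0,1],[],[],[1,0,-1],[],[-1],[0,-1],[]],
 [[],[],[],[],[],[0,1],[1,-1],[],[-1],[],[],[]],
 [[],[0,0,-1],[],[],[],[],[0,-1,2],[0,-1,0,-1],[0,2],[0,0,-1],[-1,0,-1,1],[0,0,1]],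
 [[0,0,-1,1],[0,0,-1],[0,1],[0,0,0,-1],[],[],[],[],[0,0,-1],[0,2],[0,0,0,1],[]],
 [[0,0,1],[0,1],[],[],[0,0,-1],[],[],[],[0,1],[],[0,-1],[-1]],
 [[0,-1],[],[0,1],[0,0,-1],[],[],[],[],[-1],[],[0,0,1],[0,1]],
 [[0,1],[0,-1,1],[],[],[],[0,0,-1],[],[],[],[],[-1,1],[]],
 [[],[],[0,-1],[],[],[],[],[],[],[-1],[0,1],[1]],
 [[],[0,1,-1],[0,0,-1,1],[],[],[],[0,0,1,-1],[],[0,2,-1],[0,0,-1,1],[],[]],
 [[0,1,-1,-1,1],[],[],[],[],[],[],[0,0,1,0,-1],[],[0,0,1],[0,2,-1,-1,1],[]]]),
((9,11),[[[0,0,1,-1],[],[],[0,0,-1,2,-1],[],[],[],[0,1,1,-2,1],[],[1,-2,1],[0,1,-2,1]],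
 [[],[],[0,0,1,0,-1],[0,0,-1],[],[],[0,1,1,-1],[0,0,0,0,1],[1,0,-1],[],[0,0,0,1]],
 [[],[],[],[0,0,-1],[0,-1],[],[],[-1,0,1],[],[1],[0,1]],
 [[],[],[],[],[],[0,-1],[-1,1],[],[1],[],[]],
 [[],[0,0,1],[0,0,0,-1],[],[],[],[0,1,-2],[0,1,0,1],[0,-2],[],[1,0,1]],
 [[0,0,1,-1],[0,0,1],[0,-1],[0,0,0,1],[],[],[],[],[0,0,1],[0,-2],[0,0,0,-1]],
 [[0,0,-1],[0,-1],[0,1],[],[0,0,1],[],[],[],[0,-1],[1],[]],
 [[0,1],[],[0,-1,-1],[0,0,1],[],[],[],[],[1],[0,-1],[]],
 [[0,-1],[0,1,-1],[],[],[],[0,0,1],[],[],[],[],[1,-1]],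
 [[],[0,-1,1],[0,0,1,-1],[],[],[],[0,0,-1,1],[],[0,-2,1],[0,0,1,-1],[]],
 [[0,-1,1,1,-1],[],[],[],[],[],[],[0,0,-1,0,1],[],[0,0,-1],[0,-2,1,1,-1]]]),
((3,8),[[[0,0,1,-1],[],[],[0,0,-1,2,-1],[],[],[],[0,1,1,-2,1],[1,-2,1],[0,1,-2,1]],
 [[],[],[0,0,1,0,-1],[0,0,-1],[],[0,1,0,-1],[1],[0,0,0,0,1],[],[0,0,0,1]],
 [[],[],[],[0,0,-1],[0,-1],[],[],[-1,0,1],[1],[0,1]],
 [[],[0,0,1],[0,0,0,-1],[],[],[0,0,-2],[0,-1],[0,1,0,1],[],[1,0,1]],
 [[0,0,1,-1],[0,0,1],[0,-1],[0,0,0,1],[],[0,0,0,1],[0,0,1,-1],[],[0,-2],[0,0,0,-1]],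
 [[0,0,-1],[0,-1],[0,1],[],[0,0,1],[0,0,-1],[0,-1,1],[],[1],[]],
 [[0,1],[],[0,-1,-1],[0,0,1],[],[0,1],[1,-1],[],[0,-1],[]],
 [[0,-1],[0,1,-1],[],[],[],[0,0,1],[],[],[],[1,-1]],
 [[],[0,-1,1],[0,0,1,-1],[],[],[0,0,-2,1],[0,-2,2],[],[0,0,1,-1],[]],
 [[0,-1,1,1,-1],[],[],[],[],[],[],[0,0,-1,0,1],[0,0,-1],[0,-2,1,1,-1]]]),
((2,8),[[[0,0,1,-1],[],[],[],[0,1,-2,1],[],[],[1,-1,1],[]],
 [[],[],[0,0,1,0,-1],[0,0,-1],[],[0,1,0,-1],[1],[0,0,0,0,1],[0,0,0,1]],
 [[],[0,0,1],[0,0,0,-1],[],[],[0,0,-2],[0,-1],[0,1,0,1],[1,0,1]],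
 [[0,0,1,-1],[0,0,1],[0,-1],[0,0,0,-1],[0,0,-2],[0,0,0,1],[0,0,1,-1],[0,-2,0,2],[0,0,2,-1]],
 [[0,0,-1],[0,-1],[0,1],[0,0,1],[0,1,1],[0,0,-1],[0,-1,1],[1,0,-1],[0,-1]],
 [[0,1],[],[0,-1,-1],[0,0,1,-1],[0,0,-1],[0,1],[1,-1],[0,-1,0,1],[0,0,1]],
 [[0,-1],[0,1,-1],[],[],[],[0,0,1],[],[],[1,-1]],
 [[],[0,-1,1],[0,0,1,-1],[0,0,0,0,1,-1],[0,0,0,1,-1],[0,0,-2,1],[0,-2,2],[0,0,1,-1,-1,1],[0,0,0,-1,1]],
 [[0,-1,1,1,-1],[],[],[0,0,0,0,-1],[0,0,0,-1],[],[],[0,0,-2,0,2],[0,-2,1,2,-1]]]),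
((1,6),[[[0,0,1,-1],[],[],[],[0,1,-2,1],[],[1,-1,1],[]],
 [[],[0,0,1],[0,0,0,0,0,-1],[0,0,0,-1],[],[0,0,-1,0,-1],[0,1,0,1,0,1],[1,0,1,0,1]],
 [[0,0,1,-1],[0,0,1],[0,-1,0,0,-1,1,1,-1],[0,0,0,-1,1,-1],[0,0,-2],[0,0,0,0,1,1,-1],[0,-2,0,2,0,0,-1,1],[0,0,2,-1,0,-1,1]],
 [[0,0,-1],[0,-1],[0,1,0,1,-1,-1,1],[0,0,1,-1,1],[0,1,1],[0,0,0,-1,-1,1],[1,0,-1,0,0,1,-1],[0,-1,0,0,1,-1]],
 [[0,1],[],[0,-1,-2,1,1,-1],[0,0,2,-2],[0,0,-1],[0,0,1,1,-1],[0,-1,0,1,-1,1],[0,0,1,-1,1]],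
 [[0,-1],[0,1,-1],[],[],[],[0,0,1],[],[1,-1]],
 [[],[0,-1,1],[0,0,1,1,-2,-2,2],[0,0,0,-2,3,-1],[0,0,0,1,-1],[0,0,0,-1,-2,2],[0,0,1,-1,-1,3,-2],[0,0,0,-1,3,-2]],
 [[0,-1,1,1,-1],[],[],[0,0,0,0,-1],[0,0,0,-1],[],[0,0,-2,0,2],[0,-2,1,2,-1]]]),
((5,0),[[[0,0,0,-1,2,-1],[],[],[0,0,-1,2,-1],[0,0,0,0,-1,1],[0,-1,1,-1],[0,0,-1,2,-1]],
 [[0,0,0,-1],[0,0,0,0,0,0,1],[0,0,0,0,1],[],[0,0,0,1,0,1],[0,0,-1,0,-1,0,-1],[0,-1,0,-1,0,-1]],
 [[0,0,0,-2,2,-1],[0,0,1,0,0,1,-1,-1,1],[0,0,0,0,1,-1,1],[0,0,0,2],[0,0,0,0,-1,0,-1,1],[0,0,2,0,-2,0,0,1,-1],[0,0,-1,0,0,0,1,-1]],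
 [[0,0,1,1,-1],[0,0,-1,0,-1,1,1,-1],[0,0,0,-1,1,-1],[0,0,-1,-1],[0,0,0,0,2,1,-1],[0,-1,0,1,0,0,-1,1],[0,0,2,-1,0,-1,1]],
 [[0,0,-1,1],[0,0,1,2,-1,-1,1],[0,0,0,-2,2],[0,0,0,1],[0,0,0,-2,-1,1],[0,0,1,0,-1,1,-1],[0,-1,1,-1,1,-1]],
 [[0,0,1,-1],[0,0,0,-1,-1,2,2,-2],[0,0,0,0,2,-3,1],[0,0,0,0,-1,1],[0,0,0,0,1,2,-2],[0,0,0,-1,1,1,-3,2],[0,0,0,0,1,-3,2]],
 [[0,0,1,-2,0,2,-1],[],[0,0,0,0,0,1],[0,0,0,0,1],[0,0,0,1,-1,-1,1],[0,0,0,2,0,-2],[0,1,0,-1]]]),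
((1,1),[[[0,0,0,0,0,0,0,0,1,-2,1],[],[0,0,0,0,0,0,0,1,-2,1],[0,0,0,0,0,0,0,0,0,1,-1],[0,0,0,0,0,0,1,-1,1],[0,0,0,0,0,0,0,1,-2,1]],
 [[0,0,0,0,-1,0,0,-1,3,-1],[0,0,0,0,0,1,0,0,1,-2],[0,0,0,0,0,0,0,0,-2],[0,0,0,0,1,0,1,1,-1,1],[0,0,0,-1,0,-1,-1,-2,0,2],[0,0,-1,0,-1,-1,0,1]],
 [[0,0,0,0,1,0,1,-2,-2,2],[0,0,0,0,0,-1,0,-1,2],[0,0,0,0,0,0,0,1,1],[0,0,0,0,-1,0,-2,1,0,-2],[0,0,0,1,0,2,0,1,-1],[0,0,1,0,2,-1,1,-2,1]],
 [[0,0,0,0,-1,-2,1,2,-2],[0,0,0,0,0,1,2,-1,1,-1],[0,0,0,0,0,0,0,0,-1],[0,0,0,0,1,2,0,1,2],[0,0,0,-1,-2,0,-1,-2,-1,1],[0,0,-1,-2,0,-1,0,-2,1]],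
 [[0,0,0,0,0,1,1,-3,-1,2],[0,0,0,0,0,0,-1,-1,2,0,1,-1],[0,0,0,0,0,0,0,0,0,1,-1],[0,0,0,0,0,-1,-1,1,1,-1],[0,0,0,0,1,1,-1,-1,2,-2,-1,1],[0,0,0,1,1,-1,-1,1,-1,-1,1]],
 [[0,0,0,0,0,0,0,-1,2,0,-2,1],[0,0,0,0,0,0,0,0,0,0,-1],[0,0,0,0,0,0,0,0,0,-1],[0,0,0,0,0,0,0,0,-1,1,1,-1],[0,0,0,0,0,0,0,0,-2,0,2],[0,0,0,0,0,0,-1,0,1]]]),
((5,1),[[[0,0,0,0,0,0,0,0,0,0,0,0,-1,2,-1],[0,0,0,0,0,0,0,0,0,0,0,-1,2,-1],[0,0,0,0,0,0,0,0,0,0,0,0,0,-1,1],[0,0,0,0,0,0,0,0,0,0,-1,1,-1],[0,0,0,0,0,0,0,0,0,0,0,-1,2,-1]],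
 [[0,0,0,0,0,0,1,-2,1,3,-5,5,-1,-4,2],[0,0,0,0,0,0,0,0,1,0,0,1],[0,0,0,0,0,0,0,1,-2,-1,1,-4,2,2,-2],[0,0,0,0,0,0,0,3,0,-1,3,-2,-2,2],[0,0,0,0,0,1,1,-1,2,-1,-1,1]],
 [[0,0,0,0,0,0,-1,2,-2,2,-4,0,7,-4],[0,0,0,0,0,0,0,0,-1,0,-1,1,-1],[0,0,0,0,0,0,0,-1,2,0,4,-2,-3,4],[0,0,0,0,0,0,0,-3,0,-2,4,1,-3],[0,0,0,0,0,-1,-1,0,0,2,-3,2,-1]],
 [[0,0,0,0,0,0,1,0,-4,7,-1,-4,5,-3,1],[0,0,0,0,0,0,0,0,1,2,-1,1],[0,0,0,0,0,0,0,1,0,-6,1,0,-3,2,-1],[0,0,0,0,0,0,0,3,6,-4,-1,2,-1,1],[0,0,0,0,0,1,3,0,-1,1,-1,3,-1]],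
 [[0,0,0,0,0,0,0,-1,1,3,-7,3,3,-2,2,-3,1],[0,0,0,0,0,0,0,0,0,-1,-1,2],[0,0,0,0,0,0,0,0,-1,1,5,-3,-3,1,0,2,-1],[0,0,0,0,0,0,0,0,-3,-3,7,3,-4,0,-1,1],[0,0,0,0,0,0,-1,-2,2,2,0,-2,0,2,-1]]]),
((0,0),[[[0,0,0,0,0,0,0,-1,4,-6,2,8,-17,17,-5,-8,8,-2],[0,0,0,0,0,0,0,0,0,0,-1,1,-1,1,1,0,-1],[0,0,0,0,0,0,-1,3,-4,3,1,-11,16,-11,0,10,-8,2],[0,0,0,0,0,0,0,0,3,-8,6,4,-15,18,-6,-8,8,-2]],
 [[0,0,0,0,0,0,0,1,-4,7,-9,12,-12,0,14,-12,3],[0,0,0,0,0,0,0,0,0,0,1,-1,2,-4,1,1],[0,0,0,0,0,0,1,-3,5,-9,14,-11,5,2,-12,11,-3],[0,0,0,0,0,0,0,0,-3,8,-9,12,-17,7,10,-11,3]],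
 [[0,0,0,0,0,0,0,-1,2,3,-14,19,-9,-7,14,-11,5,-1],[0,0,0,0,0,0,0,0,0,0,-1,-1,2,0,1,-1],[0,0,0,0,0,0,-1,1,3,-8,12,-17,5,12,-15,9,-4,1],[0,0,0,0,0,0,0,0,3,-2,-13,22,-9,-6,9,-7,4,-1]],
 [[0,0,0,0,0,0,0,0,1,-3,0,11,-19,13,0,-7,9,-9,5,-1],[0,0,0,0,0,0,0,0,0,0,0,1,0,-2,-2,4,0,-1],[0,0,0,0,0,0,0,1,-2,-1,6,-10,17,-12,-10,18,-11,7,-4,1],[0,0,0,0,0,0,0,0,0,-3,5,8,-22,10,9,-9,4,-5,4,-1]]]),
((0,0),[[[0,0,0,0,0,0,0,0,1,-6,17,-27,26,-11,-9,16,-10,4,-1],[0,0,0,0,0,0,0,-1,8,-23,29,-12,3,-17,15,15,-29,14,-2],[0,0,0,0,0,0,-1,6,-17,24,-15,8,-24,38,-18,-16,25,-12,2]],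
 [[0,0,0,0,0,0,0,0,2,-8,11,-7,4,1,1,-6,-3,9,-5,1],[0,0,0,0,0,0,0,-2,9,-12,5,-11,20,6,-16,4,-6,15,-10,2],[0,0,0,0,0,0,-2,11,-20,9,9,-14,16,3,-40,36,5,-23,12,-2]],
 [[0,0,0,0,0,0,0,0,0,-3,14,-22,10,14,-34,31,1,-22,10,5,-5,1],[0,0,0,0,0,0,0,0,2,-12,25,-22,10,12,-63,73,-2,-42,14,13,-10,2],[0,0,0,0,0,0,0,1,-10,29,-35,13,29,-83,92,-7,-79,64,-1,-23,12,-2]]]),
((0,0),[[[0,0,0,0,0,0,0,0,0,3,-9,-1,27,-18,-8,-18,27,-1,-9,3],[0,0,0,0,0,0,0,0,-3,15,-35,43,-3,-64,65,-2,-26,9,2,-1]],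
 [[0,0,0,0,0,0,0,0,0,1,-10,26,1,-93,109,20,-81,-1,47,-16,-6,3],[0,0,0,0,0,0,0,0,2,-8,7,34,-117,128,25,-181,141,1,-56,27,-2,-1]]]),
((0,0),[[[0,0,0,0,0,0,0,0,0,9,-33,3,143,-185,-110,346,-110,-185,143,3,-33,9]]])]"

definition F0 :: "int list" where "F0 = [0,0,0,0,0,0,0,0,0,9,-33,3,143,-185,-110,346,-110,-185,143,3,-33,9]"

lemma comp: "bchain [1] N0 cert0 = Some (1, F0)"
  by (simp add: N0_def cert0_def F0_def step_ok_def sqL_def pl_is0_def schurL_def del_nth_def pl_sub_def)

definition D0 :: "int list list list" where "D0 = [[[1],[],[0,-1]],
 [[],[1,-1],[]],
 [[0,-1],[],[1]]]"

definition certD :: "((nat \<times> nat) \<times> int list list list) list" where "certD = [((0,0),[[[1,-1],[]],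
 [[],[1,0,-1]]]),
((0,0),[[[1,-1,-1,1]]])]"

definition FD :: "int list" where "FD = [1,-1,-1,1]"

lemma compD: "bchain [1] D0 certD = Some (1, FD)"
  by (simp add: D0_def certD_def FD_def step_ok_def sqL_def pl_is0_def schurL_def del_nth_def pl_sub_def)

definition SH :: "nat list" where "SH = [2,1,2,2,1,2,1,1,1,2]"

definition BLKQ :: "nat \<Rightarrow> nat \<Rightarrow> nat \<Rightarrow> nat \<Rightarrow> Qt" where
  "BLKQ k c i j = inverse tvar ^ (SH ! k) * polyQt (Poly (N0 ! (3*k+i) ! (3*c+j)))"

lemma blk_0_0: "fox_twisted aa (K_relators ! 0) (Suc 0) = mat 3 3 (\<lambda>(i,j). BLKQ 0 0 i j)"
  by (simp add: K_relators_def twist_letter_def aa_vals refl_inv refl_inv0 rho_M3 M3_add M3_smult M3_mult M3_one M3_zero M3_uminus,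
      simp add: mat3_M3 BLKQ_def SH_def N0_rows polyQt_pCons M3_eq, (simp_all add: field_simps tvar_nz power2_eq_square)?)

lemma blk_0_1: "fox_twisted aa (K_relators ! 0) (Suc 1) = mat 3 3 (\<lambda>(i,j). BLKQ 0 1 i j)"
  by (simp add: K_relators_def twist_letter_def aa_vals refl_inv refl_inv0 rho_M3 M3_add M3_smult M3_mult M3_one M3_zero M3_uminus,
      simp add: mat3_M3 BLKQ_def SH_def N0_rows polyQt_pCons M3_eq, (simp_all add: field_simps tvar_nz power2_eq_square)?)

lemma blk_0_2: "fox_twisted aa (K_relators ! 0) (Suc 2) = mat 3 3 (\<lambda>(i,j). BLKQ 0 2 i j)"
  by (simp add: K_relators_def twist_letter_def aa_vals refl_inv refl_inv0 rho_M3 M3_add M3_smult M3_mult M3_one M3_zero M3_uminus,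
      simp add: mat3_M3 BLKQ_def SH_def N0_rows polyQt_pCons M3_eq, (simp_all add: field_simps tvar_nz power2_eq_square)?)

lemma blk_0_3: "fox_twisted aa (K_relators ! 0) (Suc 3) = mat 3 3 (\<lambda>(i,j). BLKQ 0 3 i j)"
  by (simp add: K_relators_def twist_letter_def aa_vals refl_inv refl_inv0 rho_M3 M3_add M3_smult M3_mult M3_one M3_zero M3_uminus,
      simp add: mat3_M3 BLKQ_def SH_def N0_rows polyQt_pCons M3_eq, (simp_all add: field_simps tvar_nz power2_eq_square)?)

lemma blk_0_4: "fox_twisted aa (K_relators ! 0) (Suc 4) = mat 3 3 (\<lambda>(i,j). BLKQ 0 4 i j)"
  by (simp add: K_relators_def twist_letter_def aa_vals refl_inv refl_inv0 rho_M3 M3_add M3_smult M3_mult M3_one M3_zero M3_uminus,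
      simp add: mat3_M3 BLKQ_def SH_def N0_rows polyQt_pCons M3_eq, (simp_all add: field_simps tvar_nz power2_eq_square)?)

lemma blk_0_5: "fox_twisted aa (K_relators ! 0) (Suc 5) = mat 3 3 (\<lambda>(i,j). BLKQ 0 5 i j)"
  by (simp add: K_relators_def twist_letter_def aa_vals refl_inv refl_inv0 rho_M3 M3_add M3_smult M3_mult M3_one M3_zero M3_uminus,
      simp add: mat3_M3 BLKQ_def SH_def N0_rows polyQt_pCons M3_eq, (simp_all add: field_simps tvar_nz power2_eq_square)?)

lemma blk_0_6: "fox_twisted aa (K_relators ! 0) (Suc 6) = mat 3 3 (\<lambda>(i,j). BLKQ 0 6 i j)"
  by (simp add: K_relators_def twist_letter_def aa_vals refl_inv refl_inv0 rho_M3 M3_add M3_smult M3_mult M3_one M3_zero M3_uminus,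
      simp add: mat3_M3 BLKQ_def SH_def N0_rows polyQt_pCons M3_eq, (simp_all add: field_simps tvar_nz power2_eq_square)?)

lemma blk_0_7: "fox_twisted aa (K_relators ! 0) (Suc 7) = mat 3 3 (\<lambda>(i,j). BLKQ 0 7 i j)"
  by (simp add: K_relators_def twist_letter_def aa_vals refl_inv refl_inv0 rho_M3 M3_add M3_smult M3_mult M3_one M3_zero M3_uminus,
      simp add: mat3_M3 BLKQ_def SH_def N0_rows polyQt_pCons M3_eq, (simp_all add: field_simps tvar_nz power2_eq_square)?)

lemma blk_0_8: "fox_twisted aa (K_relators ! 0) (Suc 8) = mat 3 3 (\<lambda>(i,j). BLKQ 0 8 i j)"
  by (simp add: K_relators_def twist_letter_def aa_vals refl_inv refl_inv0 rho_M3 M3_add M3_smult M3_mult M3_one M3_zero M3_uminus,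
      simp add: mat3_M3 BLKQ_def SH_def N0_rows polyQt_pCons M3_eq, (simp_all add: field_simps tvar_nz power2_eq_square)?)

lemma blk_0_9: "fox_twisted aa (K_relators ! 0) (Suc 9) = mat 3 3 (\<lambda>(i,j). BLKQ 0 9 i j)"
  by (simp add: K_relators_def twist_letter_def aa_vals refl_inv refl_inv0 rho_M3 M3_add M3_smult M3_mult M3_one M3_zero M3_uminus,
      simp add: mat3_M3 BLKQ_def SH_def N0_rows polyQt_pCons M3_eq, (simp_all add: field_simps tvar_nz power2_eq_square)?)

lemma blocks_0: assumes c: "c < 10" shows "fox_twisted aa (K_relators ! 0) (Suc c) = mat 3 3 (\<lambda>(i,j). BLKQ 0 c i j)"
  by (rule nat_less10_cases[OF c, where P="\<lambda>c. fox_twisted aa (K_relators ! 0) (Suc c) = mat 3 3 (\<lambda>(i,j). BLKQ 0 c i j)"])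
     (rule blk_0_0 blk_0_1 blk_0_2 blk_0_3 blk_0_4 blk_0_5 blk_0_6 blk_0_7 blk_0_8 blk_0_9)+

lemma blk_1_0: "fox_twisted aa (K_relators ! 1) (Suc 0) = mat 3 3 (\<lambda>(i,j). BLKQ 1 0 i j)"
  by (simp add: K_relators_def twist_letter_def aa_vals refl_inv refl_inv0 rho_M3 M3_add M3_smult M3_mult M3_one M3_zero M3_uminus,
      simp add: mat3_M3 BLKQ_def SH_def N0_rows polyQt_pCons M3_eq, (simp_all add: field_simps tvar_nz power2_eq_square)?)

lemma blk_1_1: "fox_twisted aa (K_relators ! 1) (Suc 1) = mat 3 3 (\<lambda>(i,j). BLKQ 1 1 i j)"
  by (simp add: K_relators_def twist_letter_def aa_vals refl_inv refl_inv0 rho_M3 M3_add M3_smult M3_mult M3_one M3_zero M3_uminus,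
      simp add: mat3_M3 BLKQ_def SH_def N0_rows polyQt_pCons M3_eq, (simp_all add: field_simps tvar_nz power2_eq_square)?)

lemma blk_1_2: "fox_twisted aa (K_relators ! 1) (Suc 2) = mat 3 3 (\<lambda>(i,j). BLKQ 1 2 i j)"
  by (simp add: K_relators_def twist_letter_def aa_vals refl_inv refl_inv0 rho_M3 M3_add M3_smult M3_mult M3_one M3_zero M3_uminus,
      simp add: mat3_M3 BLKQ_def SH_def N0_rows polyQt_pCons M3_eq, (simp_all add: field_simps tvar_nz power2_eq_square)?)

lemma blk_1_3: "fox_twisted aa (K_relators ! 1) (Suc 3) = mat 3 3 (\<lambda>(i,j). BLKQ 1 3 i j)"
  by (simp add: K_relators_def twist_letter_def aa_vals refl_inv refl_inv0 rho_M3 M3_add M3_smult M3_mult M3_one M3_zero M3_uminus,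
      simp add: mat3_M3 BLKQ_def SH_def N0_rows polyQt_pCons M3_eq, (simp_all add: field_simps tvar_nz power2_eq_square)?)

lemma blk_1_4: "fox_twisted aa (K_relators ! 1) (Suc 4) = mat 3 3 (\<lambda>(i,j). BLKQ 1 4 i j)"
  by (simp add: K_relators_def twist_letter_def aa_vals refl_inv refl_inv0 rho_M3 M3_add M3_smult M3_mult M3_one M3_zero M3_uminus,
      simp add: mat3_M3 BLKQ_def SH_def N0_rows polyQt_pCons M3_eq, (simp_all add: field_simps tvar_nz power2_eq_square)?)

lemma blk_1_5: "fox_twisted aa (K_relators ! 1) (Suc 5) = mat 3 3 (\<lambda>(i,j). BLKQ 1 5 i j)"
  by (simp add: K_relators_def twist_letter_def aa_vals refl_inv refl_inv0 rho_M3 M3_add M3_smult M3_mult M3_one M3_zero M3_uminus,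
      simp add: mat3_M3 BLKQ_def SH_def N0_rows polyQt_pCons M3_eq, (simp_all add: field_simps tvar_nz power2_eq_square)?)

lemma blk_1_6: "fox_twisted aa (K_relators ! 1) (Suc 6) = mat 3 3 (\<lambda>(i,j). BLKQ 1 6 i j)"
  by (simp add: K_relators_def twist_letter_def aa_vals refl_inv refl_inv0 rho_M3 M3_add M3_smult M3_mult M3_one M3_zero M3_uminus,
      simp add: mat3_M3 BLKQ_def SH_def N0_rows polyQt_pCons M3_eq, (simp_all add: field_simps tvar_nz power2_eq_square)?)

lemma blk_1_7: "fox_twisted aa (K_relators ! 1) (Suc 7) = mat 3 3 (\<lambda>(i,j). BLKQ 1 7 i j)"
  by (simp add: K_relators_def twist_letter_def aa_vals refl_inv refl_inv0 rho_M3 M3_add M3_smult M3_mult M3_one M3_zero M3_uminus,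
      simp add: mat3_M3 BLKQ_def SH_def N0_rows polyQt_pCons M3_eq, (simp_all add: field_simps tvar_nz power2_eq_square)?)

lemma blk_1_8: "fox_twisted aa (K_relators ! 1) (Suc 8) = mat 3 3 (\<lambda>(i,j). BLKQ 1 8 i j)"
  by (simp add: K_relators_def twist_letter_def aa_vals refl_inv refl_inv0 rho_M3 M3_add M3_smult M3_mult M3_one M3_zero M3_uminus,
      simp add: mat3_M3 BLKQ_def SH_def N0_rows polyQt_pCons M3_eq, (simp_all add: field_simps tvar_nz power2_eq_square)?)

lemma blk_1_9: "fox_twisted aa (K_relators ! 1) (Suc 9) = mat 3 3 (\<lambda>(i,j). BLKQ 1 9 i j)"
  by (simp add: K_relators_def twist_letter_def aa_vals refl_inv refl_inv0 rho_M3 M3_add M3_smult M3_mult M3_one M3_zero M3_uminus,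
      simp add: mat3_M3 BLKQ_def SH_def N0_rows polyQt_pCons M3_eq, (simp_all add: field_simps tvar_nz power2_eq_square)?)

lemma blocks_1: assumes c: "c < 10" shows "fox_twisted aa (K_relators ! 1) (Suc c) = mat 3 3 (\<lambda>(i,j). BLKQ 1 c i j)"
  by (rule nat_less10_cases[OF c, where P="\<lambda>c. fox_twisted aa (K_relators ! 1) (Suc c) = mat 3 3 (\<lambda>(i,j). BLKQ 1 c i j)"])
     (rule blk_1_0 blk_1_1 blk_1_2 blk_1_3 blk_1_4 blk_1_5 blk_1_6 blk_1_7 blk_1_8 blk_1_9)+

lemma blk_2_0: "fox_twisted aa (K_relators ! 2) (Suc 0) = mat 3 3 (\<lambda>(i,j). BLKQ 2 0 i j)"
  by (simp add: K_relators_def twist_letter_def aa_vals refl_inv refl_inv0 rho_M3 M3_add M3_smult M3_mult M3_one M3_zero M3_uminus,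
      simp add: mat3_M3 BLKQ_def SH_def N0_rows polyQt_pCons M3_eq, (simp_all add: field_simps tvar_nz power2_eq_square)?)

lemma blk_2_1: "fox_twisted aa (K_relators ! 2) (Suc 1) = mat 3 3 (\<lambda>(i,j). BLKQ 2 1 i j)"
  by (simp add: K_relators_def twist_letter_def aa_vals refl_inv refl_inv0 rho_M3 M3_add M3_smult M3_mult M3_one M3_zero M3_uminus,
      simp add: mat3_M3 BLKQ_def SH_def N0_rows polyQt_pCons M3_eq, (simp_all add: field_simps tvar_nz power2_eq_square)?)

lemma blk_2_2: "fox_twisted aa (K_relators ! 2) (Suc 2) = mat 3 3 (\<lambda>(i,j). BLKQ 2 2 i j)"
  by (simp add: K_relators_def twist_letter_def aa_vals refl_inv refl_inv0 rho_M3 M3_add M3_smult M3_mult M3_one M3_zero M3_uminus,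
      simp add: mat3_M3 BLKQ_def SH_def N0_rows polyQt_pCons M3_eq, (simp_all add: field_simps tvar_nz power2_eq_square)?)

lemma blk_2_3: "fox_twisted aa (K_relators ! 2) (Suc 3) = mat 3 3 (\<lambda>(i,j). BLKQ 2 3 i j)"
  by (simp add: K_relators_def twist_letter_def aa_vals refl_inv refl_inv0 rho_M3 M3_add M3_smult M3_mult M3_one M3_zero M3_uminus,
      simp add: mat3_M3 BLKQ_def SH_def N0_rows polyQt_pCons M3_eq, (simp_all add: field_simps tvar_nz power2_eq_square)?)

lemma blk_2_4: "fox_twisted aa (K_relators ! 2) (Suc 4) = mat 3 3 (\<lambda>(i,j). BLKQ 2 4 i j)"
  by (simp add: K_relators_def twist_letter_def aa_vals refl_inv refl_inv0 rho_M3 M3_add M3_smult M3_mult M3_one M3_zero M3_uminus,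
      simp add: mat3_M3 BLKQ_def SH_def N0_rows polyQt_pCons M3_eq, (simp_all add: field_simps tvar_nz power2_eq_square)?)

lemma blk_2_5: "fox_twisted aa (K_relators ! 2) (Suc 5) = mat 3 3 (\<lambda>(i,j). BLKQ 2 5 i j)"
  by (simp add: K_relators_def twist_letter_def aa_vals refl_inv refl_inv0 rho_M3 M3_add M3_smult M3_mult M3_one M3_zero M3_uminus,
      simp add: mat3_M3 BLKQ_def SH_def N0_rows polyQt_pCons M3_eq, (simp_all add: field_simps tvar_nz power2_eq_square)?)

lemma blk_2_6: "fox_twisted aa (K_relators ! 2) (Suc 6) = mat 3 3 (\<lambda>(i,j). BLKQ 2 6 i j)"
  by (simp add: K_relators_def twist_letter_def aa_vals refl_inv refl_inv0 rho_M3 M3_add M3_smult M3_mult M3_one M3_zero M3_uminus,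
      simp add: mat3_M3 BLKQ_def SH_def N0_rows polyQt_pCons M3_eq, (simp_all add: field_simps tvar_nz power2_eq_square)?)

lemma blk_2_7: "fox_twisted aa (K_relators ! 2) (Suc 7) = mat 3 3 (\<lambda>(i,j). BLKQ 2 7 i j)"
  by (simp add: K_relators_def twist_letter_def aa_vals refl_inv refl_inv0 rho_M3 M3_add M3_smult M3_mult M3_one M3_zero M3_uminus,
      simp add: mat3_M3 BLKQ_def SH_def N0_rows polyQt_pCons M3_eq, (simp_all add: field_simps tvar_nz power2_eq_square)?)

lemma blk_2_8: "fox_twisted aa (K_relators ! 2) (Suc 8) = mat 3 3 (\<lambda>(i,j). BLKQ 2 8 i j)"
  by (simp add: K_relators_def twist_letter_def aa_vals refl_inv refl_inv0 rho_M3 M3_add M3_smult M3_mult M3_one M3_zero M3_uminus,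
      simp add: mat3_M3 BLKQ_def SH_def N0_rows polyQt_pCons M3_eq, (simp_all add: field_simps tvar_nz power2_eq_square)?)

lemma blk_2_9: "fox_twisted aa (K_relators ! 2) (Suc 9) = mat 3 3 (\<lambda>(i,j). BLKQ 2 9 i j)"
  by (simp add: K_relators_def twist_letter_def aa_vals refl_inv refl_inv0 rho_M3 M3_add M3_smult M3_mult M3_one M3_zero M3_uminus,
      simp add: mat3_M3 BLKQ_def SH_def N0_rows polyQt_pCons M3_eq, (simp_all add: field_simps tvar_nz power2_eq_square)?)

lemma blocks_2: assumes c: "c < 10" shows "fox_twisted aa (K_relators ! 2) (Suc c) = mat 3 3 (\<lambda>(i,j). BLKQ 2 c i j)"
  by (rule nat_less10_cases[OF c, where P="\<lambda>c. fox_twisted aa (K_relators ! 2) (Suc c) = mat 3 3 (\<lambda>(i,j). BLKQ 2 c i j)"])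
     (rule blk_2_0 blk_2_1 blk_2_2 blk_2_3 blk_2_4 blk_2_5 blk_2_6 blk_2_7 blk_2_8 blk_2_9)+

lemma blk_3_0: "fox_twisted aa (K_relators ! 3) (Suc 0) = mat 3 3 (\<lambda>(i,j). BLKQ 3 0 i j)"
  by (simp add: K_relators_def twist_letter_def aa_vals refl_inv refl_inv0 rho_M3 M3_add M3_smult M3_mult M3_one M3_zero M3_uminus,
      simp add: mat3_M3 BLKQ_def SH_def N0_rows polyQt_pCons M3_eq, (simp_all add: field_simps tvar_nz power2_eq_square)?)

lemma blk_3_1: "fox_twisted aa (K_relators ! 3) (Suc 1) = mat 3 3 (\<lambda>(i,j). BLKQ 3 1 i j)"
  by (simp add: K_relators_def twist_letter_def aa_vals refl_inv refl_inv0 rho_M3 M3_add M3_smult M3_mult M3_one M3_zero M3_uminus,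
      simp add: mat3_M3 BLKQ_def SH_def N0_rows polyQt_pCons M3_eq, (simp_all add: field_simps tvar_nz power2_eq_square)?)

lemma blk_3_2: "fox_twisted aa (K_relators ! 3) (Suc 2) = mat 3 3 (\<lambda>(i,j). BLKQ 3 2 i j)"
  by (simp add: K_relators_def twist_letter_def aa_vals refl_inv refl_inv0 rho_M3 M3_add M3_smult M3_mult M3_one M3_zero M3_uminus,
      simp add: mat3_M3 BLKQ_def SH_def N0_rows polyQt_pCons M3_eq, (simp_all add: field_simps tvar_nz power2_eq_square)?)

lemma blk_3_3: "fox_twisted aa (K_relators ! 3) (Suc 3) = mat 3 3 (\<lambda>(i,j). BLKQ 3 3 i j)"
  by (simp add: K_relators_def twist_letter_def aa_vals refl_inv refl_inv0 rho_M3 M3_add M3_smult M3_mult M3_one M3_zero M3_uminus,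
      simp add: mat3_M3 BLKQ_def SH_def N0_rows polyQt_pCons M3_eq, (simp_all add: field_simps tvar_nz power2_eq_square)?)

lemma blk_3_4: "fox_twisted aa (K_relators ! 3) (Suc 4) = mat 3 3 (\<lambda>(i,j). BLKQ 3 4 i j)"
  by (simp add: K_relators_def twist_letter_def aa_vals refl_inv refl_inv0 rho_M3 M3_add M3_smult M3_mult M3_one M3_zero M3_uminus,
      simp add: mat3_M3 BLKQ_def SH_def N0_rows polyQt_pCons M3_eq, (simp_all add: field_simps tvar_nz power2_eq_square)?)

lemma blk_3_5: "fox_twisted aa (K_relators ! 3) (Suc 5) = mat 3 3 (\<lambda>(i,j). BLKQ 3 5 i j)"
  by (simp add: K_relators_def twist_letter_def aa_vals refl_inv refl_inv0 rho_M3 M3_add M3_smult M3_mult M3_one M3_zero M3_uminus,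
      simp add: mat3_M3 BLKQ_def SH_def N0_rows polyQt_pCons M3_eq, (simp_all add: field_simps tvar_nz power2_eq_square)?)

lemma blk_3_6: "fox_twisted aa (K_relators ! 3) (Suc 6) = mat 3 3 (\<lambda>(i,j). BLKQ 3 6 i j)"
  by (simp add: K_relators_def twist_letter_def aa_vals refl_inv refl_inv0 rho_M3 M3_add M3_smult M3_mult M3_one M3_zero M3_uminus,
      simp add: mat3_M3 BLKQ_def SH_def N0_rows polyQt_pCons M3_eq, (simp_all add: field_simps tvar_nz power2_eq_square)?)

lemma blk_3_7: "fox_twisted aa (K_relators ! 3) (Suc 7) = mat 3 3 (\<lambda>(i,j). BLKQ 3 7 i j)"
  by (simp add: K_relators_def twist_letter_def aa_vals refl_inv refl_inv0 rho_M3 M3_add M3_smult M3_mult M3_one M3_zero M3_uminus,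
      simp add: mat3_M3 BLKQ_def SH_def N0_rows polyQt_pCons M3_eq, (simp_all add: field_simps tvar_nz power2_eq_square)?)

lemma blk_3_8: "fox_twisted aa (K_relators ! 3) (Suc 8) = mat 3 3 (\<lambda>(i,j). BLKQ 3 8 i j)"
  by (simp add: K_relators_def twist_letter_def aa_vals refl_inv refl_inv0 rho_M3 M3_add M3_smult M3_mult M3_one M3_zero M3_uminus,
      simp add: mat3_M3 BLKQ_def SH_def N0_rows polyQt_pCons M3_eq, (simp_all add: field_simps tvar_nz power2_eq_square)?)

lemma blk_3_9: "fox_twisted aa (K_relators ! 3) (Suc 9) = mat 3 3 (\<lambda>(i,j). BLKQ 3 9 i j)"
  by (simp add: K_relators_def twist_letter_def aa_vals refl_inv refl_inv0 rho_M3 M3_add M3_smult M3_mult M3_one M3_zero M3_uminus,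
      simp add: mat3_M3 BLKQ_def SH_def N0_rows polyQt_pCons M3_eq, (simp_all add: field_simps tvar_nz power2_eq_square)?)

lemma blocks_3: assumes c: "c < 10" shows "fox_twisted aa (K_relators ! 3) (Suc c) = mat 3 3 (\<lambda>(i,j). BLKQ 3 c i j)"
  by (rule nat_less10_cases[OF c, where P="\<lambda>c. fox_twisted aa (K_relators ! 3) (Suc c) = mat 3 3 (\<lambda>(i,j). BLKQ 3 c i j)"])
     (rule blk_3_0 blk_3_1 blk_3_2 blk_3_3 blk_3_4 blk_3_5 blk_3_6 blk_3_7 blk_3_8 blk_3_9)+

lemma blk_4_0: "fox_twisted aa (K_relators ! 4) (Suc 0) = mat 3 3 (\<lambda>(i,j). BLKQ 4 0 i j)"
  by (simp add: K_relators_def twist_letter_def aa_vals refl_inv refl_inv0 rho_M3 M3_add M3_smult M3_mult M3_one M3_zero M3_uminus,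
      simp add: mat3_M3 BLKQ_def SH_def N0_rows polyQt_pCons M3_eq, (simp_all add: field_simps tvar_nz power2_eq_square)?)

lemma blk_4_1: "fox_twisted aa (K_relators ! 4) (Suc 1) = mat 3 3 (\<lambda>(i,j). BLKQ 4 1 i j)"
  by (simp add: K_relators_def twist_letter_def aa_vals refl_inv refl_inv0 rho_M3 M3_add M3_smult M3_mult M3_one M3_zero M3_uminus,
      simp add: mat3_M3 BLKQ_def SH_def N0_rows polyQt_pCons M3_eq, (simp_all add: field_simps tvar_nz power2_eq_square)?)

lemma blk_4_2: "fox_twisted aa (K_relators ! 4) (Suc 2) = mat 3 3 (\<lambda>(i,j). BLKQ 4 2 i j)"
  by (simp add: K_relators_def twist_letter_def aa_vals refl_inv refl_inv0 rho_M3 M3_add M3_smult M3_mult M3_one M3_zero M3_uminus,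
      simp add: mat3_M3 BLKQ_def SH_def N0_rows polyQt_pCons M3_eq, (simp_all add: field_simps tvar_nz power2_eq_square)?)

lemma blk_4_3: "fox_twisted aa (K_relators ! 4) (Suc 3) = mat 3 3 (\<lambda>(i,j). BLKQ 4 3 i j)"
  by (simp add: K_relators_def twist_letter_def aa_vals refl_inv refl_inv0 rho_M3 M3_add M3_smult M3_mult M3_one M3_zero M3_uminus,
      simp add: mat3_M3 BLKQ_def SH_def N0_rows polyQt_pCons M3_eq, (simp_all add: field_simps tvar_nz power2_eq_square)?)

lemma blk_4_4: "fox_twisted aa (K_relators ! 4) (Suc 4) = mat 3 3 (\<lambda>(i,j). BLKQ 4 4 i j)"
  by (simp add: K_relators_def twist_letter_def aa_vals refl_inv refl_inv0 rho_M3 M3_add M3_smult M3_mult M3_one M3_zero M3_uminus,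
      simp add: mat3_M3 BLKQ_def SH_def N0_rows polyQt_pCons M3_eq, (simp_all add: field_simps tvar_nz power2_eq_square)?)

lemma blk_4_5: "fox_twisted aa (K_relators ! 4) (Suc 5) = mat 3 3 (\<lambda>(i,j). BLKQ 4 5 i j)"
  by (simp add: K_relators_def twist_letter_def aa_vals refl_inv refl_inv0 rho_M3 M3_add M3_smult M3_mult M3_one M3_zero M3_uminus,
      simp add: mat3_M3 BLKQ_def SH_def N0_rows polyQt_pCons M3_eq, (simp_all add: field_simps tvar_nz power2_eq_square)?)

lemma blk_4_6: "fox_twisted aa (K_relators ! 4) (Suc 6) = mat 3 3 (\<lambda>(i,j). BLKQ 4 6 i j)"
  by (simp add: K_relators_def twist_letter_def aa_vals refl_inv refl_inv0 rho_M3 M3_add M3_smult M3_mult M3_one M3_zero M3_uminus,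
      simp add: mat3_M3 BLKQ_def SH_def N0_rows polyQt_pCons M3_eq, (simp_all add: field_simps tvar_nz power2_eq_square)?)

lemma blk_4_7: "fox_twisted aa (K_relators ! 4) (Suc 7) = mat 3 3 (\<lambda>(i,j). BLKQ 4 7 i j)"
  by (simp add: K_relators_def twist_letter_def aa_vals refl_inv refl_inv0 rho_M3 M3_add M3_smult M3_mult M3_one M3_zero M3_uminus,
      simp add: mat3_M3 BLKQ_def SH_def N0_rows polyQt_pCons M3_eq, (simp_all add: field_simps tvar_nz power2_eq_square)?)

lemma blk_4_8: "fox_twisted aa (K_relators ! 4) (Suc 8) = mat 3 3 (\<lambda>(i,j). BLKQ 4 8 i j)"
  by (simp add: K_relators_def twist_letter_def aa_vals refl_inv refl_inv0 rho_M3 M3_add M3_smult M3_mult M3_one M3_zero M3_uminus,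
      simp add: mat3_M3 BLKQ_def SH_def N0_rows polyQt_pCons M3_eq, (simp_all add: field_simps tvar_nz power2_eq_square)?)

lemma blk_4_9: "fox_twisted aa (K_relators ! 4) (Suc 9) = mat 3 3 (\<lambda>(i,j). BLKQ 4 9 i j)"
  by (simp add: K_relators_def twist_letter_def aa_vals refl_inv refl_inv0 rho_M3 M3_add M3_smult M3_mult M3_one M3_zero M3_uminus,
      simp add: mat3_M3 BLKQ_def SH_def N0_rows polyQt_pCons M3_eq, (simp_all add: field_simps tvar_nz power2_eq_square)?)

lemma blocks_4: assumes c: "c < 10" shows "fox_twisted aa (K_relators ! 4) (Suc c) = mat 3 3 (\<lambda>(i,j). BLKQ 4 c i j)"
  by (rule nat_less10_cases[OF c, where P="\<lambda>c. fox_twisted aa (K_relators ! 4) (Suc c) = mat 3 3 (\<lambda>(i,j). BLKQ 4 c i j)"])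
     (rule blk_4_0 blk_4_1 blk_4_2 blk_4_3 blk_4_4 blk_4_5 blk_4_6 blk_4_7 blk_4_8 blk_4_9)+

lemma blk_5_0: "fox_twisted aa (K_relators ! 5) (Suc 0) = mat 3 3 (\<lambda>(i,j). BLKQ 5 0 i j)"
  by (simp add: K_relators_def twist_letter_def aa_vals refl_inv refl_inv0 rho_M3 M3_add M3_smult M3_mult M3_one M3_zero M3_uminus,
      simp add: mat3_M3 BLKQ_def SH_def N0_rows polyQt_pCons M3_eq, (simp_all add: field_simps tvar_nz power2_eq_square)?)

lemma blk_5_1: "fox_twisted aa (K_relators ! 5) (Suc 1) = mat 3 3 (\<lambda>(i,j). BLKQ 5 1 i j)"
  by (simp add: K_relators_def twist_letter_def aa_vals refl_inv refl_inv0 rho_M3 M3_add M3_smult M3_mult M3_one M3_zero M3_uminus,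
      simp add: mat3_M3 BLKQ_def SH_def N0_rows polyQt_pCons M3_eq, (simp_all add: field_simps tvar_nz power2_eq_square)?)

lemma blk_5_2: "fox_twisted aa (K_relators ! 5) (Suc 2) = mat 3 3 (\<lambda>(i,j). BLKQ 5 2 i j)"
  by (simp add: K_relators_def twist_letter_def aa_vals refl_inv refl_inv0 rho_M3 M3_add M3_smult M3_mult M3_one M3_zero M3_uminus,
      simp add: mat3_M3 BLKQ_def SH_def N0_rows polyQt_pCons M3_eq, (simp_all add: field_simps tvar_nz power2_eq_square)?)

lemma blk_5_3: "fox_twisted aa (K_relators ! 5) (Suc 3) = mat 3 3 (\<lambda>(i,j). BLKQ 5 3 i j)"
  by (simp add: K_relators_def twist_letter_def aa_vals refl_inv refl_inv0 rho_M3 M3_add M3_smult M3_mult M3_one M3_zero M3_uminus,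
      simp add: mat3_M3 BLKQ_def SH_def N0_rows polyQt_pCons M3_eq, (simp_all add: field_simps tvar_nz power2_eq_square)?)

lemma blk_5_4: "fox_twisted aa (K_relators ! 5) (Suc 4) = mat 3 3 (\<lambda>(i,j). BLKQ 5 4 i j)"
  by (simp add: K_relators_def twist_letter_def aa_vals refl_inv refl_inv0 rho_M3 M3_add M3_smult M3_mult M3_one M3_zero M3_uminus,
      simp add: mat3_M3 BLKQ_def SH_def N0_rows polyQt_pCons M3_eq, (simp_all add: field_simps tvar_nz power2_eq_square)?)

lemma blk_5_5: "fox_twisted aa (K_relators ! 5) (Suc 5) = mat 3 3 (\<lambda>(i,j). BLKQ 5 5 i j)"
  by (simp add: K_relators_def twist_letter_def aa_vals refl_inv refl_inv0 rho_M3 M3_add M3_smult M3_mult M3_one M3_zero M3_uminus,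
      simp add: mat3_M3 BLKQ_def SH_def N0_rows polyQt_pCons M3_eq, (simp_all add: field_simps tvar_nz power2_eq_square)?)

lemma blk_5_6: "fox_twisted aa (K_relators ! 5) (Suc 6) = mat 3 3 (\<lambda>(i,j). BLKQ 5 6 i j)"
  by (simp add: K_relators_def twist_letter_def aa_vals refl_inv refl_inv0 rho_M3 M3_add M3_smult M3_mult M3_one M3_zero M3_uminus,
      simp add: mat3_M3 BLKQ_def SH_def N0_rows polyQt_pCons M3_eq, (simp_all add: field_simps tvar_nz power2_eq_square)?)

lemma blk_5_7: "fox_twisted aa (K_relators ! 5) (Suc 7) = mat 3 3 (\<lambda>(i,j). BLKQ 5 7 i j)"
  by (simp add: K_relators_def twist_letter_def aa_vals refl_inv refl_inv0 rho_M3 M3_add M3_smult M3_mult M3_one M3_zero M3_uminus,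
      simp add: mat3_M3 BLKQ_def SH_def N0_rows polyQt_pCons M3_eq, (simp_all add: field_simps tvar_nz power2_eq_square)?)

lemma blk_5_8: "fox_twisted aa (K_relators ! 5) (Suc 8) = mat 3 3 (\<lambda>(i,j). BLKQ 5 8 i j)"
  by (simp add: K_relators_def twist_letter_def aa_vals refl_inv refl_inv0 rho_M3 M3_add M3_smult M3_mult M3_one M3_zero M3_uminus,
      simp add: mat3_M3 BLKQ_def SH_def N0_rows polyQt_pCons M3_eq, (simp_all add: field_simps tvar_nz power2_eq_square)?)

lemma blk_5_9: "fox_twisted aa (K_relators ! 5) (Suc 9) = mat 3 3 (\<lambda>(i,j). BLKQ 5 9 i j)"
  by (simp add: K_relators_def twist_letter_def aa_vals refl_inv refl_inv0 rho_M3 M3_add M3_smult M3_mult M3_one M3_zero M3_uminus,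
      simp add: mat3_M3 BLKQ_def SH_def N0_rows polyQt_pCons M3_eq, (simp_all add: field_simps tvar_nz power2_eq_square)?)

lemma blocks_5: assumes c: "c < 10" shows "fox_twisted aa (K_relators ! 5) (Suc c) = mat 3 3 (\<lambda>(i,j). BLKQ 5 c i j)"
  by (rule nat_less10_cases[OF c, where P="\<lambda>c. fox_twisted aa (K_relators ! 5) (Suc c) = mat 3 3 (\<lambda>(i,j). BLKQ 5 c i j)"])
     (rule blk_5_0 blk_5_1 blk_5_2 blk_5_3 blk_5_4 blk_5_5 blk_5_6 blk_5_7 blk_5_8 blk_5_9)+

lemma blk_6_0: "fox_twisted aa (K_relators ! 6) (Suc 0) = mat 3 3 (\<lambda>(i,j). BLKQ 6 0 i j)"
  by (simp add: K_relators_def twist_letter_def aa_vals refl_inv refl_inv0 rho_M3 M3_add M3_smult M3_mult M3_one M3_zero M3_uminus,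
      simp add: mat3_M3 BLKQ_def SH_def N0_rows polyQt_pCons M3_eq, (simp_all add: field_simps tvar_nz power2_eq_square)?)

lemma blk_6_1: "fox_twisted aa (K_relators ! 6) (Suc 1) = mat 3 3 (\<lambda>(i,j). BLKQ 6 1 i j)"
  by (simp add: K_relators_def twist_letter_def aa_vals refl_inv refl_inv0 rho_M3 M3_add M3_smult M3_mult M3_one M3_zero M3_uminus,
      simp add: mat3_M3 BLKQ_def SH_def N0_rows polyQt_pCons M3_eq, (simp_all add: field_simps tvar_nz power2_eq_square)?)

lemma blk_6_2: "fox_twisted aa (K_relators ! 6) (Suc 2) = mat 3 3 (\<lambda>(i,j). BLKQ 6 2 i j)"
  by (simp add: K_relators_def twist_letter_def aa_vals refl_inv refl_inv0 rho_M3 M3_add M3_smult M3_mult M3_one M3_zero M3_uminus,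
      simp add: mat3_M3 BLKQ_def SH_def N0_rows polyQt_pCons M3_eq, (simp_all add: field_simps tvar_nz power2_eq_square)?)

lemma blk_6_3: "fox_twisted aa (K_relators ! 6) (Suc 3) = mat 3 3 (\<lambda>(i,j). BLKQ 6 3 i j)"
  by (simp add: K_relators_def twist_letter_def aa_vals refl_inv refl_inv0 rho_M3 M3_add M3_smult M3_mult M3_one M3_zero M3_uminus,
      simp add: mat3_M3 BLKQ_def SH_def N0_rows polyQt_pCons M3_eq, (simp_all add: field_simps tvar_nz power2_eq_square)?)

lemma blk_6_4: "fox_twisted aa (K_relators ! 6) (Suc 4) = mat 3 3 (\<lambda>(i,j). BLKQ 6 4 i j)"
  by (simp add: K_relators_def twist_letter_def aa_vals refl_inv refl_inv0 rho_M3 M3_add M3_smult M3_mult M3_one M3_zero M3_uminus,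
      simp add: mat3_M3 BLKQ_def SH_def N0_rows polyQt_pCons M3_eq, (simp_all add: field_simps tvar_nz power2_eq_square)?)

lemma blk_6_5: "fox_twisted aa (K_relators ! 6) (Suc 5) = mat 3 3 (\<lambda>(i,j). BLKQ 6 5 i j)"
  by (simp add: K_relators_def twist_letter_def aa_vals refl_inv refl_inv0 rho_M3 M3_add M3_smult M3_mult M3_one M3_zero M3_uminus,
      simp add: mat3_M3 BLKQ_def SH_def N0_rows polyQt_pCons M3_eq, (simp_all add: field_simps tvar_nz power2_eq_square)?)

lemma blk_6_6: "fox_twisted aa (K_relators ! 6) (Suc 6) = mat 3 3 (\<lambda>(i,j). BLKQ 6 6 i j)"
  by (simp add: K_relators_def twist_letter_def aa_vals refl_inv refl_inv0 rho_M3 M3_add M3_smult M3_mult M3_one M3_zero M3_uminus,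
      simp add: mat3_M3 BLKQ_def SH_def N0_rows polyQt_pCons M3_eq, (simp_all add: field_simps tvar_nz power2_eq_square)?)

lemma blk_6_7: "fox_twisted aa (K_relators ! 6) (Suc 7) = mat 3 3 (\<lambda>(i,j). BLKQ 6 7 i j)"
  by (simp add: K_relators_def twist_letter_def aa_vals refl_inv refl_inv0 rho_M3 M3_add M3_smult M3_mult M3_one M3_zero M3_uminus,
      simp add: mat3_M3 BLKQ_def SH_def N0_rows polyQt_pCons M3_eq, (simp_all add: field_simps tvar_nz power2_eq_square)?)

lemma blk_6_8: "fox_twisted aa (K_relators ! 6) (Suc 8) = mat 3 3 (\<lambda>(i,j). BLKQ 6 8 i j)"
  by (simp add: K_relators_def twist_letter_def aa_vals refl_inv refl_inv0 rho_M3 M3_add M3_smult M3_mult M3_one M3_zero M3_uminus,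
      simp add: mat3_M3 BLKQ_def SH_def N0_rows polyQt_pCons M3_eq, (simp_all add: field_simps tvar_nz power2_eq_square)?)

lemma blk_6_9: "fox_twisted aa (K_relators ! 6) (Suc 9) = mat 3 3 (\<lambda>(i,j). BLKQ 6 9 i j)"
  by (simp add: K_relators_def twist_letter_def aa_vals refl_inv refl_inv0 rho_M3 M3_add M3_smult M3_mult M3_one M3_zero M3_uminus,
      simp add: mat3_M3 BLKQ_def SH_def N0_rows polyQt_pCons M3_eq, (simp_all add: field_simps tvar_nz power2_eq_square)?)

lemma blocks_6: assumes c: "c < 10" shows "fox_twisted aa (K_relators ! 6) (Suc c) = mat 3 3 (\<lambda>(i,j). BLKQ 6 c i j)"
  by (rule nat_less10_cases[OF c, where P="\<lambda>c. fox_twisted aa (K_relators ! 6) (Suc c) = mat 3 3 (\<lambda>(i,j). BLKQ 6 c i j)"])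
     (rule blk_6_0 blk_6_1 blk_6_2 blk_6_3 blk_6_4 blk_6_5 blk_6_6 blk_6_7 blk_6_8 blk_6_9)+

lemma blk_7_0: "fox_twisted aa (K_relators ! 7) (Suc 0) = mat 3 3 (\<lambda>(i,j). BLKQ 7 0 i j)"
  by (simp add: K_relators_def twist_letter_def aa_vals refl_inv refl_inv0 rho_M3 M3_add M3_smult M3_mult M3_one M3_zero M3_uminus,
      simp add: mat3_M3 BLKQ_def SH_def N0_rows polyQt_pCons M3_eq, (simp_all add: field_simps tvar_nz power2_eq_square)?)

lemma blk_7_1: "fox_twisted aa (K_relators ! 7) (Suc 1) = mat 3 3 (\<lambda>(i,j). BLKQ 7 1 i j)"
  by (simp add: K_relators_def twist_letter_def aa_vals refl_inv refl_inv0 rho_M3 M3_add M3_smult M3_mult M3_one M3_zero M3_uminus,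
      simp add: mat3_M3 BLKQ_def SH_def N0_rows polyQt_pCons M3_eq, (simp_all add: field_simps tvar_nz power2_eq_square)?)

lemma blk_7_2: "fox_twisted aa (K_relators ! 7) (Suc 2) = mat 3 3 (\<lambda>(i,j). BLKQ 7 2 i j)"
  by (simp add: K_relators_def twist_letter_def aa_vals refl_inv refl_inv0 rho_M3 M3_add M3_smult M3_mult M3_one M3_zero M3_uminus,
      simp add: mat3_M3 BLKQ_def SH_def N0_rows polyQt_pCons M3_eq, (simp_all add: field_simps tvar_nz power2_eq_square)?)

lemma blk_7_3: "fox_twisted aa (K_relators ! 7) (Suc 3) = mat 3 3 (\<lambda>(i,j). BLKQ 7 3 i j)"
  by (simp add: K_relators_def twist_letter_def aa_vals refl_inv refl_inv0 rho_M3 M3_add M3_smult M3_mult M3_one M3_zero M3_uminus,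
      simp add: mat3_M3 BLKQ_def SH_def N0_rows polyQt_pCons M3_eq, (simp_all add: field_simps tvar_nz power2_eq_square)?)

lemma blk_7_4: "fox_twisted aa (K_relators ! 7) (Suc 4) = mat 3 3 (\<lambda>(i,j). BLKQ 7 4 i j)"
  by (simp add: K_relators_def twist_letter_def aa_vals refl_inv refl_inv0 rho_M3 M3_add M3_smult M3_mult M3_one M3_zero M3_uminus,
      simp add: mat3_M3 BLKQ_def SH_def N0_rows polyQt_pCons M3_eq, (simp_all add: field_simps tvar_nz power2_eq_square)?)

lemma blk_7_5: "fox_twisted aa (K_relators ! 7) (Suc 5) = mat 3 3 (\<lambda>(i,j). BLKQ 7 5 i j)"
  by (simp add: K_relators_def twist_letter_def aa_vals refl_inv refl_inv0 rho_M3 M3_add M3_smult M3_mult M3_one M3_zero M3_uminus,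
      simp add: mat3_M3 BLKQ_def SH_def N0_rows polyQt_pCons M3_eq, (simp_all add: field_simps tvar_nz power2_eq_square)?)

lemma blk_7_6: "fox_twisted aa (K_relators ! 7) (Suc 6) = mat 3 3 (\<lambda>(i,j). BLKQ 7 6 i j)"
  by (simp add: K_relators_def twist_letter_def aa_vals refl_inv refl_inv0 rho_M3 M3_add M3_smult M3_mult M3_one M3_zero M3_uminus,
      simp add: mat3_M3 BLKQ_def SH_def N0_rows polyQt_pCons M3_eq, (simp_all add: field_simps tvar_nz power2_eq_square)?)

lemma blk_7_7: "fox_twisted aa (K_relators ! 7) (Suc 7) = mat 3 3 (\<lambda>(i,j). BLKQ 7 7 i j)"
  by (simp add: K_relators_def twist_letter_def aa_vals refl_inv refl_inv0 rho_M3 M3_add M3_smult M3_mult M3_one M3_zero M3_uminus,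
      simp add: mat3_M3 BLKQ_def SH_def N0_rows polyQt_pCons M3_eq, (simp_all add: field_simps tvar_nz power2_eq_square)?)

lemma blk_7_8: "fox_twisted aa (K_relators ! 7) (Suc 8) = mat 3 3 (\<lambda>(i,j). BLKQ 7 8 i j)"
  by (simp add: K_relators_def twist_letter_def aa_vals refl_inv refl_inv0 rho_M3 M3_add M3_smult M3_mult M3_one M3_zero M3_uminus,
      simp add: mat3_M3 BLKQ_def SH_def N0_rows polyQt_pCons M3_eq, (simp_all add: field_simps tvar_nz power2_eq_square)?)

lemma blk_7_9: "fox_twisted aa (K_relators ! 7) (Suc 9) = mat 3 3 (\<lambda>(i,j). BLKQ 7 9 i j)"
  by (simp add: K_relators_def twist_letter_def aa_vals refl_inv refl_inv0 rho_M3 M3_add M3_smult M3_mult M3_one M3_zero M3_uminus,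
      simp add: mat3_M3 BLKQ_def SH_def N0_rows polyQt_pCons M3_eq, (simp_all add: field_simps tvar_nz power2_eq_square)?)

lemma blocks_7: assumes c: "c < 10" shows "fox_twisted aa (K_relators ! 7) (Suc c) = mat 3 3 (\<lambda>(i,j). BLKQ 7 c i j)"
  by (rule nat_less10_cases[OF c, where P="\<lambda>c. fox_twisted aa (K_relators ! 7) (Suc c) = mat 3 3 (\<lambda>(i,j). BLKQ 7 c i j)"])
     (rule blk_7_0 blk_7_1 blk_7_2 blk_7_3 blk_7_4 blk_7_5 blk_7_6 blk_7_7 blk_7_8 blk_7_9)+

lemma blk_8_0: "fox_twisted aa (K_relators ! 8) (Suc 0) = mat 3 3 (\<lambda>(i,j). BLKQ 8 0 i j)"
  by (simp add: K_relators_def twist_letter_def aa_vals refl_inv refl_inv0 rho_M3 M3_add M3_smult M3_mult M3_one M3_zero M3_uminus,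
      simp add: mat3_M3 BLKQ_def SH_def N0_rows polyQt_pCons M3_eq, (simp_all add: field_simps tvar_nz power2_eq_square)?)

lemma blk_8_1: "fox_twisted aa (K_relators ! 8) (Suc 1) = mat 3 3 (\<lambda>(i,j). BLKQ 8 1 i j)"
  by (simp add: K_relators_def twist_letter_def aa_vals refl_inv refl_inv0 rho_M3 M3_add M3_smult M3_mult M3_one M3_zero M3_uminus,
      simp add: mat3_M3 BLKQ_def SH_def N0_rows polyQt_pCons M3_eq, (simp_all add: field_simps tvar_nz power2_eq_square)?)

lemma blk_8_2: "fox_twisted aa (K_relators ! 8) (Suc 2) = mat 3 3 (\<lambda>(i,j). BLKQ 8 2 i j)"
  by (simp add: K_relators_def twist_letter_def aa_vals refl_inv refl_inv0 rho_M3 M3_add M3_smult M3_mult M3_one M3_zero M3_uminus,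
      simp add: mat3_M3 BLKQ_def SH_def N0_rows polyQt_pCons M3_eq, (simp_all add: field_simps tvar_nz power2_eq_square)?)

lemma blk_8_3: "fox_twisted aa (K_relators ! 8) (Suc 3) = mat 3 3 (\<lambda>(i,j). BLKQ 8 3 i j)"
  by (simp add: K_relators_def twist_letter_def aa_vals refl_inv refl_inv0 rho_M3 M3_add M3_smult M3_mult M3_one M3_zero M3_uminus,
      simp add: mat3_M3 BLKQ_def SH_def N0_rows polyQt_pCons M3_eq, (simp_all add: field_simps tvar_nz power2_eq_square)?)

lemma blk_8_4: "fox_twisted aa (K_relators ! 8) (Suc 4) = mat 3 3 (\<lambda>(i,j). BLKQ 8 4 i j)"
  by (simp add: K_relators_def twist_letter_def aa_vals refl_inv refl_inv0 rho_M3 M3_add M3_smult M3_mult M3_one M3_zero M3_uminus,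
      simp add: mat3_M3 BLKQ_def SH_def N0_rows polyQt_pCons M3_eq, (simp_all add: field_simps tvar_nz power2_eq_square)?)

lemma blk_8_5: "fox_twisted aa (K_relators ! 8) (Suc 5) = mat 3 3 (\<lambda>(i,j). BLKQ 8 5 i j)"
  by (simp add: K_relators_def twist_letter_def aa_vals refl_inv refl_inv0 rho_M3 M3_add M3_smult M3_mult M3_one M3_zero M3_uminus,
      simp add: mat3_M3 BLKQ_def SH_def N0_rows polyQt_pCons M3_eq, (simp_all add: field_simps tvar_nz power2_eq_square)?)

lemma blk_8_6: "fox_twisted aa (K_relators ! 8) (Suc 6) = mat 3 3 (\<lambda>(i,j). BLKQ 8 6 i j)"
  by (simp add: K_relators_def twist_letter_def aa_vals refl_inv refl_inv0 rho_M3 M3_add M3_smult M3_mult M3_one M3_zero M3_uminus,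
      simp add: mat3_M3 BLKQ_def SH_def N0_rows polyQt_pCons M3_eq, (simp_all add: field_simps tvar_nz power2_eq_square)?)

lemma blk_8_7: "fox_twisted aa (K_relators ! 8) (Suc 7) = mat 3 3 (\<lambda>(i,j). BLKQ 8 7 i j)"
  by (simp add: K_relators_def twist_letter_def aa_vals refl_inv refl_inv0 rho_M3 M3_add M3_smult M3_mult M3_one M3_zero M3_uminus,
      simp add: mat3_M3 BLKQ_def SH_def N0_rows polyQt_pCons M3_eq, (simp_all add: field_simps tvar_nz power2_eq_square)?)

lemma blk_8_8: "fox_twisted aa (K_relators ! 8) (Suc 8) = mat 3 3 (\<lambda>(i,j). BLKQ 8 8 i j)"
  by (simp add: K_relators_def twist_letter_def aa_vals refl_inv refl_inv0 rho_M3 M3_add M3_smult M3_mult M3_one M3_zero M3_uminus,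
      simp add: mat3_M3 BLKQ_def SH_def N0_rows polyQt_pCons M3_eq, (simp_all add: field_simps tvar_nz power2_eq_square)?)

lemma blk_8_9: "fox_twisted aa (K_relators ! 8) (Suc 9) = mat 3 3 (\<lambda>(i,j). BLKQ 8 9 i j)"
  by (simp add: K_relators_def twist_letter_def aa_vals refl_inv refl_inv0 rho_M3 M3_add M3_smult M3_mult M3_one M3_zero M3_uminus,
      simp add: mat3_M3 BLKQ_def SH_def N0_rows polyQt_pCons M3_eq, (simp_all add: field_simps tvar_nz power2_eq_square)?)

lemma blocks_8: assumes c: "c < 10" shows "fox_twisted aa (K_relators ! 8) (Suc c) = mat 3 3 (\<lambda>(i,j). BLKQ 8 c i j)"
  by (rule nat_less10_cases[OF c, where P="\<lambda>c. fox_twisted aa (K_relators ! 8) (Suc c) = mat 3 3 (\<lambda>(i,j). BLKQ 8 c i j)"])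
     (rule blk_8_0 blk_8_1 blk_8_2 blk_8_3 blk_8_4 blk_8_5 blk_8_6 blk_8_7 blk_8_8 blk_8_9)+

lemma blk_9_0: "fox_twisted aa (K_relators ! 9) (Suc 0) = mat 3 3 (\<lambda>(i,j). BLKQ 9 0 i j)"
  by (simp add: K_relators_def twist_letter_def aa_vals refl_inv refl_inv0 rho_M3 M3_add M3_smult M3_mult M3_one M3_zero M3_uminus,
      simp add: mat3_M3 BLKQ_def SH_def N0_rows polyQt_pCons M3_eq, (simp_all add: field_simps tvar_nz power2_eq_square)?)

lemma blk_9_1: "fox_twisted aa (K_relators ! 9) (Suc 1) = mat 3 3 (\<lambda>(i,j). BLKQ 9 1 i j)"
  by (simp add: K_relators_def twist_letter_def aa_vals refl_inv refl_inv0 rho_M3 M3_add M3_smult M3_mult M3_one M3_zero M3_uminus,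
      simp add: mat3_M3 BLKQ_def SH_def N0_rows polyQt_pCons M3_eq, (simp_all add: field_simps tvar_nz power2_eq_square)?)

lemma blk_9_2: "fox_twisted aa (K_relators ! 9) (Suc 2) = mat 3 3 (\<lambda>(i,j). BLKQ 9 2 i j)"
  by (simp add: K_relators_def twist_letter_def aa_vals refl_inv refl_inv0 rho_M3 M3_add M3_smult M3_mult M3_one M3_zero M3_uminus,
      simp add: mat3_M3 BLKQ_def SH_def N0_rows polyQt_pCons M3_eq, (simp_all add: field_simps tvar_nz power2_eq_square)?)

lemma blk_9_3: "fox_twisted aa (K_relators ! 9) (Suc 3) = mat 3 3 (\<lambda>(i,j). BLKQ 9 3 i j)"
  by (simp add: K_relators_def twist_letter_def aa_vals refl_inv refl_inv0 rho_M3 M3_add M3_smult M3_mult M3_one M3_zero M3_uminus,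
      simp add: mat3_M3 BLKQ_def SH_def N0_rows polyQt_pCons M3_eq, (simp_all add: field_simps tvar_nz power2_eq_square)?)

lemma blk_9_4: "fox_twisted aa (K_relators ! 9) (Suc 4) = mat 3 3 (\<lambda>(i,j). BLKQ 9 4 i j)"
  by (simp add: K_relators_def twist_letter_def aa_vals refl_inv refl_inv0 rho_M3 M3_add M3_smult M3_mult M3_one M3_zero M3_uminus,
      simp add: mat3_M3 BLKQ_def SH_def N0_rows polyQt_pCons M3_eq, (simp_all add: field_simps tvar_nz power2_eq_square)?)

lemma blk_9_5: "fox_twisted aa (K_relators ! 9) (Suc 5) = mat 3 3 (\<lambda>(i,j). BLKQ 9 5 i j)"
  by (simp add: K_relators_def twist_letter_def aa_vals refl_inv refl_inv0 rho_M3 M3_add M3_smult M3_mult M3_one M3_zero M3_uminus,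
      simp add: mat3_M3 BLKQ_def SH_def N0_rows polyQt_pCons M3_eq, (simp_all add: field_simps tvar_nz power2_eq_square)?)

lemma blk_9_6: "fox_twisted aa (K_relators ! 9) (Suc 6) = mat 3 3 (\<lambda>(i,j). BLKQ 9 6 i j)"
  by (simp add: K_relators_def twist_letter_def aa_vals refl_inv refl_inv0 rho_M3 M3_add M3_smult M3_mult M3_one M3_zero M3_uminus,
      simp add: mat3_M3 BLKQ_def SH_def N0_rows polyQt_pCons M3_eq, (simp_all add: field_simps tvar_nz power2_eq_square)?)

lemma blk_9_7: "fox_twisted aa (K_relators ! 9) (Suc 7) = mat 3 3 (\<lambda>(i,j). BLKQ 9 7 i j)"
  by (simp add: K_relators_def twist_letter_def aa_vals refl_inv refl_inv0 rho_M3 M3_add M3_smult M3_mult M3_one M3_zero M3_uminus,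
      simp add: mat3_M3 BLKQ_def SH_def N0_rows polyQt_pCons M3_eq, (simp_all add: field_simps tvar_nz power2_eq_square)?)

lemma blk_9_8: "fox_twisted aa (K_relators ! 9) (Suc 8) = mat 3 3 (\<lambda>(i,j). BLKQ 9 8 i j)"
  by (simp add: K_relators_def twist_letter_def aa_vals refl_inv refl_inv0 rho_M3 M3_add M3_smult M3_mult M3_one M3_zero M3_uminus,
      simp add: mat3_M3 BLKQ_def SH_def N0_rows polyQt_pCons M3_eq, (simp_all add: field_simps tvar_nz power2_eq_square)?)

lemma blk_9_9: "fox_twisted aa (K_relators ! 9) (Suc 9) = mat 3 3 (\<lambda>(i,j). BLKQ 9 9 i j)"
  by (simp add: K_relators_def twist_letter_def aa_vals refl_inv refl_inv0 rho_M3 M3_add M3_smult M3_mult M3_one M3_zero M3_uminus,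
      simp add: mat3_M3 BLKQ_def SH_def N0_rows polyQt_pCons M3_eq, (simp_all add: field_simps tvar_nz power2_eq_square)?)

lemma blocks_9: assumes c: "c < 10" shows "fox_twisted aa (K_relators ! 9) (Suc c) = mat 3 3 (\<lambda>(i,j). BLKQ 9 c i j)"
  by (rule nat_less10_cases[OF c, where P="\<lambda>c. fox_twisted aa (K_relators ! 9) (Suc c) = mat 3 3 (\<lambda>(i,j). BLKQ 9 c i j)"])
     (rule blk_9_0 blk_9_1 blk_9_2 blk_9_3 blk_9_4 blk_9_5 blk_9_6 blk_9_7 blk_9_8 blk_9_9)+

lemma blocks_all: assumes k: "k < 10" and c: "c < 10"
  shows "fox_twisted aa (K_relators ! k) (Suc c) = mat 3 3 (\<lambda>(i,j). BLKQ k c i j)"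
  by (rule nat_less10_cases[OF k, where P="\<lambda>k. fox_twisted aa (K_relators ! k) (Suc c) = mat 3 3 (\<lambda>(i,j). BLKQ k c i j)"])
     (rule blocks_0[OF c] blocks_1[OF c] blocks_2[OF c] blocks_3[OF c] blocks_4[OF c] blocks_5[OF c] blocks_6[OF c] blocks_7[OF c] blocks_8[OF c] blocks_9[OF c])+


section \<open>The epimorphism\<close>

lemma D3_0: "(\<lambda>n::3. 0 - n) \<in> D3"
proof -
  have "D3_x \<circ> id \<in> D3" by (rule D3_mx[OF D3_id])
  moreover have "D3_x \<circ> id = (\<lambda>n::3. 0 - n)" by (simp add: fun_eq_iff D3_x_def)
  ultimately show ?thesis by simp
qed

lemma D3_1: "(\<lambda>n::3. 1 - n) \<in> D3"
proof -
  have "D3_x \<circ> (D3_y \<circ> id) \<in> D3" by (rule D3_mx[OF D3_my[OF D3_id]])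
  moreover have "D3_x \<circ> (D3_y \<circ> id) = (\<lambda>n::3. 1 - n)" by (simp add: fun_eq_iff D3_x_def D3_y_def)
  ultimately show ?thesis by simp
qed

lemma D3_2: "(\<lambda>n::3. 2 - n) \<in> D3"
proof -
  have "D3_x \<circ> (D3_y \<circ> (D3_y \<circ> id)) \<in> D3" by (rule D3_mx[OF D3_my[OF D3_my[OF D3_id]]])
  moreover have "D3_x \<circ> (D3_y \<circ> (D3_y \<circ> id)) = (\<lambda>n::3. 2 - n)" by (simp add: fun_eq_iff D3_x_def D3_y_def algebra_simps)
  ultimately show ?thesis by simp
qed

lemma aa_D3: "aa g \<in> D3"
proof -
  have "D3_x \<circ> (D3_y \<circ> (D3_y \<circ> id)) \<in> D3" by (rule D3_mx[OF D3_my[OF D3_my[OF D3_id]]])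
  hence 1: "xyy \<in> D3" unfolding xyy_def by (simp add: comp_assoc)
  have "D3_x \<circ> (D3_y \<circ> id) \<in> D3" by (rule D3_mx[OF D3_my[OF D3_id]])
  hence 2: "xy \<in> D3" unfolding xy_def by simp
  have "D3_x \<circ> id \<in> D3" by (rule D3_mx[OF D3_id])
  hence 3: "D3_x \<in> D3" by simp
  show ?thesis unfolding aa_def using 1 2 3 by auto
qed

lemma aa_rel: "\<forall>r \<in> set K_relators. eval_word aa r = id"
  by (simp add: K_relators_def aa_vals refl_inv refl_inv0 fun_eq_iff algebra_simps)

lemma aa_surj: "d \<in> D3 \<Longrightarrow> \<exists>w. (\<forall>l \<in> set w. fst l < K_ngens) \<and> eval_word aa w = d"
proof (induction rule: D3.induct)
  case D3_id
  show ?case by (rule exI[of _ "[]"]) simp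
next
  case (D3_mx g)
  then obtain w where w: "\<forall>l \<in> set w. fst l < K_ngens" "eval_word aa w = g" by blast
  show ?case
    by (rule exI[of _ "(1,True) # w"]) (use w in \<open>simp add: K_ngens_def aa_vals x_eq\<close>)
next
  case (D3_my g)
  then obtain w where w: "\<forall>l \<in> set w. fst l < K_ngens" "eval_word aa w = g" by blast
  show ?case
    by (rule exI[of _ "(1,True) # (3,True) # w"])
       (use w in \<open>simp add: K_ngens_def aa_vals fun_eq_iff D3_y_def algebra_simps\<close>)
qed

lemma aa_epi: "is_epi_D3 aa"
  unfolding is_epi_D3_def using aa_D3 aa_rel aa_surj by blast

section \<open>The twisted Alexander polynomial\<close>

lemma fox_mat: "fox_block_matrix aa 0 = mat 30 30 (\<lambda>(r,c). inverse tvar ^ (SH ! (r div 3)) * polyQt (Poly (N0 ! r ! c)))"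
proof (rule eq_matI)
  fix r c assume "r < dim_row (mat 30 30 (\<lambda>(r,c). inverse tvar ^ (SH ! (r div 3)) * polyQt (Poly (N0 ! r ! c))))"
    "c < dim_col (mat 30 30 (\<lambda>(r,c). inverse tvar ^ (SH ! (r div 3)) * polyQt (Poly (N0 ! r ! c))))"
  hence r: "r < 30" and c: "c < 30" by auto
  have k: "r div 3 < 10" and l: "c div 3 < 10" using r c by auto
  have lr: "length K_relators = 10" by (simp add: K_relators_def)
  have "fox_block_matrix aa 0 $$ (r,c) = fox_twisted aa (K_relators ! (r div 3)) (Suc (c div 3)) $$ (r mod 3, c mod 3)"
    unfolding fox_block_matrix_def using r c by (simp add: lr K_ngens_def Let_def)
  also have "\<dots> = BLKQ (r div 3) (c div 3) (r mod 3) (c mod 3)"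
    unfolding blocks_all[OF k l] by simp
  also have "\<dots> = inverse tvar ^ (SH ! (r div 3)) * polyQt (Poly (N0 ! r ! c))"
    unfolding BLKQ_def by simp
  finally show "fox_block_matrix aa 0 $$ (r,c) = mat 30 30 (\<lambda>(r,c). inverse tvar ^ (SH ! (r div 3)) * polyQt (Poly (N0 ! r ! c))) $$ (r,c)"
    using r c by simp
qed (simp_all add: fox_block_matrix_def K_relators_def K_ngens_def)

lemma lenN0: "length N0 = 30" by (simp add: N0_def)

lemma SH_prod: "(\<Prod>r<30. inverse tvar ^ (SH ! (r div 3))) = inverse tvar ^ 45"
proof -
  have "(\<Sum>r<30. SH ! (r div 3)) = (45::nat)" by (simp add: SH_def lessThan_nat_numeral)
  thus ?thesis by (simp add: power_sum[symmetric])
qed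

lemma det_N0: "det (matL N0) = Poly F0"
  using bchain_correct[OF comp, of "det (matL N0)"] by (simp flip: one_pCons)

lemma det_D0: "det (matL D0) = Poly FD"
  using bchain_correct[OF compD, of "det (matL D0)"] by (simp flip: one_pCons)

lemma den_mat: "1\<^sub>m 3 - twist_letter aa (0, True) = map_mat polyQt (matL D0)"
proof -
  have "matL D0 = M3 [[Poly (D0!0!0), Poly (D0!0!1), Poly (D0!0!2)],[Poly (D0!1!0), Poly (D0!1!1), Poly (D0!1!2)],[Poly (D0!2!0), Poly (D0!2!1), Poly (D0!2!2)]]"
  proof -
    have l: "length D0 = 3" by (simp add: D0_def)
    show ?thesis unfolding matL_def l mat3_M3 by (simp add: D0_def)
  qed
  thus ?thesis
    by (simp add: twist_letter_def aa_vals rho_M3 M3_smult M3_one M3_minus map_mat_M3 D0_def polyQt_pCons M3_eq)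
qed

lemma TA_val0: "twisted_alexander aa 0 = inverse tvar ^ 45 * polyQt (Poly F0) / polyQt (Poly FD)"
proof -
  have "det (fox_block_matrix aa 0) = (\<Prod>r<30. inverse tvar ^ (SH ! (r div 3))) *
      det (mat 30 30 (\<lambda>(r,c). polyQt (Poly (N0 ! r ! c))))"
    unfolding fox_mat by (rule det_rowscale)
  also have "mat 30 30 (\<lambda>(r,c). polyQt (Poly (N0 ! r ! c))) = map_mat polyQt (matL N0)"
    by (rule eq_matI) (auto simp: matL_def lenN0)
  also have "det (map_mat polyQt (matL N0)) = polyQt (Poly F0)"
    by (simp add: pq.hom_det det_N0)
  finally have 1: "det (fox_block_matrix aa 0) = inverse tvar ^ 45 * polyQt (Poly F0)" unfolding SH_prod .
  have 2: "det (1\<^sub>m 3 - twist_letter aa (0, True)) = polyQt (Poly FD)"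
    unfolding den_mat by (simp add: pq.hom_det det_D0)
  show ?thesis unfolding twisted_alexander_def 1 2 ..
qed

lemma Poly_tpow: "Poly (replicate n 0 @ [1]) = [:0,1::int:] ^ n"
  by (induction n) (auto simp: mult_pCons_left)

lemma poly_id: "Poly F0 * [:-1,1:] = - ([:0,1:]^9 * (Alex_10_164 * [:3, 0, -13, 0, 13, 0, -3:]) * Poly FD)"
proof -
  have a: "Alex_10_164 = Poly [3,-11,17,-11,3]" by (simp add: Alex_10_164_def)
  have b: "[:3, 0, -13, 0, 13, 0, -3:] = Poly [3, 0, -13, 0, 13, 0, -3::int]" by simp
  have c: "[:-1,1:] = Poly [-1,1::int]" by simp
  have d: "[:0,1::int:]^9 = Poly (replicate 9 0 @ [1])" by (simp only: Poly_tpow)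
  have "Poly (pl_mult F0 [-1,1]) = Poly (map uminus (pl_mult (pl_mult (replicate 9 0 @ [1]) (pl_mult [3,-11,17,-11,3] [3, 0, -13, 0, 13, 0, -3])) FD))"
    by (rule pl_eqI) (simp add: F0_def FD_def pl_is0_def pl_sub_def numeral_eq_Suc)
  thus ?thesis unfolding a b c d by (simp add: Poly_map_uminus)
qed

lemma FD_nz: "Poly FD \<noteq> 0" by (simp add: FD_def)

lemma TA_val: "twisted_alexander aa 0 = -1 * tvar powi (-36) *
     (polyQt (Alex_10_164 * [:3, 0, -13, 0, 13, 0, -3:]) / polyQt [:-1, 1:])"
proof -
  define pm where "pm = polyQt [:-1,1:]"
  define pAP where "pAP = polyQt (Alex_10_164 * [:3, 0, -13, 0, 13, 0, -3:])"
  define pD where "pD = polyQt (Poly FD)"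
  have pm0: "pm \<noteq> 0" unfolding pm_def by (rule polyQt_nz) simp
  have pD0: "pD \<noteq> 0" unfolding pD_def by (rule polyQt_nz[OF FD_nz])
  have "polyQt (Poly F0 * [:-1,1:]) = polyQt (- ([:0,1:]^9 * (Alex_10_164 * [:3, 0, -13, 0, 13, 0, -3:]) * Poly FD))"
    unfolding poly_id ..
  hence hid: "polyQt (Poly F0) * pm = - (tvar ^ 9 * pAP * pD)"
    unfolding pm_def pAP_def pD_def by (simp only: pq.hom_mult pq.hom_uminus pq.hom_power polyQt_t)
  hence pf0: "polyQt (Poly F0) = - (tvar ^ 9 * pAP * pD) / pm" using pm0 by (simp add: field_simps)
  have t36: "tvar powi (-36) = inverse tvar ^ 36" by (simp add: power_int_def)
  have i45: "inverse tvar ^ 45 = inverse (tvar ^ 9) * inverse tvar ^ 36"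
  proof -
    have "inverse tvar ^ 45 = inverse tvar ^ (9 + 36)" by simp
    also have "\<dots> = inverse tvar ^ 9 * inverse tvar ^ 36" by (rule power_add)
    finally show ?thesis by (simp only: power_inverse)
  qed
  define u where "u = tvar ^ 9"
  define J where "J = inverse tvar ^ 36"
  have u0: "u \<noteq> 0" unfolding u_def using tvar_nz by simp
  have "inverse u * J * (- (u * pAP * pD) / pm) / pD = -1 * J * (pAP / pm)"
    using u0 pm0 pD0 by (simp add: field_simps)
  thus ?thesis unfolding TA_val0 pf0 pD_def[symmetric] pm_def[symmetric] pAP_def[symmetric] t36 i45
    u_def[symmetric] J_def[symmetric] .
qed

lemma lc_contra:
  fixes f P :: "int poly"
  assumes eq: "[:0,1:]^a * P = [:c:] * ([:0,1:]^b * (f * (f \<circ>\<^sub>p [:0,-1:])))"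
    and c: "c = 1 \<or> c = -1" and lP: "lead_coeff P = -3"
  shows False
proof -
  have t1: "lead_coeff ([:0,1::int:]^n) = 1" for n by (simp add: lead_coeff_power)
  have lg: "lead_coeff (f \<circ>\<^sub>p [:0,-1:]) = lead_coeff f * (-1)^degree f"
    by (simp add: lead_coeff_comp)
  have "lead_coeff ([:0,1:]^a * P) = -3" unfolding lead_coeff_mult t1 lP by simp
  moreover have "lead_coeff ([:c:] * ([:0,1:]^b * (f * (f \<circ>\<^sub>p [:0,-1:])))) = c * (lead_coeff f * (lead_coeff f * (-1)^degree f))"
    unfolding lead_coeff_mult t1 lg by simp
  ultimately have "-3 = c * (lead_coeff f * (lead_coeff f * (-1)^degree f))" using eq by simp
  moreover have "(-1::int)^degree f = 1 \<or> (-1::int)^degree f = -1" by (simp add: minus_one_power_iff)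
  ultimately have "lead_coeff f * lead_coeff f = 3 \<or> lead_coeff f * lead_coeff f = -3" using c by auto
  thus False using no_sq3[of "lead_coeff f"] by auto
qed

lemma lcP6: "lead_coeff [:3, 0, -13, 0, 13, 0, -3::int:] = -3" by simp

lemma no_f: "\<not> (\<exists>f :: int poly. twisted_alexander aa 0 \<doteq>
          polyQt Alex_10_164 / polyQt [:1, -1:] * polyQt f * polyQt (f \<circ>\<^sub>p [:0, -1:]))"
proof
  assume "\<exists>f :: int poly. twisted_alexander aa 0 \<doteq>
          polyQt Alex_10_164 / polyQt [:1, -1:] * polyQt f * polyQt (f \<circ>\<^sub>p [:0, -1:])"
  then obtain f :: "int poly" and k :: int and s :: Qt where s: "s \<in> {1,-1}" and
    eq: "twisted_alexander aa 0 = s * tvar powi k * (polyQt Alex_10_164 / polyQt [:1, -1:] * polyQt f * polyQt (f \<circ>\<^sub>p [:0, -1:]))"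
    unfolding doteq_def by blast
  define g where "g = f \<circ>\<^sub>p [:0, -1:]"
  define P6 :: "int poly" where "P6 = [:3, 0, -13, 0, 13, 0, -3:]"
  define pA where "pA = polyQt Alex_10_164"
  define pm where "pm = polyQt [:-1,1:]"
  define pP where "pP = polyQt P6"
  define pfg where "pfg = polyQt (f * g)"
  define I where "I = inverse ((tvar::Qt) ^ 36)"
  define K where "K = k + 36"
  define T where "T = tvar powi K"
  have pA0: "pA \<noteq> 0" unfolding pA_def by (rule polyQt_nz) (simp add: Alex_10_164_def)
  have pm0: "pm \<noteq> 0" unfolding pm_def by (rule polyQt_nz) simp
  have I0: "I \<noteq> 0" unfolding I_def using tvar_nz by simp
  have m1: "polyQt [:1,-1:] = - pm"
  proof -
    have "[:1,-1::int:] = - [:-1,1:]" by simp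
    thus ?thesis unfolding pm_def by (simp only: pq.hom_uminus)
  qed
  have AP: "polyQt (Alex_10_164 * P6) = pA * pP" unfolding pA_def pP_def by (rule pq.hom_mult)
  have fg: "polyQt f * polyQt g = pfg" unfolding pfg_def by (simp only: pq.hom_mult)
  have tk: "tvar powi k = T * I"
  proof -
    have "tvar powi k = tvar powi (K - 36)" unfolding K_def by simp
    also have "\<dots> = tvar powi K / tvar powi 36" by (rule power_int_diff) (simp add: tvar_nz)
    finally show ?thesis unfolding T_def I_def by (simp add: divide_inverse)
  qed
  have t36: "tvar powi (-36) = I" unfolding I_def by (simp add: power_int_def power_inverse)
  have TA1: "twisted_alexander aa 0 = -1 * I * (pA * pP / pm)"
    using TA_val unfolding P6_def[symmetric] AP t36 pm_def[symmetric] .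
  have TA2: "twisted_alexander aa 0 = s * (T * I) * (pA / (- pm) * polyQt f * polyQt g)"
    using eq unfolding tk m1 g_def[symmetric] pA_def[symmetric] .
  have E: "-1 * I * (pA * pP / pm) = s * (T * I) * (pA / (- pm) * polyQt f * polyQt g)"
    using trans[OF TA1[symmetric] TA2] .
  have r1: "-1 * I * (pA * pP / pm) = (-1 * I * (pA/pm)) * pP" by (simp add: algebra_simps)
  have r2: "s * (T * I) * (pA / (- pm) * polyQt f * polyQt g) = (-1 * I * (pA/pm)) * (s * T * pfg)"
    unfolding fg[symmetric] by (simp add: algebra_simps)
  have nz: "-1 * I * (pA/pm) \<noteq> 0" using I0 pA0 pm0 by simp
  from E have "(-1 * I * (pA/pm)) * pP = (-1 * I * (pA/pm)) * (s * T * pfg)" unfolding r1 r2 .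
  hence main: "pP = s * T * pfg" using nz by simp
  have p1: "polyQt [:1:] = 1" using pq.hom_one unfolding one_pCons .
  have pm1: "polyQt [:-1:] = -1"
  proof -
    have "[:-1::int:] = - 1" by (simp add: one_pCons)
    hence "polyQt [:-1:] = - polyQt 1" by (simp only: pq.hom_uminus)
    thus ?thesis by simp
  qed
  have sc: "\<exists>c::int. (c = 1 \<or> c = -1) \<and> s = polyQt [:c:]"
  proof (cases "s = 1")
    case True thus ?thesis using p1 by (intro exI[of _ 1]) simp
  next
    case False hence "s = -1" using s by simp
    thus ?thesis using pm1 by (intro exI[of _ "-1"]) simp
  qed
  then obtain c :: int where c: "c = 1 \<or> c = -1" and sc: "s = polyQt [:c:]" by blast
  have lP: "lead_coeff P6 = -3" unfolding P6_def by (rule lcP6)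
  show False
  proof (cases "0 \<le> K")
    case True
    have "T = tvar ^ nat K" unfolding T_def using True by (simp add: power_int_def)
    also have "\<dots> = polyQt ([:0,1:] ^ nat K)" by (simp only: pq.hom_power polyQt_t)
    finally have "pP = polyQt [:c:] * polyQt ([:0,1:] ^ nat K) * pfg" using main sc by simp
    hence "polyQt P6 = polyQt ([:c:] * ([:0,1:] ^ nat K * (f * g)))"
      unfolding pP_def pfg_def by (simp only: pq.hom_mult mult.assoc)
    hence "[:0,1:]^0 * P6 = [:c:] * ([:0,1:] ^ nat K * (f * g))" unfolding polyQt_inj by simp
    thus False using lc_contra c lP unfolding g_def by blast
  next
    case False
    have "T = inverse (tvar ^ nat (-K))" unfolding T_def using False by (simp add: power_int_def power_inverse)
    hence "tvar ^ nat (-K) * pP = tvar ^ nat (-K) * (s * inverse (tvar ^ nat (-K)) * pfg)" using main by simp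
    also have "\<dots> = s * pfg" using tvar_nz by (simp add: field_simps)
    finally have "tvar ^ nat (-K) * pP = s * pfg" .
    hence "polyQt ([:0,1:] ^ nat (-K) * P6) = polyQt ([:c:] * ([:0,1:]^0 * (f * g)))"
      unfolding pP_def pfg_def sc by (simp only: pq.hom_mult pq.hom_power polyQt_t power_0 mult_1_left)
    hence "[:0,1:] ^ nat (-K) * P6 = [:c:] * ([:0,1:]^0 * (f * g))" unfolding polyQt_inj .
    thus False using lc_contra c lP unfolding g_def by blast
  qed
qed

theorem theorem1p2:
  shows "\<exists>a. is_epi_D3 a
     \<and> twisted_alexander a 0 \<doteq>
          polyQt (Alex_10_164 * [:3, 0, -13, 0, 13, 0, -3:]) / polyQt [:-1, 1:]
     \<and> \<not> (\<exists>f :: int poly. twisted_alexander a 0 \<doteq>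
          polyQt Alex_10_164 / polyQt [:1, -1:] * polyQt f * polyQt (f \<circ>\<^sub>p [:0, -1:]))"
proof (intro exI[of _ aa] conjI)
  show "is_epi_D3 aa" by (rule aa_epi)
  show "twisted_alexander aa 0 \<doteq> polyQt (Alex_10_164 * [:3, 0, -13, 0, 13, 0, -3:]) / polyQt [:-1, 1:]"
    unfolding doteq_def using TA_val by blast
  show "\<not> (\<exists>f :: int poly. twisted_alexander aa 0 \<doteq>
          polyQt Alex_10_164 / polyQt [:1, -1:] * polyQt f * polyQt (f \<circ>\<^sub>p [:0, -1:]))"
    by (rule no_f)
qed

end
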